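(* (i) Every finite BL-algebra with $n$ elements, $2\leq n\leq 5$, which is not an MV-algebra is isomorphic to an ordinal product $\mathcal{L}_1\boxtimes\mathcal{L}_2$ of BL-algebras. (ii) Writing $\mathcal{BL}_n$ for the set of BL-algebras with $n$ elements and $\mathcal{MV}_n$ for the set of MV-algebras with $n$ elements (both up to isomorphism), one has $|\mathcal{BL}_2|=|\mathcal{MV}_2|=\pi(2)+1$, $|\mathcal{BL}_3|=|\mathcal{MV}_3|+|\mathcal{BL}_2|=\pi(3)+\pi(2)+2$, $|\mathcal{BL}_4|=|\mathcal{MV}_4|+|\mathcal{BL}_3|+|\mathcal{BL}_2|=\pi(4)+\pi(3)+2\pi(2)+4$, $|\mathcal{BL}_5|=|\mathcal{MV}_5|+|\mathcal{BL}_4|+|\mathcal{BL}_3|+|\mathcal{BL}_2|=\pi(5)+\pi(4)+2\pi(3)+4\pi(2)+8$.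
   Context: A residuated lattice is an algebra $(L,\wedge,\vee,\odot,\rightarrow,0,1)$ with $(L,\wedge,\vee,0,1)$ a bounded lattice, $(L,\odot,1)$ a commutative ordered monoid, and $z\leq x\rightarrow y$ iff $x\odot z\leq y$. A BL-algebra is a residuated lattice satisfying $(x\rightarrow y)\vee(y\rightarrow x)=1$ and $x\odot(x\rightarrow y)=x\wedge y$. An MV-algebra is (equivalently) a residuated lattice satisfying $(x\rightarrow y)\rightarrow y=(y\rightarrow x)\rightarrow x$; MV-algebras are exactly the BL-algebras with $x^{**}=x$, where $x^*=x\rightarrow 0$. Ordinal product: given residuated lattices $\mathcal{L}_1=(L_1,\wedge_1,\vee_1,\odot_1,\rightarrow_1,0_1,1_1)$ and $\mathcal{L}_2=(L_2,\wedge_2,\vee_2,\odot_2,\rightarrow_2,0_2,1_2)$ with $1_1=0_2$ and $(L_1\setminus\{1_1\})\cap(L_2\setminus\{0_2\})=\emptyset$, $\mathcal{L}_1\boxtimes\mathcal{L}_2$ has universe $L_1\cup L_2$, $0=0_1$, $1=1_2$; $x\leq y$ iff ($x,y\in L_1$, $x\leq_1 y$) or ($x,y\in L_2$, $x\leq_2 y$) or ($x\in L_1$, $y\in L_2$); meet and join are computed in $L_i$ when both arguments lie in $L_i$, and otherwise $x\wedge y=x$, $x\vee y=y$ for $x\in L_1,y\in L_2$; $x\rightarrow y=1$ if $x\leq y$, $x\rightarrow y=x\rightarrow_i y$ if $x\not\leq y$ and $x,y\in L_i$, and $x\rightarrow y=y$ if $x\not\leq y$, $x\in L_2$, $y\in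 L_1\setminus\{1_1\}$; $x\odot y=x\odot_i y$ if $x,y\in L_i$, and $x\odot y=x$ if $x\in L_1\setminus\{1_1\}$, $y\in L_2$ (and symmetrically). For an integer $n\geq 2$, $\pi(n)$ denotes the number of (unordered) decompositions of $n$ as a product of at least two factors each greater than $1$ (so $\pi(n)=0$ for $n$ prime). *)

theory Defs
  imports Main "HOL-Library.Multiset"
begin

record 'a rlat =
  rl_car  :: "'a set"
  rl_meet :: "'a \<Rightarrow> 'a \<Rightarrow> 'a"
  rl_join :: "'a \<Rightarrow> 'a \<Rightarrow> 'a"
  rl_mult :: "'a \<Rightarrow> 'a \<Rightarrow> 'a"
  rl_imp  :: "'a \<Rightarrow> 'a \<Rightarrow> 'a"
  rl_zero :: "'a"
  rl_one  :: "'a"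

definition rl_le :: "'a rlat \<Rightarrow> 'a \<Rightarrow> 'a \<Rightarrow> bool" where
  "rl_le L x y \<longleftrightarrow> rl_meet L x y = x"

definition residuated_lattice :: "'a rlat \<Rightarrow> bool" where
  "residuated_lattice L \<longleftrightarrow>
     (let C = rl_car L; m = rl_meet L; j = rl_join L; t = rl_mult L; r = rl_imp L in
      rl_zero L \<in> C \<and> rl_one L \<in> C \<and>
      (\<forall>x\<in>C. \<forall>y\<in>C. m x y \<in> C \<and> j x y \<in> C \<and> t x y \<in> C \<and> r x y \<in> C) \<and>
      \<comment> \<open>lattice\<close>
      (\<forall>x\<in>C. \<forall>y\<in>C. m x y = m y x \<and> j x y = j y x) \<and>
      (\<forall>x\<in>C. \<forall>y\<in>C. \<forall>z\<in>C. m x (m y z) = m (m x y) z \<and> j x (j y z) = j (j x y) z) \<and>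
      (\<forall>x\<in>C. \<forall>y\<in>C. m x (j x y) = x \<and> j x (m x y) = x) \<and>
      \<comment> \<open>bounds\<close>
      (\<forall>x\<in>C. rl_le L (rl_zero L) x \<and> rl_le L x (rl_one L)) \<and>
      \<comment> \<open>commutative ordered monoid\<close>
      (\<forall>x\<in>C. \<forall>y\<in>C. t x y = t y x) \<and>
      (\<forall>x\<in>C. \<forall>y\<in>C. \<forall>z\<in>C. t x (t y z) = t (t x y) z) \<and>
      (\<forall>x\<in>C. t x (rl_one L) = x) \<and>
      (\<forall>x\<in>C. \<forall>y\<in>C. \<forall>z\<in>C. rl_le L x y \<longrightarrow> rl_le L (t x z) (t y z)) \<and>
      \<comment> \<open>residuation\<close>
      (\<forall>x\<in>C. \<forall>y\<in>C. \<forall>z\<in>C. rl_le L z (r x y) \<longleftrightarrow> rl_le L (t x z) y))"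

definition BL_algebra :: "'a rlat \<Rightarrow> bool" where
  "BL_algebra L \<longleftrightarrow> residuated_lattice L \<and>
     (\<forall>x\<in>rl_car L. \<forall>y\<in>rl_car L.
        rl_join L (rl_imp L x y) (rl_imp L y x) = rl_one L \<and>
        rl_mult L x (rl_imp L x y) = rl_meet L x y)"

definition MV_algebra :: "'a rlat \<Rightarrow> bool" where
  "MV_algebra L \<longleftrightarrow> residuated_lattice L \<and>
     (\<forall>x\<in>rl_car L. \<forall>y\<in>rl_car L.
        rl_imp L (rl_imp L x y) y = rl_imp L (rl_imp L y x) x)"

definition ord_prod_ok :: "'a rlat \<Rightarrow> 'a rlat \<Rightarrow> bool" where
  "ord_prod_ok L1 L2 \<longleftrightarrow> rl_one L1 = rl_zero L2 \<and>
     (rl_car L1 - {rl_one L1}) \<inter> (rl_car L2 - {rl_zero L2}) = {}"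

definition op_le :: "'a rlat \<Rightarrow> 'a rlat \<Rightarrow> 'a \<Rightarrow> 'a \<Rightarrow> bool" where
  "op_le L1 L2 x y \<longleftrightarrow>
     (x \<in> rl_car L1 \<and> y \<in> rl_car L1 \<and> rl_le L1 x y) \<or>
     (x \<in> rl_car L2 \<and> y \<in> rl_car L2 \<and> rl_le L2 x y) \<or>
     (x \<in> rl_car L1 \<and> y \<in> rl_car L2)"

definition ord_prod :: "'a rlat \<Rightarrow> 'a rlat \<Rightarrow> 'a rlat" where
  "ord_prod L1 L2 = (let C1 = rl_car L1; C2 = rl_car L2 in
    \<lparr> rl_car = C1 \<union> C2,
      rl_meet = (\<lambda>x y. if x \<in> C1 \<and> y \<in> C1 then rl_meet L1 x y
                       else if x \<in> C2 \<and> y \<in> C2 then rl_meet L2 x y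
                       else if x \<in> C1 then x else y),
      rl_join = (\<lambda>x y. if x \<in> C1 \<and> y \<in> C1 then rl_join L1 x y
                       else if x \<in> C2 \<and> y \<in> C2 then rl_join L2 x y
                       else if x \<in> C1 then y else x),
      rl_mult = (\<lambda>x y. if x \<in> C1 \<and> y \<in> C1 then rl_mult L1 x y
                       else if x \<in> C2 \<and> y \<in> C2 then rl_mult L2 x y
                       else if x \<in> C1 then x else y),
      rl_imp = (\<lambda>x y. if op_le L1 L2 x y then rl_one L2
                      else if x \<in> C1 \<and> y \<in> C1 then rl_imp L1 x y
                      else if x \<in> C2 \<and> y \<in> C2 then rl_imp L2 x y
                      else y),
      rl_zero = rl_zero L1,
      rl_one = rl_one L2 \<rparr>)"

definition rl_iso :: "('a \<Rightarrow> 'b) \<Rightarrow> 'a rlat \<Rightarrow> 'b rlat \<Rightarrow> bool" where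
  "rl_iso f A B \<longleftrightarrow> bij_betw f (rl_car A) (rl_car B) \<and>
     f (rl_zero A) = rl_zero B \<and> f (rl_one A) = rl_one B \<and>
     (\<forall>x\<in>rl_car A. \<forall>y\<in>rl_car A.
        f (rl_meet A x y) = rl_meet B (f x) (f y) \<and>
        f (rl_join A x y) = rl_join B (f x) (f y) \<and>
        f (rl_mult A x y) = rl_mult B (f x) (f y) \<and>
        f (rl_imp A x y) = rl_imp B (f x) (f y))"

definition rl_isomorphic :: "'a rlat \<Rightarrow> 'b rlat \<Rightarrow> bool" where
  "rl_isomorphic A B \<longleftrightarrow> (\<exists>f. rl_iso f A B)"

text \<open>Number of isomorphism classes of algebras satisfying P with n elements:
  every n-element algebra is isomorphic to one on carrier {0..<n}.\<close>
definition count_classes :: "(nat rlat \<Rightarrow> bool) \<Rightarrow> nat \<Rightarrow> nat" where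
  "count_classes P n =
     (let S = {A. P A \<and> rl_car A = {0..<n}} in
      card (S // {(A, B). A \<in> S \<and> B \<in> S \<and> rl_isomorphic A B}))"

abbreviation num_BL :: "nat \<Rightarrow> nat" where "num_BL \<equiv> count_classes BL_algebra"
abbreviation num_MV :: "nat \<Rightarrow> nat" where "num_MV \<equiv> count_classes MV_algebra"

definition mult_partitions :: "nat \<Rightarrow> nat" where
  "mult_partitions n = card {M :: nat multiset. size M \<ge> 2 \<and> (\<forall>x\<in>#M. x > 1) \<and> prod_mset M = n}"

end

theory Submission
  imports Defs
begin
locale rl =
  fixes L :: "'a rlat"
  assumes RL: "residuated_lattice L"
begin

abbreviation "C \<equiv> rl_car L"
abbreviation "mt \<equiv> rl_meet L"
abbreviation "jn \<equiv> rl_join L"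
abbreviation "ml \<equiv> rl_mult L"
abbreviation "im \<equiv> rl_imp L"
abbreviation "z0 \<equiv> rl_zero L"
abbreviation "o1 \<equiv> rl_one L"
abbreviation "le \<equiv> rl_le L"

lemmas RLu = RL[unfolded residuated_lattice_def Let_def]

lemma z0C[simp]: "z0 \<in> C" using RLu[THEN conjunct1] by blast
lemma o1C[simp]: "o1 \<in> C" using RLu[THEN conjunct2, THEN conjunct1] by blast
lemma mtC[simp]: "x \<in> C \<Longrightarrow> y \<in> C \<Longrightarrow> mt x y \<in> C" using RLu[THEN conjunct2, THEN conjunct2, THEN conjunct1] by blast
lemma jnC[simp]: "x \<in> C \<Longrightarrow> y \<in> C \<Longrightarrow> jn x y \<in> C" using RLu[THEN conjunct2, THEN conjunct2, THEN conjunct1] by blast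
lemma mlC[simp]: "x \<in> C \<Longrightarrow> y \<in> C \<Longrightarrow> ml x y \<in> C" using RLu[THEN conjunct2, THEN conjunct2, THEN conjunct1] by blast
lemma imC[simp]: "x \<in> C \<Longrightarrow> y \<in> C \<Longrightarrow> im x y \<in> C" using RLu[THEN conjunct2, THEN conjunct2, THEN conjunct1] by blast
lemma mt_comm: "x \<in> C \<Longrightarrow> y \<in> C \<Longrightarrow> mt x y = mt y x" using RLu[THEN conjunct2, THEN conjunct2, THEN conjunct2, THEN conjunct1] by blast
lemma jn_comm: "x \<in> C \<Longrightarrow> y \<in> C \<Longrightarrow> jn x y = jn y x" using RLu[THEN conjunct2, THEN conjunct2, THEN conjunct2, THEN conjunct1] by blast
lemma mt_assoc: "x \<in> C \<Longrightarrow> y \<in> C \<Longrightarrow> z \<in> C \<Longrightarrow> mt x (mt y z) = mt (mt x y) z" using RLu[THEN conjunct2, THEN conjunct2, THEN conjunct2, THEN conjunct2, THEN conjunct1] by blast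
lemma jn_assoc: "x \<in> C \<Longrightarrow> y \<in> C \<Longrightarrow> z \<in> C \<Longrightarrow> jn x (jn y z) = jn (jn x y) z" using RLu[THEN conjunct2, THEN conjunct2, THEN conjunct2, THEN conjunct2, THEN conjunct1] by blast
lemma absorb1: "x \<in> C \<Longrightarrow> y \<in> C \<Longrightarrow> mt x (jn x y) = x" using RLu[THEN conjunct2, THEN conjunct2, THEN conjunct2, THEN conjunct2, THEN conjunct2, THEN conjunct1] by blast
lemma absorb2: "x \<in> C \<Longrightarrow> y \<in> C \<Longrightarrow> jn x (mt x y) = x" using RLu[THEN conjunct2, THEN conjunct2, THEN conjunct2, THEN conjunct2, THEN conjunct2, THEN conjunct1] by blast
lemma le0[simp]: "x \<in> C \<Longrightarrow> le z0 x" using RLu[THEN conjunct2, THEN conjunct2, THEN conjunct2, THEN conjunct2, THEN conjunct2, THEN conjunct2, THEN conjunct1] by blast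
lemma le1[simp]: "x \<in> C \<Longrightarrow> le x o1" using RLu[THEN conjunct2, THEN conjunct2, THEN conjunct2, THEN conjunct2, THEN conjunct2, THEN conjunct2, THEN conjunct1] by blast
lemma ml_comm: "x \<in> C \<Longrightarrow> y \<in> C \<Longrightarrow> ml x y = ml y x" using RLu[THEN conjunct2, THEN conjunct2, THEN conjunct2, THEN conjunct2, THEN conjunct2, THEN conjunct2, THEN conjunct2, THEN conjunct1] by blast
lemma ml_assoc: "x \<in> C \<Longrightarrow> y \<in> C \<Longrightarrow> z \<in> C \<Longrightarrow> ml x (ml y z) = ml (ml x y) z" using RLu[THEN conjunct2, THEN conjunct2, THEN conjunct2, THEN conjunct2, THEN conjunct2, THEN conjunct2, THEN conjunct2, THEN conjunct2, THEN conjunct1] by blast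
lemma ml1[simp]: "x \<in> C \<Longrightarrow> ml x o1 = x" using RLu[THEN conjunct2, THEN conjunct2, THEN conjunct2, THEN conjunct2, THEN conjunct2, THEN conjunct2, THEN conjunct2, THEN conjunct2, THEN conjunct2, THEN conjunct1] by blast
lemma ml_mono: "x \<in> C \<Longrightarrow> y \<in> C \<Longrightarrow> z \<in> C \<Longrightarrow> le x y \<Longrightarrow> le (ml x z) (ml y z)" using RLu[THEN conjunct2, THEN conjunct2, THEN conjunct2, THEN conjunct2, THEN conjunct2, THEN conjunct2, THEN conjunct2, THEN conjunct2, THEN conjunct2, THEN conjunct2, THEN conjunct1] by blast
lemma resid: "x \<in> C \<Longrightarrow> y \<in> C \<Longrightarrow> z \<in> C \<Longrightarrow> le z (im x y) \<longleftrightarrow> le (ml x z) y" using RLu[THEN conjunct2, THEN conjunct2, THEN conjunct2, THEN conjunct2, THEN conjunct2, THEN conjunct2, THEN conjunct2, THEN conjunct2, THEN conjunct2, THEN conjunct2, THEN conjunct2] by blast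

lemma ml1'[simp]: "x \<in> C \<Longrightarrow> ml o1 x = x" using ml_comm[of o1 x] by simp

lemma mt_idem[simp]: "x \<in> C \<Longrightarrow> mt x x = x"
proof -
  assume x: "x \<in> C"
  have "jn x (mt x x) = x" using x absorb2 by blast
  moreover have "mt x (jn x (mt x x)) = x" using x absorb1 mtC by blast
  ultimately show ?thesis by simp
qed

lemma le_def': "le x y \<longleftrightarrow> mt x y = x" by (simp add: rl_le_def)

lemma le_jn: "x \<in> C \<Longrightarrow> y \<in> C \<Longrightarrow> le x y \<longleftrightarrow> jn x y = y"
  unfolding rl_le_def
proof
  assume a: "x \<in> C" "y \<in> C" "mt x y = x"
  have "jn y (mt y x) = y" using a absorb2 by blast
  then show "jn x y = y" using a mt_comm jn_comm by (metis mtC)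
next
  assume a: "x \<in> C" "y \<in> C" "jn x y = y"
  have "mt x (jn x y) = x" using a absorb1 by blast
  then show "mt x y = x" using a by simp
qed

lemma le_refl[simp]: "x \<in> C \<Longrightarrow> le x x" by (simp add: rl_le_def)

lemma le_antisym: "x \<in> C \<Longrightarrow> y \<in> C \<Longrightarrow> le x y \<Longrightarrow> le y x \<Longrightarrow> x = y"
  unfolding rl_le_def using mt_comm[of x y] by simp

lemma le_trans: "x \<in> C \<Longrightarrow> y \<in> C \<Longrightarrow> z \<in> C \<Longrightarrow> le x y \<Longrightarrow> le y z \<Longrightarrow> le x z"
  unfolding rl_le_def using mt_assoc[of x y z] by simp

lemma mt_le1: "x \<in> C \<Longrightarrow> y \<in> C \<Longrightarrow> le (mt x y) x"
  unfolding rl_le_def using mt_assoc[of x y x] mt_comm[of y x] mt_assoc[of x x y] by simp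
lemma mt_le2: "x \<in> C \<Longrightarrow> y \<in> C \<Longrightarrow> le (mt x y) y"
  by (metis mt_comm mt_le1)
lemma mt_glb: "x \<in> C \<Longrightarrow> y \<in> C \<Longrightarrow> z \<in> C \<Longrightarrow> le z (mt x y) \<longleftrightarrow> le z x \<and> le z y"
proof
  assume "x \<in> C" "y \<in> C" "z \<in> C" "le z (mt x y)"
  then show "le z x \<and> le z y" by (meson le_trans mtC mt_le1 mt_le2)
next
  assume a: "x \<in> C" "y \<in> C" "z \<in> C" "le z x \<and> le z y"
  then have "mt z (mt x y) = z" by (simp add: mt_assoc rl_le_def)
  then show "le z (mt x y)" by (simp add: rl_le_def)
qed

lemma jn_ge1: "x \<in> C \<Longrightarrow> y \<in> C \<Longrightarrow> le x (jn x y)"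
  by (simp add: absorb1 rl_le_def)
lemma jn_ge2: "x \<in> C \<Longrightarrow> y \<in> C \<Longrightarrow> le y (jn x y)"
  by (metis jn_comm jn_ge1)
lemma jn_lub: "x \<in> C \<Longrightarrow> y \<in> C \<Longrightarrow> z \<in> C \<Longrightarrow> le (jn x y) z \<longleftrightarrow> le x z \<and> le y z"
proof
  assume "x \<in> C" "y \<in> C" "z \<in> C" "le (jn x y) z"
  then show "le x z \<and> le y z" by (meson le_trans jnC jn_ge1 jn_ge2)
next
  assume a: "x \<in> C" "y \<in> C" "z \<in> C" "le x z \<and> le y z"
  then have "jn (jn x y) z = z" by (metis jn_assoc le_jn)
  then show "le (jn x y) z" using a by (simp add: le_jn)
qed

lemma mt_eq1: "x \<in> C \<Longrightarrow> y \<in> C \<Longrightarrow> le x y \<Longrightarrow> mt x y = x" by (simp add: rl_le_def)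
lemma mt_eq2: "x \<in> C \<Longrightarrow> y \<in> C \<Longrightarrow> le y x \<Longrightarrow> mt x y = y" by (metis mt_comm rl_le_def)
lemma jn_eq1: "x \<in> C \<Longrightarrow> y \<in> C \<Longrightarrow> le y x \<Longrightarrow> jn x y = x" by (metis jn_comm le_jn)
lemma jn_eq2: "x \<in> C \<Longrightarrow> y \<in> C \<Longrightarrow> le x y \<Longrightarrow> jn x y = y" by (metis le_jn)

lemma ml_mono2: "x \<in> C \<Longrightarrow> y \<in> C \<Longrightarrow> z \<in> C \<Longrightarrow> le x y \<Longrightarrow> le (ml z x) (ml z y)"
  by (metis ml_comm ml_mono)
lemma ml_mono_both: "x \<in> C \<Longrightarrow> y \<in> C \<Longrightarrow> u \<in> C \<Longrightarrow> v \<in> C \<Longrightarrow> le x y \<Longrightarrow> le u v \<Longrightarrow> le (ml x u) (ml y v)"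
  by (meson le_trans mlC ml_mono ml_mono2)
lemma ml_le1: "x \<in> C \<Longrightarrow> y \<in> C \<Longrightarrow> le (ml x y) x"
  using ml_mono2[of y o1 x] by simp
lemma ml_le2: "x \<in> C \<Longrightarrow> y \<in> C \<Longrightarrow> le (ml x y) y"
  using ml_le1[of y x] ml_comm[of x y] by simp
lemma ml_le_mt: "x \<in> C \<Longrightarrow> y \<in> C \<Longrightarrow> le (ml x y) (mt x y)"
  by (simp add: ml_le1 ml_le2 mt_glb)
lemma ml0[simp]: "x \<in> C \<Longrightarrow> ml x z0 = z0"
  using ml_le2[of x z0] le0[of "ml x z0"] le_antisym[of "ml x z0" z0] by simp
lemma ml0'[simp]: "x \<in> C \<Longrightarrow> ml z0 x = z0"
  using ml_comm[of x z0] by simp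

lemma mp: "x \<in> C \<Longrightarrow> y \<in> C \<Longrightarrow> le (ml x (im x y)) y"
  using resid[of x y "im x y"] by simp
lemma im_ge: "x \<in> C \<Longrightarrow> y \<in> C \<Longrightarrow> le y (im x y)"
  by (simp add: ml_le2 resid)
lemma im_one: "x \<in> C \<Longrightarrow> y \<in> C \<Longrightarrow> im x y = o1 \<longleftrightarrow> le x y"
proof
  assume a: "x \<in> C" "y \<in> C" "im x y = o1"
  then show "le x y" using resid[of x y o1] by simp
next
  assume a: "x \<in> C" "y \<in> C" "le x y"
  then have "le o1 (im x y)" using resid[of x y o1] by simp
  then show "im x y = o1" using a le_antisym[of "im x y" o1] by simp
qed
lemma im_refl[simp]: "x \<in> C \<Longrightarrow> im x x = o1"
  by (simp add: im_one)
lemma one_im[simp]: "x \<in> C \<Longrightarrow> im o1 x = x"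
  using mp[of o1 x] im_ge[of o1 x] le_antisym[of "im o1 x" x] by simp
lemma im_mono2: "x \<in> C \<Longrightarrow> y \<in> C \<Longrightarrow> z \<in> C \<Longrightarrow> le y z \<Longrightarrow> le (im x y) (im x z)"
  using resid[of x z "im x y"] mp[of x y] le_trans[of "ml x (im x y)" y z] by simp
lemma im_anti1: "x \<in> C \<Longrightarrow> y \<in> C \<Longrightarrow> z \<in> C \<Longrightarrow> le x y \<Longrightarrow> le (im y z) (im x z)"
  using resid[of x z "im y z"] mp[of y z] ml_mono[of x y "im y z"]
    le_trans[of "ml x (im y z)" "ml y (im y z)" z] by simp
lemma im_curry: "x \<in> C \<Longrightarrow> y \<in> C \<Longrightarrow> z \<in> C \<Longrightarrow> im x (im y z) = im (ml x y) z"
proof -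
  assume a: "x \<in> C" "y \<in> C" "z \<in> C"
  have e: "\<And>w. w \<in> C \<Longrightarrow> le w (im x (im y z)) \<longleftrightarrow> le w (im (ml x y) z)"
  proof -
    fix w assume w: "w \<in> C"
    have "le w (im x (im y z)) \<longleftrightarrow> le (ml x w) (im y z)" using a w resid by simp
    also have "\<dots> \<longleftrightarrow> le (ml y (ml x w)) z" using a w resid by simp
    also have "ml y (ml x w) = ml (ml x y) w" using a w ml_assoc ml_comm by metis
    also have "le (ml (ml x y) w) z \<longleftrightarrow> le w (im (ml x y) z)" using a w resid by simp
    finally show "?thesis w" .
  qed
  show ?thesis using e[of "im x (im y z)"] e[of "im (ml x y) z"] a
    le_antisym[of "im x (im y z)" "im (ml x y) z"] by simp
qed
lemma le_im_iff: "x \<in> C \<Longrightarrow> y \<in> C \<Longrightarrow> le x y \<longleftrightarrow> le o1 (im x y)"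
  by (simp add: resid)


lemma im_mt: "x \<in> C \<Longrightarrow> y \<in> C \<Longrightarrow> z \<in> C \<Longrightarrow> im x (mt y z) = mt (im x y) (im x z)"
proof -
  assume a: "x \<in> C" "y \<in> C" "z \<in> C"
  have e: "\<And>w. w \<in> C \<Longrightarrow> le w (im x (mt y z)) \<longleftrightarrow> le w (mt (im x y) (im x z))"
    using a by (simp add: resid mt_glb)
  show ?thesis using e[of "im x (mt y z)"] e[of "mt (im x y) (im x z)"] a
    le_antisym[of "im x (mt y z)" "mt (im x y) (im x z)"] by simp
qed

lemma ml_jn: "x \<in> C \<Longrightarrow> y \<in> C \<Longrightarrow> z \<in> C \<Longrightarrow> le (ml (jn x y) z) w \<longleftrightarrow> le (ml x z) w \<and> le (ml y z) w" if "w \<in> C"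
proof -
  assume a: "x \<in> C" "y \<in> C" "z \<in> C"
  have "le (ml (jn x y) z) w \<longleftrightarrow> le (jn x y) (im z w)" using a that resid[of z w "jn x y"] ml_comm[of z "jn x y"] by simp
  also have "\<dots> \<longleftrightarrow> le x (im z w) \<and> le y (im z w)" using a that by (simp add: jn_lub)
  also have "\<dots> \<longleftrightarrow> le (ml x z) w \<and> le (ml y z) w" using a that resid[of z w x] resid[of z w y] ml_comm[of z x] ml_comm[of z y] by simp
  finally show ?thesis .
qed

lemma im_jn: "x \<in> C \<Longrightarrow> y \<in> C \<Longrightarrow> z \<in> C \<Longrightarrow> im (jn x y) z = mt (im x z) (im y z)"
proof -
  assume a: "x \<in> C" "y \<in> C" "z \<in> C"
  have e: "\<And>w. w \<in> C \<Longrightarrow> le w (im (jn x y) z) \<longleftrightarrow> le w (mt (im x z) (im y z))"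
    using a by (simp add: resid mt_glb ml_jn)
  show ?thesis using e[of "im (jn x y) z"] e[of "mt (im x z) (im y z)"] a
    le_antisym[of "im (jn x y) z" "mt (im x z) (im y z)"] by simp
qed

lemma le_01: "le o1 z0 \<Longrightarrow> x \<in> C \<Longrightarrow> x = z0"
  using le_trans[of x o1 z0] le_antisym[of x z0] le0[of x] le1[of x] by simp

end

locale bl = rl +
  assumes prelin: "x \<in> C \<Longrightarrow> y \<in> C \<Longrightarrow> jn (im x y) (im y x) = o1"
  and divis: "x \<in> C \<Longrightarrow> y \<in> C \<Longrightarrow> ml x (im x y) = mt x y"
begin

lemma idem_mt: "e \<in> C \<Longrightarrow> x \<in> C \<Longrightarrow> ml e e = e \<Longrightarrow> ml e x = mt e x"
proof -
  assume a: "e \<in> C" "x \<in> C" "ml e e = e"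
  have "mt e x = ml e (im e x)" using a divis by simp
  also have "\<dots> = ml e (ml e (im e x))" using a ml_assoc[of e e "im e x"] by simp
  also have "\<dots> = ml e (mt e x)" using a divis by simp
  finally have 1: "mt e x = ml e (mt e x)" .
  have "le (ml e (mt e x)) (ml e x)" using a by (simp add: ml_mono2 mt_le2)
  then have "le (mt e x) (ml e x)" using 1 by simp
  moreover have "le (ml e x) (mt e x)" using a by (simp add: ml_le_mt)
  ultimately show ?thesis using a le_antisym by simp
qed

lemma ordinal: "e \<in> C \<Longrightarrow> x \<in> C \<Longrightarrow> y \<in> C \<Longrightarrow> ml e e = e \<Longrightarrow> le x e \<Longrightarrow> le e y \<Longrightarrow> ml x y = x"
proof -
  assume a: "e \<in> C" "x \<in> C" "y \<in> C" "ml e e = e" "le x e" "le e y"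
  have x: "x = ml e (im e x)" using a divis[of e x] mt_eq2[of e x] by simp
  have "ml x y = ml (im e x) (ml e y)" using a x ml_assoc ml_comm by (metis imC)
  also have "ml e y = e" using a idem_mt[of e y] mt_eq1[of e y] by simp
  also have "ml (im e x) e = x" using a x ml_comm[of e "im e x"] by simp
  finally show ?thesis .
qed

end

locale mv = rl +
  assumes MV: "x \<in> C \<Longrightarrow> y \<in> C \<Longrightarrow> im (im x y) y = im (im y x) x"
begin

lemma jn_form: "x \<in> C \<Longrightarrow> y \<in> C \<Longrightarrow> jn x y = im (im x y) y"
proof -
  assume a: "x \<in> C" "y \<in> C"
  let ?u = "jn x y"
  have "le x (im (im x y) y)" using a resid[of "im x y" y x] mp[of x y] ml_comm[of x "im x y"] by simp
  moreover have "le y (im (im x y) y)" using a by (simp add: im_ge)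
  ultimately have 1: "le ?u (im (im x y) y)" using a by (simp add: jn_lub)
  have "le (im ?u y) (im x y)" using a by (simp add: im_anti1 jn_ge1)
  then have "le (im (im x y) y) (im (im ?u y) y)" using a by (simp add: im_anti1)
  also have "im (im ?u y) y = im (im y ?u) ?u" using a MV by simp
  also have "im y ?u = o1" using a by (simp add: im_one jn_ge2)
  finally have "le (im (im x y) y) ?u" using a by simp
  then show ?thesis using 1 a le_antisym by simp
qed

abbreviation "ng x \<equiv> im x z0"

lemma invol: "x \<in> C \<Longrightarrow> ng (ng x) = x"
  using jn_form[of x z0] jn_eq1[of x z0] by simp

lemma im_self_mt: "x \<in> C \<Longrightarrow> y \<in> C \<Longrightarrow> im x (mt x y) = im x y"
  using im_mt[of x x y] mt_eq2[of o1 "im x y"] le1[of "im x y"] by simp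

lemma prelin: "x \<in> C \<Longrightarrow> y \<in> C \<Longrightarrow> jn (im x y) (im y x) = o1"
proof -
  assume a: "x \<in> C" "y \<in> C"
  let ?m = "mt x y" and ?u = "jn (im x y) (im y x)"
  have m: "?m \<in> C" "le ?m x" "le ?m y" using a by (simp_all add: mt_le1 mt_le2)
  have 1: "im (im x y) ?m = x"
  proof -
    have "im (im x y) ?m = im (im x ?m) ?m" using a im_self_mt by simp
    also have "\<dots> = im (im ?m x) x" using a m MV by simp
    also have "\<dots> = x" using a m by (simp add: im_one[THEN iffD2])
    finally show ?thesis .
  qed
  have 2: "im (im y x) ?m = y"
  proof -
    have mm: "?m = mt y x" using a mt_comm by simp
    have "im (im y x) ?m = im (im y ?m) ?m" using a im_self_mt mm by simp
    also have "\<dots> = im (im ?m y) y" using a m MV by simp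
    also have "\<dots> = y" using a m by (simp add: im_one[THEN iffD2])
    finally show ?thesis .
  qed
  have "im ?u ?m = mt x y" using a 1 2 im_jn[of "im x y" "im y x" ?m] by simp
  moreover have "le ?m ?u" using a m le_trans[of ?m y "im x y"] le_trans[of ?m "im x y" ?u]
    by (simp add: im_ge jn_ge1)
  ultimately have "jn ?u ?m = im ?m ?m" using a jn_form[of ?u ?m] by simp
  then show ?thesis using a m jn_eq1[of ?u ?m] \<open>le ?m ?u\<close> by simp
qed

lemma ng_ml: "p \<in> C \<Longrightarrow> q \<in> C \<Longrightarrow> ng (im p (ng q)) = ml p q"
  using im_curry[of p q z0] invol[of "ml p q"] by simp

lemma contra: "a \<in> C \<Longrightarrow> b \<in> C \<Longrightarrow> im (ng a) (ng b) = im b a"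
proof -
  assume ab: "a \<in> C" "b \<in> C"
  have "im (ng a) (ng b) = im (ml (ng a) b) z0" using ab im_curry by simp
  also have "\<dots> = im (ml b (ng a)) z0" using ab ml_comm by simp
  also have "\<dots> = im b (ng (ng a))" using ab im_curry by simp
  finally show ?thesis using ab invol by simp
qed

lemma ng_le: "a \<in> C \<Longrightarrow> b \<in> C \<Longrightarrow> le (ng a) (ng b) \<longleftrightarrow> le b a"
  using im_anti1[of b a z0] im_anti1[of "ng a" "ng b" z0] invol by auto

lemma demorgan: "a \<in> C \<Longrightarrow> b \<in> C \<Longrightarrow> ng (jn (ng a) (ng b)) = mt a b"
proof -
  assume ab: "a \<in> C" "b \<in> C"
  let ?m = "ng (jn (ng a) (ng b))"
  have mC: "?m \<in> C" using ab by simp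
  have e: "\<And>w. w \<in> C \<Longrightarrow> le w ?m \<longleftrightarrow> le w (mt a b)"
  proof -
    fix w assume w: "w \<in> C"
    have "le w ?m \<longleftrightarrow> le (ng ?m) (ng w)" using w mC ng_le by simp
    also have "ng ?m = jn (ng a) (ng b)" using ab invol by simp
    also have "le (jn (ng a) (ng b)) (ng w) \<longleftrightarrow> le (ng a) (ng w) \<and> le (ng b) (ng w)"
      using ab w by (simp add: jn_lub)
    also have "\<dots> \<longleftrightarrow> le w a \<and> le w b" using ab w ng_le by simp
    finally show "le w ?m \<longleftrightarrow> le w (mt a b)" using ab w by (simp add: mt_glb)
  qed
  then show ?thesis using ab mC le_antisym[of ?m "mt a b"] e[of ?m] e[of "mt a b"] by simp
qed

lemma divis: "x \<in> C \<Longrightarrow> y \<in> C \<Longrightarrow> ml x (im x y) = mt x y"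
proof -
  assume a: "x \<in> C" "y \<in> C"
  have "mt y x = ng (jn (ng y) (ng x))" using a demorgan by simp
  also have "jn (ng y) (ng x) = im (im (ng y) (ng x)) (ng x)" using a jn_form by simp
  also have "im (ng y) (ng x) = im x y" using a contra by simp
  also have "ng (im (im x y) (ng x)) = ml (im x y) x" using a ng_ml by simp
  finally show ?thesis using a ml_comm mt_comm by simp
qed

end


lemma BL_bl: "BL_algebra A \<Longrightarrow> bl A"
  unfolding BL_algebra_def bl_def bl_axioms_def rl_def by blast

lemma BL_rl: "BL_algebra A \<Longrightarrow> residuated_lattice A"
  unfolding BL_algebra_def by blast

lemma MV_BL: "MV_algebra A \<Longrightarrow> BL_algebra A"
proof -
  assume a: "MV_algebra A"
  interpret mv A using a unfolding MV_algebra_def mv_def mv_axioms_def rl_def by blast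
  show ?thesis unfolding BL_algebra_def using RL prelin divis by blast
qed

lemma (in rl) eq_by_below: "u \<in> C \<Longrightarrow> v \<in> C \<Longrightarrow> (\<And>w. w \<in> C \<Longrightarrow> le w u \<longleftrightarrow> le w v) \<Longrightarrow> u = v"
  by (meson le_antisym le_refl)

lemma (in rl) eq_by_above: "u \<in> C \<Longrightarrow> v \<in> C \<Longrightarrow> (\<And>w. w \<in> C \<Longrightarrow> le u w \<longleftrightarrow> le v w) \<Longrightarrow> u = v"
  by (meson le_antisym le_refl)

lemma iso_from_order_mult:
  assumes RA: "residuated_lattice A" and RB: "residuated_lattice B"
    and bij: "bij_betw f (rl_car A) (rl_car B)"
    and ord: "\<And>x y. x \<in> rl_car A \<Longrightarrow> y \<in> rl_car A \<Longrightarrow> rl_le B (f x) (f y) \<longleftrightarrow> rl_le A x y"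
    and mul: "\<And>x y. x \<in> rl_car A \<Longrightarrow> y \<in> rl_car A \<Longrightarrow> f (rl_mult A x y) = rl_mult B (f x) (f y)"
  shows "rl_iso f A B"
proof -
  interpret A: rl A using RA by (simp add: rl_def)
  interpret B: rl B using RB by (simp add: rl_def)
  have fC: "\<And>x. x \<in> A.C \<Longrightarrow> f x \<in> B.C" using bij by (meson bij_betw_apply)
  have surj: "\<And>w. w \<in> B.C \<Longrightarrow> \<exists>z\<in>A.C. w = f z" using bij by (metis bij_betw_imp_surj_on imageE)
  have below: "\<And>u v. u \<in> B.C \<Longrightarrow> v \<in> B.C \<Longrightarrow> (\<And>z. z \<in> A.C \<Longrightarrow> B.le (f z) u \<longleftrightarrow> B.le (f z) v) \<Longrightarrow> u = v"
    using surj B.eq_by_below by metis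
  have above: "\<And>u v. u \<in> B.C \<Longrightarrow> v \<in> B.C \<Longrightarrow> (\<And>z. z \<in> A.C \<Longrightarrow> B.le u (f z) \<longleftrightarrow> B.le v (f z)) \<Longrightarrow> u = v"
    using surj B.eq_by_above by metis
  have z: "f A.z0 = B.z0"
    by (rule above) (auto simp: fC ord)
  have o: "f A.o1 = B.o1"
    by (rule below) (auto simp: fC ord)
  have m: "\<And>x y. x \<in> A.C \<Longrightarrow> y \<in> A.C \<Longrightarrow> f (A.mt x y) = B.mt (f x) (f y)"
    by (rule below) (auto simp: fC ord A.mt_glb B.mt_glb)
  have j: "\<And>x y. x \<in> A.C \<Longrightarrow> y \<in> A.C \<Longrightarrow> f (A.jn x y) = B.jn (f x) (f y)"
    by (rule above) (auto simp: fC ord A.jn_lub B.jn_lub)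
  have i: "\<And>x y. x \<in> A.C \<Longrightarrow> y \<in> A.C \<Longrightarrow> f (A.im x y) = B.im (f x) (f y)"
    by (rule below) (auto simp: fC ord A.resid B.resid mul[symmetric])
  show ?thesis unfolding rl_iso_def using bij z o m j i mul by blast
qed

lemma rl_iso_refl: "rl_iso id A A"
  unfolding rl_iso_def by simp

lemma rl_iso_trans: "rl_iso f A B \<Longrightarrow> rl_iso g B D \<Longrightarrow> rl_iso (g \<circ> f) A D"
  unfolding rl_iso_def
  by (auto simp: bij_betw_trans bij_betw_apply)

lemma rl_iso_sym:
  assumes iso: "rl_iso f A B" and RA: "residuated_lattice A"
  shows "rl_iso (inv_into (rl_car A) f) B A"
proof -
  interpret A: rl A using RA by (simp add: rl_def)
  let ?g = "inv_into A.C f"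
  have bij: "bij_betw f A.C (rl_car B)" using iso unfolding rl_iso_def by blast
  have inj: "inj_on f A.C" using bij bij_betw_imp_inj_on by blast
  have bg: "bij_betw ?g (rl_car B) A.C" using bij bij_betw_inv_into by blast
  have gf: "\<And>x. x \<in> A.C \<Longrightarrow> ?g (f x) = x" using inv_into_f_f[OF inj] by blast
  have ex: "\<And>u. u \<in> rl_car B \<Longrightarrow> \<exists>x\<in>A.C. u = f x" using bij by (metis bij_betw_imp_surj_on imageE)
  have ops: "\<forall>x\<in>A.C. \<forall>y\<in>A.C.
        f (A.mt x y) = rl_meet B (f x) (f y) \<and>
        f (A.jn x y) = rl_join B (f x) (f y) \<and>
        f (A.ml x y) = rl_mult B (f x) (f y) \<and>
        f (A.im x y) = rl_imp B (f x) (f y)" "f A.z0 = rl_zero B" "f A.o1 = rl_one B"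
    using iso unfolding rl_iso_def by blast+
  have "\<forall>u\<in>rl_car B. \<forall>v\<in>rl_car B.
        ?g (rl_meet B u v) = A.mt (?g u) (?g v) \<and>
        ?g (rl_join B u v) = A.jn (?g u) (?g v) \<and>
        ?g (rl_mult B u v) = A.ml (?g u) (?g v) \<and>
        ?g (rl_imp B u v) = A.im (?g u) (?g v)"
  proof (intro ballI)
    fix u v assume "u \<in> rl_car B" "v \<in> rl_car B"
    then obtain x y where xy: "x \<in> A.C" "y \<in> A.C" "u = f x" "v = f y" using ex by blast
    have e: "rl_meet B u v = f (A.mt x y)" "rl_join B u v = f (A.jn x y)"
        "rl_mult B u v = f (A.ml x y)" "rl_imp B u v = f (A.im x y)"
      using xy ops(1) by auto
    show "?g (rl_meet B u v) = A.mt (?g u) (?g v) \<and>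
        ?g (rl_join B u v) = A.jn (?g u) (?g v) \<and>
        ?g (rl_mult B u v) = A.ml (?g u) (?g v) \<and>
        ?g (rl_imp B u v) = A.im (?g u) (?g v)"
      unfolding e using xy gf by simp
  qed
  moreover have "?g (rl_zero B) = A.z0" "?g (rl_one B) = A.o1"
    using gf[of A.z0] gf[of A.o1] ops(2,3) by simp_all
  ultimately show ?thesis unfolding rl_iso_def using bg by blast
qed

lemma rl_isomorphic_sym: "rl_isomorphic A B \<Longrightarrow> residuated_lattice A \<Longrightarrow> rl_isomorphic B A"
  unfolding rl_isomorphic_def using rl_iso_sym by blast

lemma rl_isomorphic_trans: "rl_isomorphic A B \<Longrightarrow> rl_isomorphic B D \<Longrightarrow> rl_isomorphic A D"
  unfolding rl_isomorphic_def using rl_iso_trans by blast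

lemma rl_isomorphic_refl: "rl_isomorphic A A"
  unfolding rl_isomorphic_def using rl_iso_refl by blast

lemma MV_transport:
  assumes iso: "rl_iso f A B" and RA: "residuated_lattice A" and MB: "MV_algebra B"
  shows "MV_algebra A"
proof -
  interpret A: rl A using RA by (simp add: rl_def)
  have bij: "bij_betw f A.C (rl_car B)" using iso unfolding rl_iso_def by blast
  have inj: "inj_on f A.C" using bij bij_betw_imp_inj_on by blast
  have fC: "\<And>x. x \<in> A.C \<Longrightarrow> f x \<in> rl_car B" using bij by (meson bij_betw_apply)
  have fi: "\<And>x y. x \<in> A.C \<Longrightarrow> y \<in> A.C \<Longrightarrow> f (A.im x y) = rl_imp B (f x) (f y)"
    using iso unfolding rl_iso_def by blast
  have M: "\<And>u v. u \<in> rl_car B \<Longrightarrow> v \<in> rl_car B \<Longrightarrow> rl_imp B (rl_imp B u v) v = rl_imp B (rl_imp B v u) u"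
    using MB unfolding MV_algebra_def by blast
  have "\<And>x y. x \<in> A.C \<Longrightarrow> y \<in> A.C \<Longrightarrow> A.im (A.im x y) y = A.im (A.im y x) x"
  proof -
    fix x y assume xy: "x \<in> A.C" "y \<in> A.C"
    have "f (A.im (A.im x y) y) = f (A.im (A.im y x) x)"
      using xy fi M fC by simp
    then show "A.im (A.im x y) y = A.im (A.im y x) x" using inj xy inj_on_def by (metis A.imC)
  qed
  then show ?thesis unfolding MV_algebra_def using RA by blast
qed


context bl
begin

definition pw :: "'a \<Rightarrow> nat \<Rightarrow> 'a" where "pw w k = ((ml w) ^^ k) o1"

lemma pw0[simp]: "pw w 0 = o1" by (simp add: pw_def)
lemma pwS: "pw w (Suc k) = ml w (pw w k)" by (simp add: pw_def)
lemma pwC[simp]: "w \<in> C \<Longrightarrow> pw w k \<in> C" by (induction k) (simp_all add: pwS)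
lemma pw1: "w \<in> C \<Longrightarrow> pw w 1 = w" by (simp add: pwS)
lemma pw_add: "w \<in> C \<Longrightarrow> ml (pw w m) (pw w k) = pw w (m + k)"
proof (induction m)
  case 0 then show ?case by simp
next
  case (Suc m)
  then show ?case using ml_assoc[of w "pw w m" "pw w k"] by (simp add: pwS)
qed
lemma pw_anti: "w \<in> C \<Longrightarrow> i \<le> j \<Longrightarrow> le (pw w j) (pw w i)"
proof (induction j)
  case 0 then show ?case by simp
next
  case (Suc j)
  show ?case
  proof (cases "i = Suc j")
    case True then show ?thesis using Suc by simp
  next
    case False
    then have "le (pw w j) (pw w i)" using Suc by simp
    moreover have "le (pw w (Suc j)) (pw w j)" using Suc.prems by (simp add: pwS ml_le2)
    ultimately show ?thesis using Suc.prems le_trans[of "pw w (Suc j)" "pw w j" "pw w i"] by simp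
  qed
qed
lemma pw_keep: "u \<in> C \<Longrightarrow> w \<in> C \<Longrightarrow> ml u w = u \<Longrightarrow> ml u (pw w k) = u"
proof (induction k)
  case 0 then show ?case by simp
next
  case (Suc k)
  then show ?case using ml_assoc[of u w "pw w k"] by (simp add: pwS)
qed

lemma idem_below:
  assumes fin: "finite C" and u: "u \<in> C" and w: "w \<in> C" and uw: "ml u w = u" and w1: "w \<noteq> o1"
  shows "\<exists>e\<in>C. ml e e = e \<and> le e w \<and> le u e"
proof -
  have "range (pw w) \<subseteq> C" using w by auto
  then have "finite (range (pw w))" using fin finite_subset by blast
  then have "\<not> inj (pw w)" using finite_imageD infinite_UNIV_nat by blast
  then obtain i j where ij: "i < j" "pw w i = pw w j"
    unfolding inj_def by (metis linorder_neqE_nat)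
  have si: "pw w (Suc i) = pw w i"
  proof -
    have "le (pw w j) (pw w (Suc i))" using ij w pw_anti by simp
    moreover have "le (pw w (Suc i)) (pw w i)" using w pw_anti by simp
    ultimately show ?thesis using ij w le_antisym by simp
  qed
  have stay: "pw w (i + m) = pw w i" for m
  proof (induction m)
    case 0 then show ?case by simp
  next
    case (Suc m)
    have "pw w (i + Suc m) = ml w (pw w (i + m))" by (simp add: pwS)
    also have "\<dots> = ml w (pw w i)" using Suc by simp
    also have "\<dots> = pw w i" using si by (simp add: pwS)
    finally show ?case .
  qed
  have i0: "i \<noteq> 0"
  proof
    assume "i = 0"
    then have "pw w 1 = o1" using si by simp
    then show False using w w1 pw1 by simp
  qed
  let ?e = "pw w i"
  have "ml ?e ?e = ?e" using w pw_add[of w i i] stay[of i] by simp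
  moreover have "le ?e w" using w pw_anti[of w 1 i] i0 pw1 by simp
  moreover have "le u ?e" using u w pw_keep[OF u w uw, of i] ml_le2[of u ?e] by simp
  ultimately show ?thesis using w by auto
qed

lemma Lstep:
  assumes fin: "finite C"
    and mem: "p \<in> C" "q \<in> C" "s \<in> C" "z \<in> C" "y \<in> C"
    and pid: "ml p p = p" and qid: "ml q q = q"
    and sq: "le s q" "s \<noteq> q" and spred: "\<And>w. w \<in> C \<Longrightarrow> \<not> le w s \<Longrightarrow> le q w"
    and yz: "le y z" "y \<noteq> z" and ypred: "\<And>w. w \<in> C \<Longrightarrow> le w z \<Longrightarrow> w \<noteq> z \<Longrightarrow> le w y"
    and pz: "\<not> le z p" and zq: "le z q"
    and noid: "\<And>e. e \<in> C \<Longrightarrow> ml e e = e \<Longrightarrow> le e s \<Longrightarrow> le e p"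
    and chain: "\<And>u v. u \<in> C \<Longrightarrow> v \<in> C \<Longrightarrow> le u v \<or> le v u"
  shows "ml s z = y"
proof -
  have s1: "s \<noteq> o1" using sq mem le1 le_antisym by (metis o1C)
  have ne: "ml s z \<noteq> z"
  proof
    assume "ml s z = z"
    then have "ml z s = z" using mem ml_comm by simp
    then obtain e where e: "e \<in> C" "ml e e = e" "le e s" "le z e"
      using idem_below[OF fin mem(4) mem(3) _ s1] by blast
    then have "le e p" using noid by simp
    then show False using e pz mem le_trans[of z e p] by simp
  qed
  have up: "le (ml s z) y" using ypred[of "ml s z"] mem ml_le2 ne by simp
  let ?w = "im z y"
  have wC: "?w \<in> C" using mem by simp
  have zw: "ml z ?w = y" using mem divis mt_eq2 yz by simp
  have "le ?w s"
  proof (rule ccontr)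
    assume "\<not> le ?w s"
    then have "le q ?w" using spred wC by simp
    then have "le (ml z q) (ml z ?w)" using mem wC ml_mono2 by simp
    moreover have "ml z q = z" using mem qid zq ordinal[of q z q] by simp
    ultimately have "le z y" using zw by simp
    then show False using yz mem le_antisym by simp
  qed
  then have "le (ml z ?w) (ml z s)" using mem wC ml_mono2 by simp
  then have "le y (ml s z)" using zw mem ml_comm by simp
  then show ?thesis using up mem le_antisym by simp
qed

end

context bl
begin

lemma decomp:
  assumes eC: "e \<in> C" and ee: "ml e e = e" and e0: "e \<noteq> z0" and e1: "e \<noteq> o1"
    and cmp: "\<And>x. x \<in> C \<Longrightarrow> le x e \<or> le e x"
  shows "\<exists>L1 L2 :: 'a rlat. BL_algebra L1 \<and> BL_algebra L2 \<and> rl_zero L1 \<noteq> rl_one L1 \<and>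
     rl_zero L2 \<noteq> rl_one L2 \<and> ord_prod_ok L1 L2 \<and> rl_isomorphic L (ord_prod L1 L2)"
proof -
  define C1 where "C1 = {x \<in> C. le x e}"
  define C2 where "C2 = {x \<in> C. le e x}"
  define L1 where "L1 = L\<lparr>rl_car := C1, rl_imp := (\<lambda>x y. mt (im x y) e), rl_one := e\<rparr>"
  define L2 where "L2 = L\<lparr>rl_car := C2, rl_zero := e\<rparr>"
  have C1: "x \<in> C1 \<longleftrightarrow> x \<in> C \<and> le x e" for x using C1_def by simp
  have C2: "x \<in> C2 \<longleftrightarrow> x \<in> C \<and> le e x" for x using C2_def by simp
  have le1eq: "rl_le L1 = le" unfolding L1_def rl_le_def[abs_def] by simp
  have le2eq: "rl_le L2 = le" unfolding L2_def rl_le_def[abs_def] by simp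
  have emx: "\<And>x. x \<in> C \<Longrightarrow> le x e \<Longrightarrow> ml x e = x"
    using eC ee idem_mt ml_comm mt_eq2 by metis
  have emx2: "\<And>x. x \<in> C \<Longrightarrow> le e x \<Longrightarrow> ml x e = e"
    using eC ee idem_mt ml_comm mt_eq1 by metis
  have ordl: "\<And>x y. x \<in> C \<Longrightarrow> y \<in> C \<Longrightarrow> le x e \<Longrightarrow> le e y \<Longrightarrow> ml x y = x"
    using eC ee ordinal by blast
  have ordr: "\<And>x y. x \<in> C \<Longrightarrow> y \<in> C \<Longrightarrow> le x e \<Longrightarrow> le e y \<Longrightarrow> ml y x = x"
    using ordl ml_comm by metis
  have e_not_le_0: "\<not> le e z0" using e0 eC le_antisym le0 z0C by blast
  have one_not_le_e: "\<not> le o1 e" using e1 eC le_antisym le1 o1C by blast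
  have imlt: "\<And>x y. x \<in> C \<Longrightarrow> y \<in> C \<Longrightarrow> le x e \<Longrightarrow> \<not> le x y \<Longrightarrow> le (im x y) e \<and> \<not> le e (im x y)"
  proof -
    fix x y assume a: "x \<in> C" "y \<in> C" "le x e" "\<not> le x y"
    have "\<not> le e (im x y)"
    proof
      assume "le e (im x y)"
      then have "le (ml x e) y" using a eC resid by simp
      then show False using a emx by simp
    qed
    then show "le (im x y) e \<and> \<not> le e (im x y)" using cmp[of "im x y"] a by simp
  qed
  have BL1: "BL_algebra L1"
  proof -
    have cl: "\<forall>x\<in>C1. \<forall>y\<in>C1. mt x y \<in> C1 \<and> jn x y \<in> C1 \<and> ml x y \<in> C1 \<and> mt (im x y) e \<in> C1"
    proof (intro ballI)
      fix x y assume "x \<in> C1" "y \<in> C1"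
      then have a: "x \<in> C" "y \<in> C" "le x e" "le y e" using C1 by auto
      show "mt x y \<in> C1 \<and> jn x y \<in> C1 \<and> ml x y \<in> C1 \<and> mt (im x y) e \<in> C1"
        using a eC le_trans[of "mt x y" x e] mt_le1[of x y] jn_lub[of x y e]
          le_trans[of "ml x y" x e] ml_le1[of x y] mt_le2[of "im x y" e]
        by (simp add: C1)
    qed
    have res: "\<forall>x\<in>C1. \<forall>y\<in>C1. \<forall>z\<in>C1. le z (mt (im x y) e) \<longleftrightarrow> le (ml x z) y"
      using eC by (auto simp: C1 mt_glb resid)
    have pl: "\<forall>x\<in>C1. \<forall>y\<in>C1. jn (mt (im x y) e) (mt (im y x) e) = e"
    proof (intro ballI)
      fix x y assume "x \<in> C1" "y \<in> C1"
      then have a: "x \<in> C" "y \<in> C" using C1 by auto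
      show "jn (mt (im x y) e) (mt (im y x) e) = e"
      proof (cases "le e (im x y)")
        case True
        then show ?thesis using a eC mt_eq2 jn_eq1 mt_le2 by simp
      next
        case f1: False
        show ?thesis
        proof (cases "le e (im y x)")
          case True
          then show ?thesis using a eC mt_eq2 jn_eq2 mt_le2 by simp
        next
          case False
          then have "le (im x y) e" "le (im y x) e" using f1 cmp[of "im x y"] cmp[of "im y x"] a by auto
          then have "le o1 e" using a eC prelin[of x y] jn_lub[of "im x y" "im y x" e] by simp
          then show ?thesis using one_not_le_e by simp
        qed
      qed
    qed
    have dv: "\<forall>x\<in>C1. \<forall>y\<in>C1. ml x (mt (im x y) e) = mt x y"
    proof (intro ballI)
      fix x y assume "x \<in> C1" "y \<in> C1"
      then have a: "x \<in> C" "y \<in> C" "le x e" using C1 by auto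
      show "ml x (mt (im x y) e) = mt x y"
      proof (cases "le x y")
        case True
        then have "im x y = o1" using a im_one by simp
        then show ?thesis using a eC True emx mt_eq1 mt_eq2[of o1 e] le1[of e] by simp
      next
        case False
        then show ?thesis using imlt[of x y] a eC mt_eq1 divis by simp
      qed
    qed
    have sel: "rl_car L1 = C1" "rl_meet L1 = mt" "rl_join L1 = jn" "rl_mult L1 = ml"
      "rl_imp L1 = (\<lambda>x y. mt (im x y) e)" "rl_zero L1 = z0" "rl_one L1 = e"
      unfolding L1_def by simp_all
    have sub: "C1 \<subseteq> C" using C1 by auto
    have z1: "z0 \<in> C1" "e \<in> C1" using eC by (simp_all add: C1)
    have lat: "\<forall>x\<in>C1. \<forall>y\<in>C1. mt x y = mt y x \<and> jn x y = jn y x"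
       "\<forall>x\<in>C1. \<forall>y\<in>C1. \<forall>z\<in>C1. mt x (mt y z) = mt (mt x y) z \<and> jn x (jn y z) = jn (jn x y) z"
       "\<forall>x\<in>C1. \<forall>y\<in>C1. mt x (jn x y) = x \<and> jn x (mt x y) = x"
       "\<forall>x\<in>C1. le z0 x \<and> le x e"
       "\<forall>x\<in>C1. \<forall>y\<in>C1. ml x y = ml y x"
       "\<forall>x\<in>C1. \<forall>y\<in>C1. \<forall>z\<in>C1. ml x (ml y z) = ml (ml x y) z"
       "\<forall>x\<in>C1. ml x e = x"
       "\<forall>x\<in>C1. \<forall>y\<in>C1. \<forall>z\<in>C1. le x y \<longrightarrow> le (ml x z) (ml y z)"
      using sub mt_comm jn_comm apply blast
      using sub mt_assoc jn_assoc apply blast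
      using sub absorb1 absorb2 apply blast
      using sub le0 C1 apply blast
      using sub ml_comm apply blast
      using sub ml_assoc apply blast
      using emx C1 apply blast
      using sub ml_mono apply blast
      done
    have pd: "\<forall>x\<in>C1. \<forall>y\<in>C1. jn (mt (im x y) e) (mt (im y x) e) = e \<and> ml x (mt (im x y) e) = mt x y"
      using pl dv by blast
    show ?thesis
      unfolding BL_algebra_def residuated_lattice_def Let_def le1eq sel
      using z1 cl lat res pd apply (intro conjI) apply assumption+ done
  qed
  have BL2: "BL_algebra L2"
  proof -
    have sel: "rl_car L2 = C2" "rl_meet L2 = mt" "rl_join L2 = jn" "rl_mult L2 = ml"
      "rl_imp L2 = im" "rl_zero L2 = e" "rl_one L2 = o1"
      unfolding L2_def by simp_all
    have sub: "C2 \<subseteq> C" using C2 by auto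
    have z1: "e \<in> C2" "o1 \<in> C2" using eC by (simp_all add: C2)
    have cl: "\<forall>x\<in>C2. \<forall>y\<in>C2. mt x y \<in> C2 \<and> jn x y \<in> C2 \<and> ml x y \<in> C2 \<and> im x y \<in> C2"
    proof (intro ballI)
      fix x y assume "x \<in> C2" "y \<in> C2"
      then have a: "x \<in> C" "y \<in> C" "le e x" "le e y" using C2 by auto
      have "le (ml x e) y" using a emx2 by simp
      then have "le e (im x y)" using a eC resid by simp
      moreover have "le e (ml x y)" using a eC ee ml_mono_both[of e x e y] by simp
      moreover have "le e (jn x y)" using a eC le_trans[of e x "jn x y"] jn_ge1 by simp
      moreover have "le e (mt x y)" using a eC mt_glb by simp
      ultimately show "mt x y \<in> C2 \<and> jn x y \<in> C2 \<and> ml x y \<in> C2 \<and> im x y \<in> C2"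
        using a by (simp add: C2)
    qed
    have lat: "\<forall>x\<in>C2. \<forall>y\<in>C2. mt x y = mt y x \<and> jn x y = jn y x"
       "\<forall>x\<in>C2. \<forall>y\<in>C2. \<forall>z\<in>C2. mt x (mt y z) = mt (mt x y) z \<and> jn x (jn y z) = jn (jn x y) z"
       "\<forall>x\<in>C2. \<forall>y\<in>C2. mt x (jn x y) = x \<and> jn x (mt x y) = x"
       "\<forall>x\<in>C2. le e x \<and> le x o1"
       "\<forall>x\<in>C2. \<forall>y\<in>C2. ml x y = ml y x"
       "\<forall>x\<in>C2. \<forall>y\<in>C2. \<forall>z\<in>C2. ml x (ml y z) = ml (ml x y) z"
       "\<forall>x\<in>C2. ml x o1 = x"
       "\<forall>x\<in>C2. \<forall>y\<in>C2. \<forall>z\<in>C2. le x y \<longrightarrow> le (ml x z) (ml y z)"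
       "\<forall>x\<in>C2. \<forall>y\<in>C2. \<forall>z\<in>C2. le z (im x y) \<longleftrightarrow> le (ml x z) y"
       "\<forall>x\<in>C2. \<forall>y\<in>C2. jn (im x y) (im y x) = o1 \<and> ml x (im x y) = mt x y"
      using sub mt_comm jn_comm apply blast
      using sub mt_assoc jn_assoc apply blast
      using sub absorb1 absorb2 apply blast
      using sub le1 C2 apply blast
      using sub ml_comm apply blast
      using sub ml_assoc apply blast
      using sub ml1 apply blast
      using sub ml_mono apply blast
      using sub resid apply blast
      using sub prelin divis apply blast
      done
    show ?thesis
      unfolding BL_algebra_def residuated_lattice_def Let_def le2eq sel
      using z1 cl lat apply (intro conjI) apply assumption+ done
  qed
  have ok: "ord_prod_ok L1 L2"
    unfolding ord_prod_ok_def L1_def L2_def using eC le_antisym by (auto simp: C1 C2)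
  have CU: "C1 \<union> C2 = C" using cmp by (auto simp: C1 C2; blast)
  have ople: "\<And>x y. x \<in> C \<Longrightarrow> y \<in> C \<Longrightarrow> op_le L1 L2 x y \<longleftrightarrow> le x y"
  proof -
    fix x y assume a: "x \<in> C" "y \<in> C"
    have s: "rl_car L1 = C1" "rl_car L2 = C2" unfolding L1_def L2_def by simp_all
    show "op_le L1 L2 x y \<longleftrightarrow> le x y"
      unfolding op_le_def s le1eq le2eq
      using a eC cmp[of x] cmp[of y] le_trans[of x e y] le_trans[of e x y]
      by (auto simp: C1 C2)
  qed
  have iso: "rl_iso id L (ord_prod L1 L2)"
  proof -
    have s: "rl_car L1 = C1" "rl_car L2 = C2" "rl_meet L1 = mt" "rl_meet L2 = mt"
      "rl_join L1 = jn" "rl_join L2 = jn" "rl_mult L1 = ml" "rl_mult L2 = ml"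
      "rl_imp L1 = (\<lambda>x y. mt (im x y) e)" "rl_imp L2 = im" "rl_zero L1 = z0" "rl_one L2 = o1"
      unfolding L1_def L2_def by simp_all
    have ops: "rl_car (ord_prod L1 L2) = C"
      "rl_zero (ord_prod L1 L2) = z0" "rl_one (ord_prod L1 L2) = o1"
      unfolding ord_prod_def Let_def s using CU by simp_all
    have M: "rl_meet (ord_prod L1 L2) x y = mt x y" if a: "x \<in> C" "y \<in> C" for x y
    proof -
      have "rl_meet (ord_prod L1 L2) x y = (if x \<in> C1 \<and> y \<in> C1 then mt x y
                       else if x \<in> C2 \<and> y \<in> C2 then mt x y
                       else if x \<in> C1 then x else y)"
        unfolding ord_prod_def Let_def s by simp
      also have "\<dots> = mt x y"
        using a eC cmp[of x] cmp[of y] le_trans[of x e y] le_trans[of y e x] mt_eq1 mt_eq2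
        by (auto simp: C1 C2)
      finally show ?thesis .
    qed
    have J: "rl_join (ord_prod L1 L2) x y = jn x y" if a: "x \<in> C" "y \<in> C" for x y
    proof -
      have "rl_join (ord_prod L1 L2) x y = (if x \<in> C1 \<and> y \<in> C1 then jn x y
                       else if x \<in> C2 \<and> y \<in> C2 then jn x y
                       else if x \<in> C1 then y else x)"
        unfolding ord_prod_def Let_def s by simp
      also have "\<dots> = jn x y"
        using a eC cmp[of x] cmp[of y] le_trans[of x e y] le_trans[of y e x] jn_eq1 jn_eq2
        by (auto simp: C1 C2)
      finally show ?thesis .
    qed
    have T: "rl_mult (ord_prod L1 L2) x y = ml x y" if a: "x \<in> C" "y \<in> C" for x y
    proof -
      have "rl_mult (ord_prod L1 L2) x y = (if x \<in> C1 \<and> y \<in> C1 then ml x y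
                       else if x \<in> C2 \<and> y \<in> C2 then ml x y
                       else if x \<in> C1 then x else y)"
        unfolding ord_prod_def Let_def s by simp
      also have "\<dots> = ml x y"
        using a eC cmp[of x] cmp[of y] ordl[of x y] ordr[of y x]
        by (auto simp: C1 C2)
      finally show ?thesis .
    qed
    have I: "rl_imp (ord_prod L1 L2) x y = im x y" if a: "x \<in> C" "y \<in> C" for x y
    proof -
      have "rl_imp (ord_prod L1 L2) x y = (if op_le L1 L2 x y then o1
                      else if x \<in> C1 \<and> y \<in> C1 then mt (im x y) e
                      else if x \<in> C2 \<and> y \<in> C2 then im x y
                      else y)"
        unfolding ord_prod_def Let_def s by simp
      also have "\<dots> = im x y"
      proof (cases "le x y")
        case True
        then show ?thesis using a ople im_one[of x y] by simp
      next
        case nle: False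
        show ?thesis
        proof (cases "x \<in> C1 \<and> y \<in> C1")
          case True
          then show ?thesis using a nle ople imlt[of x y] mt_eq1 eC by (simp add: C1)
        next
          case n1: False
          show ?thesis
          proof (cases "x \<in> C2 \<and> y \<in> C2")
            case True
            then show ?thesis using a nle n1 ople by auto
          next
            case n2: False
            have xe: "le e x" "\<not> le x e" using a n1 n2 nle cmp[of x] cmp[of y] le_trans[of x e y] eC
              by (auto simp: C1 C2)
            have ye: "le y e" "\<not> le e y" using a n1 n2 nle cmp[of x] cmp[of y] le_trans[of x e y] eC
              by (auto simp: C1 C2)
            have w: "im x y \<in> C" using a by simp
            have "le (im x y) e"
            proof (rule ccontr)
              assume "\<not> le (im x y) e"
              then have "le e (im x y)" using cmp[OF w] by simp
              then have "le (ml x e) (ml x (im x y))" using a eC ml_mono2 by simp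
              then have "le e (ml x (im x y))" using a xe emx2 by simp
              then have "le e y" using a eC mp le_trans[of e "ml x (im x y)" y] by simp
              then show False using ye by simp
            qed
            then have "ml x (im x y) = im x y" using ordr[of "im x y" x] a xe w by simp
            then have "le (im x y) y" using a mp by metis
            then have "im x y = y" using a im_ge le_antisym w by simp
            then show ?thesis using a nle n1 n2 ople by auto
          qed
        qed
      qed
      finally show ?thesis .
    qed
    show ?thesis unfolding rl_iso_def ops using M J T I by simp
  qed
  have "rl_zero L1 \<noteq> rl_one L1" "rl_zero L2 \<noteq> rl_one L2"
    using e0 e1 unfolding L1_def L2_def by auto
  then show ?thesis
    using BL1 BL2 ok iso unfolding rl_isomorphic_def by blast
qed

end

definition mk :: "nat \<Rightarrow> nat list list \<Rightarrow> nat list list \<Rightarrow> nat list list \<Rightarrow> nat list list \<Rightarrow> nat rlat" where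
  "mk n M J T I = \<lparr>rl_car = {0..<n}, rl_meet = (\<lambda>x y. M ! x ! y), rl_join = (\<lambda>x y. J ! x ! y),
     rl_mult = (\<lambda>x y. T ! x ! y), rl_imp = (\<lambda>x y. I ! x ! y), rl_zero = 0, rl_one = n - 1\<rparr>"

lemma set2: "{0..<2::nat} = {0,1}" by auto
lemma set3: "{0..<3::nat} = {0,1,2}" by auto
lemma set4: "{0..<4::nat} = {0,1,2,3}" by auto
lemma set5: "{0..<5::nat} = {0,1,2,3,4}" by auto

definition "R2c = mk 2 [[0,0],[0,1]] [[0,1],[1,1]] [[0,0],[0,1]] [[1,1],[0,1]]"
lemma BL_R2c: "BL_algebra R2c"
  unfolding BL_algebra_def residuated_lattice_def R2c_def mk_def rl_le_def Let_def
  by (simp add: set2)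
lemma car_R2c: "rl_car R2c = {0..<2}"
  by (simp add: R2c_def mk_def)
lemma MV_R2c: "MV_algebra R2c"
  unfolding MV_algebra_def residuated_lattice_def R2c_def mk_def rl_le_def Let_def
  by (simp add: set2)
definition "R3c = mk 3 [[0,0,0],[0,1,1],[0,1,2]] [[0,1,2],[1,1,2],[2,2,2]] [[0,0,0],[0,0,1],[0,1,2]] [[2,2,2],[1,2,2],[0,1,2]]"
lemma BL_R3c: "BL_algebra R3c"
  unfolding BL_algebra_def residuated_lattice_def R3c_def mk_def rl_le_def Let_def
  by (simp add: set3)
lemma car_R3c: "rl_car R3c = {0..<3}"
  by (simp add: R3c_def mk_def)
lemma MV_R3c: "MV_algebra R3c"
  unfolding MV_algebra_def residuated_lattice_def R3c_def mk_def rl_le_def Let_def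
  by (simp add: set3)
definition "R3c1 = mk 3 [[0,0,0],[0,1,1],[0,1,2]] [[0,1,2],[1,1,2],[2,2,2]] [[0,0,0],[0,1,1],[0,1,2]] [[2,2,2],[0,2,2],[0,1,2]]"
lemma BL_R3c1: "BL_algebra R3c1"
  unfolding BL_algebra_def residuated_lattice_def R3c1_def mk_def rl_le_def Let_def
  by (simp add: set3)
lemma car_R3c1: "rl_car R3c1 = {0..<3}"
  by (simp add: R3c1_def mk_def)
lemma nMV_R3c1: "\<not> MV_algebra R3c1"
  unfolding MV_algebra_def residuated_lattice_def R3c1_def mk_def rl_le_def Let_def
  by (simp add: set3)
lemma idem_R3c1: "1 \<in> rl_car R3c1 \<and> rl_mult R3c1 1 1 = 1 \<and> 1 \<noteq> rl_zero R3c1 \<and> 1 \<noteq> rl_one R3c1 \<and> (\<forall>x\<in>rl_car R3c1. rl_le R3c1 x 1 \<or> rl_le R3c1 1 x)"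
  by (simp add: R3c1_def mk_def rl_le_def set3)
definition "R4c = mk 4 [[0,0,0,0],[0,1,1,1],[0,1,2,2],[0,1,2,3]] [[0,1,2,3],[1,1,2,3],[2,2,2,3],[3,3,3,3]] [[0,0,0,0],[0,0,0,1],[0,0,1,2],[0,1,2,3]] [[3,3,3,3],[2,3,3,3],[1,2,3,3],[0,1,2,3]]"
lemma BL_R4c: "BL_algebra R4c"
  unfolding BL_algebra_def residuated_lattice_def R4c_def mk_def rl_le_def Let_def
  by (simp add: set4)
lemma car_R4c: "rl_car R4c = {0..<4}"
  by (simp add: R4c_def mk_def)
lemma MV_R4c: "MV_algebra R4c"
  unfolding MV_algebra_def residuated_lattice_def R4c_def mk_def rl_le_def Let_def
  by (simp add: set4)
definition "R4c1 = mk 4 [[0,0,0,0],[0,1,1,1],[0,1,2,2],[0,1,2,3]] [[0,1,2,3],[1,1,2,3],[2,2,2,3],[3,3,3,3]] [[0,0,0,0],[0,1,1,1],[0,1,1,2],[0,1,2,3]] [[3,3,3,3],[0,3,3,3],[0,2,3,3],[0,1,2,3]]"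
lemma BL_R4c1: "BL_algebra R4c1"
  unfolding BL_algebra_def residuated_lattice_def R4c1_def mk_def rl_le_def Let_def
  by (simp add: set4)
lemma car_R4c1: "rl_car R4c1 = {0..<4}"
  by (simp add: R4c1_def mk_def)
lemma nMV_R4c1: "\<not> MV_algebra R4c1"
  unfolding MV_algebra_def residuated_lattice_def R4c1_def mk_def rl_le_def Let_def
  by (simp add: set4)
lemma idem_R4c1: "1 \<in> rl_car R4c1 \<and> rl_mult R4c1 1 1 = 1 \<and> 1 \<noteq> rl_zero R4c1 \<and> 1 \<noteq> rl_one R4c1 \<and> (\<forall>x\<in>rl_car R4c1. rl_le R4c1 x 1 \<or> rl_le R4c1 1 x)"
  by (simp add: R4c1_def mk_def rl_le_def set4)
definition "R4c2 = mk 4 [[0,0,0,0],[0,1,1,1],[0,1,2,2],[0,1,2,3]] [[0,1,2,3],[1,1,2,3],[2,2,2,3],[3,3,3,3]] [[0,0,0,0],[0,0,1,1],[0,1,2,2],[0,1,2,3]] [[3,3,3,3],[1,3,3,3],[0,1,3,3],[0,1,2,3]]"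
lemma BL_R4c2: "BL_algebra R4c2"
  unfolding BL_algebra_def residuated_lattice_def R4c2_def mk_def rl_le_def Let_def
  by (simp add: set4)
lemma car_R4c2: "rl_car R4c2 = {0..<4}"
  by (simp add: R4c2_def mk_def)
lemma nMV_R4c2: "\<not> MV_algebra R4c2"
  unfolding MV_algebra_def residuated_lattice_def R4c2_def mk_def rl_le_def Let_def
  by (simp add: set4)
lemma idem_R4c2: "2 \<in> rl_car R4c2 \<and> rl_mult R4c2 2 2 = 2 \<and> 2 \<noteq> rl_zero R4c2 \<and> 2 \<noteq> rl_one R4c2 \<and> (\<forall>x\<in>rl_car R4c2. rl_le R4c2 x 2 \<or> rl_le R4c2 2 x)"
  by (simp add: R4c2_def mk_def rl_le_def set4)
definition "R4c12 = mk 4 [[0,0,0,0],[0,1,1,1],[0,1,2,2],[0,1,2,3]] [[0,1,2,3],[1,1,2,3],[2,2,2,3],[3,3,3,3]] [[0,0,0,0],[0,1,1,1],[0,1,2,2],[0,1,2,3]] [[3,3,3,3],[0,3,3,3],[0,1,3,3],[0,1,2,3]]"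
lemma BL_R4c12: "BL_algebra R4c12"
  unfolding BL_algebra_def residuated_lattice_def R4c12_def mk_def rl_le_def Let_def
  by (simp add: set4)
lemma car_R4c12: "rl_car R4c12 = {0..<4}"
  by (simp add: R4c12_def mk_def)
lemma nMV_R4c12: "\<not> MV_algebra R4c12"
  unfolding MV_algebra_def residuated_lattice_def R4c12_def mk_def rl_le_def Let_def
  by (simp add: set4)
lemma idem_R4c12: "1 \<in> rl_car R4c12 \<and> rl_mult R4c12 1 1 = 1 \<and> 1 \<noteq> rl_zero R4c12 \<and> 1 \<noteq> rl_one R4c12 \<and> (\<forall>x\<in>rl_car R4c12. rl_le R4c12 x 1 \<or> rl_le R4c12 1 x)"
  by (simp add: R4c12_def mk_def rl_le_def set4)
definition "R4b = mk 4 [[0,0,0,0],[0,1,0,1],[0,0,2,2],[0,1,2,3]] [[0,1,2,3],[1,1,3,3],[2,3,2,3],[3,3,3,3]] [[0,0,0,0],[0,1,0,1],[0,0,2,2],[0,1,2,3]] [[3,3,3,3],[2,3,2,3],[1,1,3,3],[0,1,2,3]]"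
lemma BL_R4b: "BL_algebra R4b"
  unfolding BL_algebra_def residuated_lattice_def R4b_def mk_def rl_le_def Let_def
  by (simp add: set4)
lemma car_R4b: "rl_car R4b = {0..<4}"
  by (simp add: R4b_def mk_def)
lemma MV_R4b: "MV_algebra R4b"
  unfolding MV_algebra_def residuated_lattice_def R4b_def mk_def rl_le_def Let_def
  by (simp add: set4)
definition "R5c = mk 5 [[0,0,0,0,0],[0,1,1,1,1],[0,1,2,2,2],[0,1,2,3,3],[0,1,2,3,4]] [[0,1,2,3,4],[1,1,2,3,4],[2,2,2,3,4],[3,3,3,3,4],[4,4,4,4,4]] [[0,0,0,0,0],[0,0,0,0,1],[0,0,0,1,2],[0,0,1,2,3],[0,1,2,3,4]] [[4,4,4,4,4],[3,4,4,4,4],[2,3,4,4,4],[1,2,3,4,4],[0,1,2,3,4]]"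
lemma BL_R5c: "BL_algebra R5c"
  unfolding BL_algebra_def residuated_lattice_def R5c_def mk_def rl_le_def Let_def
  by (simp add: set5)
lemma car_R5c: "rl_car R5c = {0..<5}"
  by (simp add: R5c_def mk_def)
lemma MV_R5c: "MV_algebra R5c"
  unfolding MV_algebra_def residuated_lattice_def R5c_def mk_def rl_le_def Let_def
  by (simp add: set5)
definition "R5c1 = mk 5 [[0,0,0,0,0],[0,1,1,1,1],[0,1,2,2,2],[0,1,2,3,3],[0,1,2,3,4]] [[0,1,2,3,4],[1,1,2,3,4],[2,2,2,3,4],[3,3,3,3,4],[4,4,4,4,4]] [[0,0,0,0,0],[0,1,1,1,1],[0,1,1,1,2],[0,1,1,2,3],[0,1,2,3,4]] [[4,4,4,4,4],[0,4,4,4,4],[0,3,4,4,4],[0,2,3,4,4],[0,1,2,3,4]]"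
lemma BL_R5c1: "BL_algebra R5c1"
  unfolding BL_algebra_def residuated_lattice_def R5c1_def mk_def rl_le_def Let_def
  by (simp add: set5)
lemma car_R5c1: "rl_car R5c1 = {0..<5}"
  by (simp add: R5c1_def mk_def)
lemma nMV_R5c1: "\<not> MV_algebra R5c1"
  unfolding MV_algebra_def residuated_lattice_def R5c1_def mk_def rl_le_def Let_def
  by (simp add: set5)
lemma idem_R5c1: "1 \<in> rl_car R5c1 \<and> rl_mult R5c1 1 1 = 1 \<and> 1 \<noteq> rl_zero R5c1 \<and> 1 \<noteq> rl_one R5c1 \<and> (\<forall>x\<in>rl_car R5c1. rl_le R5c1 x 1 \<or> rl_le R5c1 1 x)"
  by (simp add: R5c1_def mk_def rl_le_def set5)
definition "R5c2 = mk 5 [[0,0,0,0,0],[0,1,1,1,1],[0,1,2,2,2],[0,1,2,3,3],[0,1,2,3,4]] [[0,1,2,3,4],[1,1,2,3,4],[2,2,2,3,4],[3,3,3,3,4],[4,4,4,4,4]] [[0,0,0,0,0],[0,0,1,1,1],[0,1,2,2,2],[0,1,2,2,3],[0,1,2,3,4]] [[4,4,4,4,4],[1,4,4,4,4],[0,1,4,4,4],[0,1,3,4,4],[0,1,2,3,4]]"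
lemma BL_R5c2: "BL_algebra R5c2"
  unfolding BL_algebra_def residuated_lattice_def R5c2_def mk_def rl_le_def Let_def
  by (simp add: set5)
lemma car_R5c2: "rl_car R5c2 = {0..<5}"
  by (simp add: R5c2_def mk_def)
lemma nMV_R5c2: "\<not> MV_algebra R5c2"
  unfolding MV_algebra_def residuated_lattice_def R5c2_def mk_def rl_le_def Let_def
  by (simp add: set5)
lemma idem_R5c2: "2 \<in> rl_car R5c2 \<and> rl_mult R5c2 2 2 = 2 \<and> 2 \<noteq> rl_zero R5c2 \<and> 2 \<noteq> rl_one R5c2 \<and> (\<forall>x\<in>rl_car R5c2. rl_le R5c2 x 2 \<or> rl_le R5c2 2 x)"
  by (simp add: R5c2_def mk_def rl_le_def set5)
definition "R5c3 = mk 5 [[0,0,0,0,0],[0,1,1,1,1],[0,1,2,2,2],[0,1,2,3,3],[0,1,2,3,4]] [[0,1,2,3,4],[1,1,2,3,4],[2,2,2,3,4],[3,3,3,3,4],[4,4,4,4,4]] [[0,0,0,0,0],[0,0,0,1,1],[0,0,1,2,2],[0,1,2,3,3],[0,1,2,3,4]] [[4,4,4,4,4],[2,4,4,4,4],[1,2,4,4,4],[0,1,2,4,4],[0,1,2,3,4]]"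
lemma BL_R5c3: "BL_algebra R5c3"
  unfolding BL_algebra_def residuated_lattice_def R5c3_def mk_def rl_le_def Let_def
  by (simp add: set5)
lemma car_R5c3: "rl_car R5c3 = {0..<5}"
  by (simp add: R5c3_def mk_def)
lemma nMV_R5c3: "\<not> MV_algebra R5c3"
  unfolding MV_algebra_def residuated_lattice_def R5c3_def mk_def rl_le_def Let_def
  by (simp add: set5)
lemma idem_R5c3: "3 \<in> rl_car R5c3 \<and> rl_mult R5c3 3 3 = 3 \<and> 3 \<noteq> rl_zero R5c3 \<and> 3 \<noteq> rl_one R5c3 \<and> (\<forall>x\<in>rl_car R5c3. rl_le R5c3 x 3 \<or> rl_le R5c3 3 x)"
  by (simp add: R5c3_def mk_def rl_le_def set5)
definition "R5c12 = mk 5 [[0,0,0,0,0],[0,1,1,1,1],[0,1,2,2,2],[0,1,2,3,3],[0,1,2,3,4]] [[0,1,2,3,4],[1,1,2,3,4],[2,2,2,3,4],[3,3,3,3,4],[4,4,4,4,4]] [[0,0,0,0,0],[0,1,1,1,1],[0,1,2,2,2],[0,1,2,2,3],[0,1,2,3,4]] [[4,4,4,4,4],[0,4,4,4,4],[0,1,4,4,4],[0,1,3,4,4],[0,1,2,3,4]]"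
lemma BL_R5c12: "BL_algebra R5c12"
  unfolding BL_algebra_def residuated_lattice_def R5c12_def mk_def rl_le_def Let_def
  by (simp add: set5)
lemma car_R5c12: "rl_car R5c12 = {0..<5}"
  by (simp add: R5c12_def mk_def)
lemma nMV_R5c12: "\<not> MV_algebra R5c12"
  unfolding MV_algebra_def residuated_lattice_def R5c12_def mk_def rl_le_def Let_def
  by (simp add: set5)
lemma idem_R5c12: "1 \<in> rl_car R5c12 \<and> rl_mult R5c12 1 1 = 1 \<and> 1 \<noteq> rl_zero R5c12 \<and> 1 \<noteq> rl_one R5c12 \<and> (\<forall>x\<in>rl_car R5c12. rl_le R5c12 x 1 \<or> rl_le R5c12 1 x)"
  by (simp add: R5c12_def mk_def rl_le_def set5)
definition "R5c13 = mk 5 [[0,0,0,0,0],[0,1,1,1,1],[0,1,2,2,2],[0,1,2,3,3],[0,1,2,3,4]] [[0,1,2,3,4],[1,1,2,3,4],[2,2,2,3,4],[3,3,3,3,4],[4,4,4,4,4]] [[0,0,0,0,0],[0,1,1,1,1],[0,1,1,2,2],[0,1,2,3,3],[0,1,2,3,4]] [[4,4,4,4,4],[0,4,4,4,4],[0,2,4,4,4],[0,1,2,4,4],[0,1,2,3,4]]"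
lemma BL_R5c13: "BL_algebra R5c13"
  unfolding BL_algebra_def residuated_lattice_def R5c13_def mk_def rl_le_def Let_def
  by (simp add: set5)
lemma car_R5c13: "rl_car R5c13 = {0..<5}"
  by (simp add: R5c13_def mk_def)
lemma nMV_R5c13: "\<not> MV_algebra R5c13"
  unfolding MV_algebra_def residuated_lattice_def R5c13_def mk_def rl_le_def Let_def
  by (simp add: set5)
lemma idem_R5c13: "1 \<in> rl_car R5c13 \<and> rl_mult R5c13 1 1 = 1 \<and> 1 \<noteq> rl_zero R5c13 \<and> 1 \<noteq> rl_one R5c13 \<and> (\<forall>x\<in>rl_car R5c13. rl_le R5c13 x 1 \<or> rl_le R5c13 1 x)"
  by (simp add: R5c13_def mk_def rl_le_def set5)
definition "R5c23 = mk 5 [[0,0,0,0,0],[0,1,1,1,1],[0,1,2,2,2],[0,1,2,3,3],[0,1,2,3,4]] [[0,1,2,3,4],[1,1,2,3,4],[2,2,2,3,4],[3,3,3,3,4],[4,4,4,4,4]] [[0,0,0,0,0],[0,0,1,1,1],[0,1,2,2,2],[0,1,2,3,3],[0,1,2,3,4]] [[4,4,4,4,4],[1,4,4,4,4],[0,1,4,4,4],[0,1,2,4,4],[0,1,2,3,4]]"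
lemma BL_R5c23: "BL_algebra R5c23"
  unfolding BL_algebra_def residuated_lattice_def R5c23_def mk_def rl_le_def Let_def
  by (simp add: set5)
lemma car_R5c23: "rl_car R5c23 = {0..<5}"
  by (simp add: R5c23_def mk_def)
lemma nMV_R5c23: "\<not> MV_algebra R5c23"
  unfolding MV_algebra_def residuated_lattice_def R5c23_def mk_def rl_le_def Let_def
  by (simp add: set5)
lemma idem_R5c23: "2 \<in> rl_car R5c23 \<and> rl_mult R5c23 2 2 = 2 \<and> 2 \<noteq> rl_zero R5c23 \<and> 2 \<noteq> rl_one R5c23 \<and> (\<forall>x\<in>rl_car R5c23. rl_le R5c23 x 2 \<or> rl_le R5c23 2 x)"
  by (simp add: R5c23_def mk_def rl_le_def set5)
definition "R5c123 = mk 5 [[0,0,0,0,0],[0,1,1,1,1],[0,1,2,2,2],[0,1,2,3,3],[0,1,2,3,4]] [[0,1,2,3,4],[1,1,2,3,4],[2,2,2,3,4],[3,3,3,3,4],[4,4,4,4,4]] [[0,0,0,0,0],[0,1,1,1,1],[0,1,2,2,2],[0,1,2,3,3],[0,1,2,3,4]] [[4,4,4,4,4],[0,4,4,4,4],[0,1,4,4,4],[0,1,2,4,4],[0,1,2,3,4]]"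
lemma BL_R5c123: "BL_algebra R5c123"
  unfolding BL_algebra_def residuated_lattice_def R5c123_def mk_def rl_le_def Let_def
  by (simp add: set5)
lemma car_R5c123: "rl_car R5c123 = {0..<5}"
  by (simp add: R5c123_def mk_def)
lemma nMV_R5c123: "\<not> MV_algebra R5c123"
  unfolding MV_algebra_def residuated_lattice_def R5c123_def mk_def rl_le_def Let_def
  by (simp add: set5)
lemma idem_R5c123: "1 \<in> rl_car R5c123 \<and> rl_mult R5c123 1 1 = 1 \<and> 1 \<noteq> rl_zero R5c123 \<and> 1 \<noteq> rl_one R5c123 \<and> (\<forall>x\<in>rl_car R5c123. rl_le R5c123 x 1 \<or> rl_le R5c123 1 x)"
  by (simp add: R5c123_def mk_def rl_le_def set5)
definition "R5v = mk 5 [[0,0,0,0,0],[0,1,1,1,1],[0,1,2,1,2],[0,1,1,3,3],[0,1,2,3,4]] [[0,1,2,3,4],[1,1,2,3,4],[2,2,2,4,4],[3,3,4,3,4],[4,4,4,4,4]] [[0,0,0,0,0],[0,1,1,1,1],[0,1,2,1,2],[0,1,1,3,3],[0,1,2,3,4]] [[4,4,4,4,4],[0,4,4,4,4],[0,3,4,3,4],[0,2,2,4,4],[0,1,2,3,4]]"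
lemma BL_R5v: "BL_algebra R5v"
  unfolding BL_algebra_def residuated_lattice_def R5v_def mk_def rl_le_def Let_def
  by (simp add: set5)
lemma car_R5v: "rl_car R5v = {0..<5}"
  by (simp add: R5v_def mk_def)
lemma nMV_R5v: "\<not> MV_algebra R5v"
  unfolding MV_algebra_def residuated_lattice_def R5v_def mk_def rl_le_def Let_def
  by (simp add: set5)
lemma idem_R5v: "1 \<in> rl_car R5v \<and> rl_mult R5v 1 1 = 1 \<and> 1 \<noteq> rl_zero R5v \<and> 1 \<noteq> rl_one R5v \<and> (\<forall>x\<in>rl_car R5v. rl_le R5v x 1 \<or> rl_le R5v 1 x)"
  by (simp add: R5v_def mk_def rl_le_def set5)

lemma all2: "(\<forall>i<2::nat. P i) \<longleftrightarrow> P 0 \<and> P 1"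
  by (auto simp: numeral_eq_Suc less_Suc_eq)
lemma all3: "(\<forall>i<3::nat. P i) \<longleftrightarrow> P 0 \<and> P 1 \<and> P 2"
  by (auto simp: numeral_eq_Suc less_Suc_eq)
lemma all4: "(\<forall>i<4::nat. P i) \<longleftrightarrow> P 0 \<and> P 1 \<and> P 2 \<and> P 3"
  by (auto simp: numeral_eq_Suc less_Suc_eq)
lemma all5: "(\<forall>i<5::nat. P i) \<longleftrightarrow> P 0 \<and> P 1 \<and> P 2 \<and> P 3 \<and> P 4"
  by (auto simp: numeral_eq_Suc less_Suc_eq)

lemma le_mk: "rl_le (mk n M J T I) x y \<longleftrightarrow> M ! x ! y = x"
  by (simp add: rl_le_def mk_def)

context rl
begin

lemma rep_iso:
  assumes RR: "residuated_lattice R" and car: "rl_car R = {0..<n}"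
    and d: "distinct xs" and len: "length xs = n" and s: "set xs = C"
    and ord: "\<forall>i<n. \<forall>j<n. le (xs ! i) (xs ! j) \<longleftrightarrow> rl_le R i j"
    and mul: "\<forall>i<n. \<forall>j<n. xs ! rl_mult R i j = ml (xs ! i) (xs ! j)"
  shows "rl_isomorphic L R"
proof -
  have bij: "bij_betw ((!) xs) (rl_car R) C"
    using d len s car by (intro bij_betw_nth) auto
  have "rl_iso ((!) xs) R L"
    by (rule iso_from_order_mult[OF RR RL bij]) (use ord mul car in auto)
  then have "rl_isomorphic R L" unfolding rl_isomorphic_def by blast
  then show ?thesis using rl_isomorphic_sym RR by blast
qed

end

context bl
begin
lemma chain3:
  assumes fin: "finite C" and Cd: "C = {z0, a, o1}" and dist: "distinct [z0, a, o1]"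
  shows "rl_isomorphic L R3c \<or> rl_isomorphic L R3c1"
proof -
  have mem[simp]: "a \<in> C" using Cd by auto
  have lef0: "le z0 a" "le z0 o1" by simp_all
  have lef1: "le a o1" by simp_all
  note lef[simp] = lef0 lef1
  have nlef[simp]: "\<not> le a z0" "\<not> le o1 z0" "\<not> le o1 a"
    using dist lef le_antisym mem by (auto simp del: lef)
  have neq: "z0 \<noteq> a" "z0 \<noteq> o1" "a \<noteq> z0" "a \<noteq> o1" "o1 \<noteq> z0" "o1 \<noteq> a" using dist by auto
  have chain: "\<And>u v. u \<in> C \<Longrightarrow> v \<in> C \<Longrightarrow> le u v \<or> le v u" using Cd by auto
  show ?thesis
  proof (cases "ml a a = a")
    case i1: True
    have f1: "ml a a = a" by (rule ordinal[of a]) (simp_all add: i1)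
    have "rl_isomorphic L R3c1"
    proof (rule rep_iso[OF BL_rl[OF BL_R3c1] car_R3c1, of "[z0, a, o1]"])
      show "distinct [z0, a, o1]" by (rule dist)
      show "length [z0, a, o1] = 3" by simp
      show "set [z0, a, o1] = C" using Cd by auto
      show "\<forall>i<3. \<forall>j<3. le ([z0, a, o1] ! i) ([z0, a, o1] ! j) \<longleftrightarrow> rl_le R3c1 i j"
        by (simp add: all3 R3c1_def le_mk)
      show "\<forall>i<3. \<forall>j<3. [z0, a, o1] ! rl_mult R3c1 i j = ml ([z0, a, o1] ! i) ([z0, a, o1] ! j)"
        by (simp add: all3 R3c1_def mk_def f1)
    qed
    then show ?thesis by simp
  next
    case i1: False
    have f1: "ml a a = z0" by (rule Lstep[OF fin, of z0 o1]) (auto simp: Cd neq i1)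
    have "rl_isomorphic L R3c"
    proof (rule rep_iso[OF BL_rl[OF BL_R3c] car_R3c, of "[z0, a, o1]"])
      show "distinct [z0, a, o1]" by (rule dist)
      show "length [z0, a, o1] = 3" by simp
      show "set [z0, a, o1] = C" using Cd by auto
      show "\<forall>i<3. \<forall>j<3. le ([z0, a, o1] ! i) ([z0, a, o1] ! j) \<longleftrightarrow> rl_le R3c i j"
        by (simp add: all3 R3c_def le_mk)
      show "\<forall>i<3. \<forall>j<3. [z0, a, o1] ! rl_mult R3c i j = ml ([z0, a, o1] ! i) ([z0, a, o1] ! j)"
        by (simp add: all3 R3c_def mk_def f1)
    qed
    then show ?thesis by simp
  qed
qed

lemma chain4:
  assumes fin: "finite C" and Cd: "C = {z0, a, b, o1}" and dist: "distinct [z0, a, b, o1]"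
    and ord: "le a b"
  shows "rl_isomorphic L R4c \<or> rl_isomorphic L R4c1 \<or> rl_isomorphic L R4c2 \<or> rl_isomorphic L R4c12"
proof -
  have mem[simp]: "a \<in> C" "b \<in> C" using Cd by auto
  have lef0: "le z0 a" "le z0 b" "le z0 o1" by simp_all
  have lef1: "le a o1" "le b o1" by simp_all
  note lef[simp] = lef0 lef1 ord
  have nlef[simp]: "\<not> le a z0" "\<not> le b z0" "\<not> le b a" "\<not> le o1 z0" "\<not> le o1 a" "\<not> le o1 b"
    using dist lef le_antisym mem by (auto simp del: lef)
  have neq: "z0 \<noteq> a" "z0 \<noteq> b" "z0 \<noteq> o1" "a \<noteq> z0" "a \<noteq> b" "a \<noteq> o1" "b \<noteq> z0" "b \<noteq> a" "b \<noteq> o1" "o1 \<noteq> z0" "o1 \<noteq> a" "o1 \<noteq> b" using dist by auto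
  have chain: "\<And>u v. u \<in> C \<Longrightarrow> v \<in> C \<Longrightarrow> le u v \<or> le v u" using Cd by auto
  show ?thesis
  proof (cases "ml a a = a")
    case i1: True
    show ?thesis
    proof (cases "ml b b = b")
      case i2: True
      have f1: "ml a a = a" by (rule ordinal[of a]) (simp_all add: i1 i2)
      have f2: "ml a b = a" by (rule ordinal[of a]) (simp_all add: i1 i2)
      have f3: "ml b a = a" using f2 ml_comm[of a b] by simp
      have f4: "ml b b = b" by (rule ordinal[of b]) (simp_all add: i1 i2)
      have "rl_isomorphic L R4c12"
      proof (rule rep_iso[OF BL_rl[OF BL_R4c12] car_R4c12, of "[z0, a, b, o1]"])
        show "distinct [z0, a, b, o1]" by (rule dist)
        show "length [z0, a, b, o1] = 4" by simp
        show "set [z0, a, b, o1] = C" using Cd by auto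
        show "\<forall>i<4. \<forall>j<4. le ([z0, a, b, o1] ! i) ([z0, a, b, o1] ! j) \<longleftrightarrow> rl_le R4c12 i j"
          by (simp add: all4 R4c12_def le_mk)
        show "\<forall>i<4. \<forall>j<4. [z0, a, b, o1] ! rl_mult R4c12 i j = ml ([z0, a, b, o1] ! i) ([z0, a, b, o1] ! j)"
          by (simp add: all4 R4c12_def mk_def f1 f2 f3 f4)
      qed
      then show ?thesis by simp
    next
      case i2: False
      have f1: "ml a a = a" by (rule ordinal[of a]) (simp_all add: i1 i2)
      have f2: "ml a b = a" by (rule ordinal[of a]) (simp_all add: i1 i2)
      have f3: "ml b a = a" using f2 ml_comm[of a b] by simp
      have f4: "ml b b = a" by (rule Lstep[OF fin, of a o1]) (auto simp: Cd neq i1 i2)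
      have "rl_isomorphic L R4c1"
      proof (rule rep_iso[OF BL_rl[OF BL_R4c1] car_R4c1, of "[z0, a, b, o1]"])
        show "distinct [z0, a, b, o1]" by (rule dist)
        show "length [z0, a, b, o1] = 4" by simp
        show "set [z0, a, b, o1] = C" using Cd by auto
        show "\<forall>i<4. \<forall>j<4. le ([z0, a, b, o1] ! i) ([z0, a, b, o1] ! j) \<longleftrightarrow> rl_le R4c1 i j"
          by (simp add: all4 R4c1_def le_mk)
        show "\<forall>i<4. \<forall>j<4. [z0, a, b, o1] ! rl_mult R4c1 i j = ml ([z0, a, b, o1] ! i) ([z0, a, b, o1] ! j)"
          by (simp add: all4 R4c1_def mk_def f1 f2 f3 f4)
      qed
      then show ?thesis by simp
    qed
  next
    case i1: False
    show ?thesis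
    proof (cases "ml b b = b")
      case i2: True
      have f1: "ml a b = a" by (rule ordinal[of b]) (simp_all add: i1 i2)
      have f2: "ml b a = a" using f1 ml_comm[of a b] by simp
      have f3: "ml b b = b" by (rule ordinal[of b]) (simp_all add: i1 i2)
      have f4: "ml a a = z0" by (rule Lstep[OF fin, of z0 b]) (auto simp: Cd neq i1 i2)
      have "rl_isomorphic L R4c2"
      proof (rule rep_iso[OF BL_rl[OF BL_R4c2] car_R4c2, of "[z0, a, b, o1]"])
        show "distinct [z0, a, b, o1]" by (rule dist)
        show "length [z0, a, b, o1] = 4" by simp
        show "set [z0, a, b, o1] = C" using Cd by auto
        show "\<forall>i<4. \<forall>j<4. le ([z0, a, b, o1] ! i) ([z0, a, b, o1] ! j) \<longleftrightarrow> rl_le R4c2 i j"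
          by (simp add: all4 R4c2_def le_mk)
        show "\<forall>i<4. \<forall>j<4. [z0, a, b, o1] ! rl_mult R4c2 i j = ml ([z0, a, b, o1] ! i) ([z0, a, b, o1] ! j)"
          by (simp add: all4 R4c2_def mk_def f1 f2 f3 f4)
      qed
      then show ?thesis by simp
    next
      case i2: False
      have f1: "ml b a = z0" by (rule Lstep[OF fin, of z0 o1]) (auto simp: Cd neq i1 i2)
      have f2: "ml a b = z0" using f1 ml_comm[of b a] by simp
      have f3: "ml b b = a" by (rule Lstep[OF fin, of z0 o1]) (auto simp: Cd neq i1 i2)
      have f4: "ml a a = z0" using ml_assoc[of b b a] f3 f1  by simp
      have "rl_isomorphic L R4c"
      proof (rule rep_iso[OF BL_rl[OF BL_R4c] car_R4c, of "[z0, a, b, o1]"])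
        show "distinct [z0, a, b, o1]" by (rule dist)
        show "length [z0, a, b, o1] = 4" by simp
        show "set [z0, a, b, o1] = C" using Cd by auto
        show "\<forall>i<4. \<forall>j<4. le ([z0, a, b, o1] ! i) ([z0, a, b, o1] ! j) \<longleftrightarrow> rl_le R4c i j"
          by (simp add: all4 R4c_def le_mk)
        show "\<forall>i<4. \<forall>j<4. [z0, a, b, o1] ! rl_mult R4c i j = ml ([z0, a, b, o1] ! i) ([z0, a, b, o1] ! j)"
          by (simp add: all4 R4c_def mk_def f1 f2 f3 f4)
      qed
      then show ?thesis by simp
    qed
  qed
qed

lemma chain5:
  assumes fin: "finite C" and Cd: "C = {z0, a, b, c, o1}" and dist: "distinct [z0, a, b, c, o1]"
    and ord: "le a b" "le b c"
  shows "rl_isomorphic L R5c \<or> rl_isomorphic L R5c1 \<or> rl_isomorphic L R5c2 \<or> rl_isomorphic L R5c3 \<or> rl_isomorphic L R5c12 \<or> rl_isomorphic L R5c13 \<or> rl_isomorphic L R5c23 \<or> rl_isomorphic L R5c123"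
proof -
  have mem[simp]: "a \<in> C" "b \<in> C" "c \<in> C" using Cd by auto
  have lef0: "le z0 a" "le z0 b" "le z0 c" "le z0 o1" by simp_all
  have lef1: "le a o1" "le b o1" "le c o1" by simp_all
  have le_1_3: "le a c" using le_trans[of a b c] ord(1) ord(2) by simp
  note lef[simp] = lef0 lef1 ord le_1_3
  have nlef[simp]: "\<not> le a z0" "\<not> le b z0" "\<not> le b a" "\<not> le c z0" "\<not> le c a" "\<not> le c b" "\<not> le o1 z0" "\<not> le o1 a" "\<not> le o1 b" "\<not> le o1 c"
    using dist lef le_antisym mem by (auto simp del: lef)
  have neq: "z0 \<noteq> a" "z0 \<noteq> b" "z0 \<noteq> c" "z0 \<noteq> o1" "a \<noteq> z0" "a \<noteq> b" "a \<noteq> c" "a \<noteq> o1" "b \<noteq> z0" "b \<noteq> a" "b \<noteq> c" "b \<noteq> o1" "c \<noteq> z0" "c \<noteq> a" "c \<noteq> b" "c \<noteq> o1" "o1 \<noteq> z0" "o1 \<noteq> a" "o1 \<noteq> b" "o1 \<noteq> c" using dist by auto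
  have chain: "\<And>u v. u \<in> C \<Longrightarrow> v \<in> C \<Longrightarrow> le u v \<or> le v u" using Cd by auto
  show ?thesis
  proof (cases "ml a a = a")
    case i1: True
    show ?thesis
    proof (cases "ml b b = b")
      case i2: True
      show ?thesis
      proof (cases "ml c c = c")
        case i3: True
        have f1: "ml a a = a" by (rule ordinal[of a]) (simp_all add: i1 i2 i3)
        have f2: "ml a b = a" by (rule ordinal[of a]) (simp_all add: i1 i2 i3)
        have f3: "ml b a = a" using f2 ml_comm[of a b] by simp
        have f4: "ml a c = a" by (rule ordinal[of a]) (simp_all add: i1 i2 i3)
        have f5: "ml c a = a" using f4 ml_comm[of a c] by simp
        have f6: "ml b b = b" by (rule ordinal[of b]) (simp_all add: i1 i2 i3)
        have f7: "ml b c = b" by (rule ordinal[of b]) (simp_all add: i1 i2 i3)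
        have f8: "ml c b = b" using f7 ml_comm[of b c] by simp
        have f9: "ml c c = c" by (rule ordinal[of c]) (simp_all add: i1 i2 i3)
        have "rl_isomorphic L R5c123"
        proof (rule rep_iso[OF BL_rl[OF BL_R5c123] car_R5c123, of "[z0, a, b, c, o1]"])
          show "distinct [z0, a, b, c, o1]" by (rule dist)
          show "length [z0, a, b, c, o1] = 5" by simp
          show "set [z0, a, b, c, o1] = C" using Cd by auto
          show "\<forall>i<5. \<forall>j<5. le ([z0, a, b, c, o1] ! i) ([z0, a, b, c, o1] ! j) \<longleftrightarrow> rl_le R5c123 i j"
            by (simp add: all5 R5c123_def le_mk)
          show "\<forall>i<5. \<forall>j<5. [z0, a, b, c, o1] ! rl_mult R5c123 i j = ml ([z0, a, b, c, o1] ! i) ([z0, a, b, c, o1] ! j)"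
            by (simp add: all5 R5c123_def mk_def f1 f2 f3 f4 f5 f6 f7 f8 f9)
        qed
        then show ?thesis by simp
      next
        case i3: False
        have f1: "ml a a = a" by (rule ordinal[of a]) (simp_all add: i1 i2 i3)
        have f2: "ml a b = a" by (rule ordinal[of a]) (simp_all add: i1 i2 i3)
        have f3: "ml b a = a" using f2 ml_comm[of a b] by simp
        have f4: "ml a c = a" by (rule ordinal[of a]) (simp_all add: i1 i2 i3)
        have f5: "ml c a = a" using f4 ml_comm[of a c] by simp
        have f6: "ml b b = b" by (rule ordinal[of b]) (simp_all add: i1 i2 i3)
        have f7: "ml b c = b" by (rule ordinal[of b]) (simp_all add: i1 i2 i3)
        have f8: "ml c b = b" using f7 ml_comm[of b c] by simp
        have f9: "ml c c = b" by (rule Lstep[OF fin, of b o1]) (auto simp: Cd neq i1 i2 i3)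
        have "rl_isomorphic L R5c12"
        proof (rule rep_iso[OF BL_rl[OF BL_R5c12] car_R5c12, of "[z0, a, b, c, o1]"])
          show "distinct [z0, a, b, c, o1]" by (rule dist)
          show "length [z0, a, b, c, o1] = 5" by simp
          show "set [z0, a, b, c, o1] = C" using Cd by auto
          show "\<forall>i<5. \<forall>j<5. le ([z0, a, b, c, o1] ! i) ([z0, a, b, c, o1] ! j) \<longleftrightarrow> rl_le R5c12 i j"
            by (simp add: all5 R5c12_def le_mk)
          show "\<forall>i<5. \<forall>j<5. [z0, a, b, c, o1] ! rl_mult R5c12 i j = ml ([z0, a, b, c, o1] ! i) ([z0, a, b, c, o1] ! j)"
            by (simp add: all5 R5c12_def mk_def f1 f2 f3 f4 f5 f6 f7 f8 f9)
        qed
        then show ?thesis by simp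
      qed
    next
      case i2: False
      show ?thesis
      proof (cases "ml c c = c")
        case i3: True
        have f1: "ml a a = a" by (rule ordinal[of a]) (simp_all add: i1 i2 i3)
        have f2: "ml a b = a" by (rule ordinal[of a]) (simp_all add: i1 i2 i3)
        have f3: "ml b a = a" using f2 ml_comm[of a b] by simp
        have f4: "ml a c = a" by (rule ordinal[of a]) (simp_all add: i1 i2 i3)
        have f5: "ml c a = a" using f4 ml_comm[of a c] by simp
        have f6: "ml b c = b" by (rule ordinal[of c]) (simp_all add: i1 i2 i3)
        have f7: "ml c b = b" using f6 ml_comm[of b c] by simp
        have f8: "ml c c = c" by (rule ordinal[of c]) (simp_all add: i1 i2 i3)
        have f9: "ml b b = a" by (rule Lstep[OF fin, of a c]) (auto simp: Cd neq i1 i2 i3)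
        have "rl_isomorphic L R5c13"
        proof (rule rep_iso[OF BL_rl[OF BL_R5c13] car_R5c13, of "[z0, a, b, c, o1]"])
          show "distinct [z0, a, b, c, o1]" by (rule dist)
          show "length [z0, a, b, c, o1] = 5" by simp
          show "set [z0, a, b, c, o1] = C" using Cd by auto
          show "\<forall>i<5. \<forall>j<5. le ([z0, a, b, c, o1] ! i) ([z0, a, b, c, o1] ! j) \<longleftrightarrow> rl_le R5c13 i j"
            by (simp add: all5 R5c13_def le_mk)
          show "\<forall>i<5. \<forall>j<5. [z0, a, b, c, o1] ! rl_mult R5c13 i j = ml ([z0, a, b, c, o1] ! i) ([z0, a, b, c, o1] ! j)"
            by (simp add: all5 R5c13_def mk_def f1 f2 f3 f4 f5 f6 f7 f8 f9)
        qed
        then show ?thesis by simp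
      next
        case i3: False
        have f1: "ml a a = a" by (rule ordinal[of a]) (simp_all add: i1 i2 i3)
        have f2: "ml a b = a" by (rule ordinal[of a]) (simp_all add: i1 i2 i3)
        have f3: "ml b a = a" using f2 ml_comm[of a b] by simp
        have f4: "ml a c = a" by (rule ordinal[of a]) (simp_all add: i1 i2 i3)
        have f5: "ml c a = a" using f4 ml_comm[of a c] by simp
        have f6: "ml c b = a" by (rule Lstep[OF fin, of a o1]) (auto simp: Cd neq i1 i2 i3)
        have f7: "ml b c = a" using f6 ml_comm[of c b] by simp
        have f8: "ml c c = b" by (rule Lstep[OF fin, of a o1]) (auto simp: Cd neq i1 i2 i3)
        have f9: "ml b b = a" using ml_assoc[of c c b] f8 f6 f5 by simp
        have "rl_isomorphic L R5c1"
        proof (rule rep_iso[OF BL_rl[OF BL_R5c1] car_R5c1, of "[z0, a, b, c, o1]"])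
          show "distinct [z0, a, b, c, o1]" by (rule dist)
          show "length [z0, a, b, c, o1] = 5" by simp
          show "set [z0, a, b, c, o1] = C" using Cd by auto
          show "\<forall>i<5. \<forall>j<5. le ([z0, a, b, c, o1] ! i) ([z0, a, b, c, o1] ! j) \<longleftrightarrow> rl_le R5c1 i j"
            by (simp add: all5 R5c1_def le_mk)
          show "\<forall>i<5. \<forall>j<5. [z0, a, b, c, o1] ! rl_mult R5c1 i j = ml ([z0, a, b, c, o1] ! i) ([z0, a, b, c, o1] ! j)"
            by (simp add: all5 R5c1_def mk_def f1 f2 f3 f4 f5 f6 f7 f8 f9)
        qed
        then show ?thesis by simp
      qed
    qed
  next
    case i1: False
    show ?thesis
    proof (cases "ml b b = b")
      case i2: True
      show ?thesis
      proof (cases "ml c c = c")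
        case i3: True
        have f1: "ml a b = a" by (rule ordinal[of b]) (simp_all add: i1 i2 i3)
        have f2: "ml b a = a" using f1 ml_comm[of a b] by simp
        have f3: "ml a c = a" by (rule ordinal[of b]) (simp_all add: i1 i2 i3)
        have f4: "ml c a = a" using f3 ml_comm[of a c] by simp
        have f5: "ml b b = b" by (rule ordinal[of b]) (simp_all add: i1 i2 i3)
        have f6: "ml b c = b" by (rule ordinal[of b]) (simp_all add: i1 i2 i3)
        have f7: "ml c b = b" using f6 ml_comm[of b c] by simp
        have f8: "ml c c = c" by (rule ordinal[of c]) (simp_all add: i1 i2 i3)
        have f9: "ml a a = z0" by (rule Lstep[OF fin, of z0 b]) (auto simp: Cd neq i1 i2 i3)
        have "rl_isomorphic L R5c23"
        proof (rule rep_iso[OF BL_rl[OF BL_R5c23] car_R5c23, of "[z0, a, b, c, o1]"])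
          show "distinct [z0, a, b, c, o1]" by (rule dist)
          show "length [z0, a, b, c, o1] = 5" by simp
          show "set [z0, a, b, c, o1] = C" using Cd by auto
          show "\<forall>i<5. \<forall>j<5. le ([z0, a, b, c, o1] ! i) ([z0, a, b, c, o1] ! j) \<longleftrightarrow> rl_le R5c23 i j"
            by (simp add: all5 R5c23_def le_mk)
          show "\<forall>i<5. \<forall>j<5. [z0, a, b, c, o1] ! rl_mult R5c23 i j = ml ([z0, a, b, c, o1] ! i) ([z0, a, b, c, o1] ! j)"
            by (simp add: all5 R5c23_def mk_def f1 f2 f3 f4 f5 f6 f7 f8 f9)
        qed
        then show ?thesis by simp
      next
        case i3: False
        have f1: "ml a b = a" by (rule ordinal[of b]) (simp_all add: i1 i2 i3)
        have f2: "ml b a = a" using f1 ml_comm[of a b] by simp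
        have f3: "ml a c = a" by (rule ordinal[of b]) (simp_all add: i1 i2 i3)
        have f4: "ml c a = a" using f3 ml_comm[of a c] by simp
        have f5: "ml b b = b" by (rule ordinal[of b]) (simp_all add: i1 i2 i3)
        have f6: "ml b c = b" by (rule ordinal[of b]) (simp_all add: i1 i2 i3)
        have f7: "ml c b = b" using f6 ml_comm[of b c] by simp
        have f8: "ml a a = z0" by (rule Lstep[OF fin, of z0 b]) (auto simp: Cd neq i1 i2 i3)
        have f9: "ml c c = b" by (rule Lstep[OF fin, of b o1]) (auto simp: Cd neq i1 i2 i3)
        have "rl_isomorphic L R5c2"
        proof (rule rep_iso[OF BL_rl[OF BL_R5c2] car_R5c2, of "[z0, a, b, c, o1]"])
          show "distinct [z0, a, b, c, o1]" by (rule dist)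
          show "length [z0, a, b, c, o1] = 5" by simp
          show "set [z0, a, b, c, o1] = C" using Cd by auto
          show "\<forall>i<5. \<forall>j<5. le ([z0, a, b, c, o1] ! i) ([z0, a, b, c, o1] ! j) \<longleftrightarrow> rl_le R5c2 i j"
            by (simp add: all5 R5c2_def le_mk)
          show "\<forall>i<5. \<forall>j<5. [z0, a, b, c, o1] ! rl_mult R5c2 i j = ml ([z0, a, b, c, o1] ! i) ([z0, a, b, c, o1] ! j)"
            by (simp add: all5 R5c2_def mk_def f1 f2 f3 f4 f5 f6 f7 f8 f9)
        qed
        then show ?thesis by simp
      qed
    next
      case i2: False
      show ?thesis
      proof (cases "ml c c = c")
        case i3: True
        have f1: "ml a c = a" by (rule ordinal[of c]) (simp_all add: i1 i2 i3)
        have f2: "ml c a = a" using f1 ml_comm[of a c] by simp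
        have f3: "ml b c = b" by (rule ordinal[of c]) (simp_all add: i1 i2 i3)
        have f4: "ml c b = b" using f3 ml_comm[of b c] by simp
        have f5: "ml c c = c" by (rule ordinal[of c]) (simp_all add: i1 i2 i3)
        have f6: "ml b a = z0" by (rule Lstep[OF fin, of z0 c]) (auto simp: Cd neq i1 i2 i3)
        have f7: "ml a b = z0" using f6 ml_comm[of b a] by simp
        have f8: "ml b b = a" by (rule Lstep[OF fin, of z0 c]) (auto simp: Cd neq i1 i2 i3)
        have f9: "ml a a = z0" using ml_assoc[of b b a] f8 f6  by simp
        have "rl_isomorphic L R5c3"
        proof (rule rep_iso[OF BL_rl[OF BL_R5c3] car_R5c3, of "[z0, a, b, c, o1]"])
          show "distinct [z0, a, b, c, o1]" by (rule dist)
          show "length [z0, a, b, c, o1] = 5" by simp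
          show "set [z0, a, b, c, o1] = C" using Cd by auto
          show "\<forall>i<5. \<forall>j<5. le ([z0, a, b, c, o1] ! i) ([z0, a, b, c, o1] ! j) \<longleftrightarrow> rl_le R5c3 i j"
            by (simp add: all5 R5c3_def le_mk)
          show "\<forall>i<5. \<forall>j<5. [z0, a, b, c, o1] ! rl_mult R5c3 i j = ml ([z0, a, b, c, o1] ! i) ([z0, a, b, c, o1] ! j)"
            by (simp add: all5 R5c3_def mk_def f1 f2 f3 f4 f5 f6 f7 f8 f9)
        qed
        then show ?thesis by simp
      next
        case i3: False
        have f1: "ml c a = z0" by (rule Lstep[OF fin, of z0 o1]) (auto simp: Cd neq i1 i2 i3)
        have f2: "ml a c = z0" using f1 ml_comm[of c a] by simp
        have f3: "ml c b = a" by (rule Lstep[OF fin, of z0 o1]) (auto simp: Cd neq i1 i2 i3)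
        have f4: "ml b c = a" using f3 ml_comm[of c b] by simp
        have f5: "ml c c = b" by (rule Lstep[OF fin, of z0 o1]) (auto simp: Cd neq i1 i2 i3)
        have f6: "ml b b = z0" using ml_assoc[of c c b] f5 f3 f1 by simp
        have f7: "ml a b = z0" using ml_assoc[of c b b] f3 f6  by simp
        have f8: "ml b a = z0" using f7 ml_comm[of a b] by simp
        have f9: "ml a a = z0" using ml_assoc[of c b a] f3 f8  by simp
        have "rl_isomorphic L R5c"
        proof (rule rep_iso[OF BL_rl[OF BL_R5c] car_R5c, of "[z0, a, b, c, o1]"])
          show "distinct [z0, a, b, c, o1]" by (rule dist)
          show "length [z0, a, b, c, o1] = 5" by simp
          show "set [z0, a, b, c, o1] = C" using Cd by auto
          show "\<forall>i<5. \<forall>j<5. le ([z0, a, b, c, o1] ! i) ([z0, a, b, c, o1] ! j) \<longleftrightarrow> rl_le R5c i j"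
            by (simp add: all5 R5c_def le_mk)
          show "\<forall>i<5. \<forall>j<5. [z0, a, b, c, o1] ! rl_mult R5c i j = ml ([z0, a, b, c, o1] ! i) ([z0, a, b, c, o1] ! j)"
            by (simp add: all5 R5c_def mk_def f1 f2 f3 f4 f5 f6 f7 f8 f9)
        qed
        then show ?thesis by simp
      qed
    qed
  qed
qed

end

context bl
begin

lemma nle: "x \<in> C \<Longrightarrow> y \<in> C \<Longrightarrow> le y x \<Longrightarrow> x \<noteq> y \<Longrightarrow> \<not> le x y"
  using le_antisym by blast

lemma b4:
  assumes Cd: "C = {z0, a, b, o1}" and dist: "distinct [z0, a, b, o1]"
    and nab: "\<not> le a b" "\<not> le b a"
  shows "rl_isomorphic L R4b"
proof -
  have mem[simp]: "a \<in> C" "b \<in> C" using Cd by auto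
  have neq: "z0 \<noteq> a" "z0 \<noteq> b" "z0 \<noteq> o1" "a \<noteq> b" "a \<noteq> o1" "b \<noteq> o1" using dist by auto
  have lef[simp]: "le z0 a" "le z0 b" "le a o1" "le b o1" by simp_all
  have nlef[simp]: "\<not> le a z0" "\<not> le b z0" "\<not> le o1 z0" "\<not> le o1 a" "\<not> le o1 b" "\<not> le a b" "\<not> le b a"
    using nle[of a z0] nle[of b z0] nle[of o1 z0] nle[of o1 a] nle[of o1 b] neq nab by auto
  have inC: "\<And>x. x \<in> C \<Longrightarrow> x = z0 \<or> x = a \<or> x = b \<or> x = o1" using Cd by auto
  have rfl: "le a a" "le b b" "le z0 z0" "le o1 o1" by simp_all
  have iab: "im a b = b"
  proof -
    have "im a b \<in> C" "le b (im a b)" "im a b \<noteq> o1" using im_ge[of a b] im_one[of a b] by simp_all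
    then show ?thesis using inC[of "im a b"] nlef lef rfl by (smt (verit))
  qed
  have iba: "im b a = a"
  proof -
    have "im b a \<in> C" "le a (im b a)" "im b a \<noteq> o1" using im_ge[of b a] im_one[of b a] by simp_all
    then show ?thesis using inC[of "im b a"] nlef lef rfl by (smt (verit))
  qed
  have maa: "ml a a = a"
  proof -
    have "\<not> le (ml a a) b" using resid[of a b a] iab by simp
    moreover have "le (ml a a) a" "ml a a \<in> C" using ml_le1[of a a] by simp_all
    ultimately show ?thesis using inC[of "ml a a"] nlef lef rfl by (smt (verit))
  qed
  have mbb: "ml b b = b"
  proof -
    have "\<not> le (ml b b) a" using resid[of b a b] iba by simp
    moreover have "le (ml b b) b" "ml b b \<in> C" using ml_le1[of b b] by simp_all
    ultimately show ?thesis using inC[of "ml b b"] nlef lef rfl by (smt (verit))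
  qed
  have mab: "ml a b = z0"
  proof -
    have "le (ml a b) a" "le (ml a b) b" "ml a b \<in> C" using ml_le1[of a b] ml_le2[of a b] by simp_all
    then show ?thesis using inC[of "ml a b"] nlef lef rfl by (smt (verit))
  qed
  have mba: "ml b a = z0" using mab ml_comm[of a b] by simp
  let ?xs = "[z0, a, b, o1]"
  show "rl_isomorphic L R4b"
  proof (rule rep_iso[OF BL_rl[OF BL_R4b] car_R4b, of ?xs])
    show "distinct ?xs" by (rule dist)
    show "length ?xs = 4" by simp
    show "set ?xs = C" using Cd by auto
    show "\<forall>i<4. \<forall>j<4. le (?xs ! i) (?xs ! j) \<longleftrightarrow> rl_le R4b i j"
      by (simp add: all4 R4b_def le_mk)
    show "\<forall>i<4. \<forall>j<4. ?xs ! rl_mult R4b i j = ml (?xs ! i) (?xs ! j)"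
      by (simp add: all4 R4b_def mk_def maa mbb mab mba)
  qed
qed

lemma v5:
  assumes Cd: "C = {z0, a, b, c, o1}" and dist: "distinct [z0, a, b, c, o1]"
    and nab: "\<not> le a b" "\<not> le b a" and ca: "le c a" and cb: "le c b"
  shows "rl_isomorphic L R5v"
proof -
  have mem[simp]: "a \<in> C" "b \<in> C" "c \<in> C" using Cd by auto
  have neq: "z0 \<noteq> a" "z0 \<noteq> b" "z0 \<noteq> c" "z0 \<noteq> o1" "a \<noteq> b" "a \<noteq> c" "a \<noteq> o1"
    "b \<noteq> c" "b \<noteq> o1" "c \<noteq> o1" using dist by auto
  have lef[simp]: "le z0 a" "le z0 b" "le z0 c" "le a o1" "le b o1" "le c o1" "le c a" "le c b"
    using ca cb by simp_all
  have nlef[simp]: "\<not> le a z0" "\<not> le b z0" "\<not> le c z0" "\<not> le o1 z0" "\<not> le o1 a" "\<not> le o1 b"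
     "\<not> le o1 c" "\<not> le a b" "\<not> le b a" "\<not> le a c" "\<not> le b c"
    using nle[of a z0] nle[of b z0] nle[of c z0] nle[of o1 z0] nle[of o1 a] nle[of o1 b] nle[of o1 c]
      nle[of a c] nle[of b c] neq nab ca cb by auto
  have inC: "\<And>x. x \<in> C \<Longrightarrow> x = z0 \<or> x = a \<or> x = b \<or> x = c \<or> x = o1" using Cd by auto
  have rfl: "le a a" "le b b" "le c c" "le z0 z0" "le o1 o1" by simp_all
  have mtab: "mt a b = c"
  proof -
    have "le (mt a b) a" "le (mt a b) b" "mt a b \<in> C" "le c (mt a b)"
      using mt_le1[of a b] mt_le2[of a b] mt_glb[of a b c] by simp_all
    then show ?thesis using inC[of "mt a b"] nlef lef rfl by (smt (verit))
  qed
  have iab: "im a b = b"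
  proof -
    have "im a b \<in> C" "le b (im a b)" "im a b \<noteq> o1" using im_ge[of a b] im_one[of a b] by simp_all
    then show ?thesis using inC[of "im a b"] nlef lef rfl by (smt (verit))
  qed
  have iba: "im b a = a"
  proof -
    have "im b a \<in> C" "le a (im b a)" "im b a \<noteq> o1" using im_ge[of b a] im_one[of b a] by simp_all
    then show ?thesis using inC[of "im b a"] nlef lef rfl by (smt (verit))
  qed
  have mab: "ml a b = c" using divis[of a b] iab mtab by simp
  have mba: "ml b a = c" using mab ml_comm[of a b] by simp
  have iac: "im a c = b"
  proof -
    have "le b (im a c)" using resid[of a c b] mab by simp
    moreover have "im a c \<in> C" "im a c \<noteq> o1" using im_one[of a c] by simp_all
    ultimately show ?thesis using inC[of "im a c"] nlef lef rfl by (smt (verit))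
  qed
  have ibc: "im b c = a"
  proof -
    have "le a (im b c)" using resid[of b c a] mba by simp
    moreover have "im b c \<in> C" "im b c \<noteq> o1" using im_one[of b c] by simp_all
    ultimately show ?thesis using inC[of "im b c"] nlef lef rfl by (smt (verit))
  qed
  have maa: "ml a a = a"
  proof -
    have "\<not> le (ml a a) c" using resid[of a c a] iac by simp
    moreover have "le (ml a a) a" "ml a a \<in> C" using ml_le1[of a a] by simp_all
    ultimately show ?thesis using inC[of "ml a a"] nlef lef rfl by (smt (verit))
  qed
  have mbb: "ml b b = b"
  proof -
    have "\<not> le (ml b b) c" using resid[of b c b] ibc by simp
    moreover have "le (ml b b) b" "ml b b \<in> C" using ml_le1[of b b] by simp_all
    ultimately show ?thesis using inC[of "ml b b"] nlef lef rfl by (smt (verit))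
  qed
  have mca: "ml c a = c" by (rule ordinal[of a]) (simp_all add: maa)
  have mcb: "ml c b = c" by (rule ordinal[of b]) (simp_all add: mbb)
  have mac: "ml a c = c" using mca ml_comm[of a c] by simp
  have mbc: "ml b c = c" using mcb ml_comm[of b c] by simp
  have mcc: "ml c c = c" using ml_assoc[of c a b] mab mca mcb by simp
  let ?xs = "[z0, c, a, b, o1]"
  show "rl_isomorphic L R5v"
  proof (rule rep_iso[OF BL_rl[OF BL_R5v] car_R5v, of ?xs])
    show "distinct ?xs" using dist by auto
    show "length ?xs = 5" by simp
    show "set ?xs = C" using Cd by auto
    show "\<forall>i<5. \<forall>j<5. le (?xs ! i) (?xs ! j) \<longleftrightarrow> rl_le R5v i j"
      by (simp add: all5 R5v_def le_mk)
    show "\<forall>i<5. \<forall>j<5. ?xs ! rl_mult R5v i j = ml (?xs ! i) (?xs ! j)"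
      by (simp add: all5 R5v_def mk_def maa mbb mab mba mca mcb mac mbc mcc)
  qed
qed

lemma lam5:
  assumes Cd: "C = {z0, a, b, c, o1}" and dist: "distinct [z0, a, b, c, o1]"
    and nab: "\<not> le a b" "\<not> le b a" and ac: "le a c" and bc: "le b c"
  shows False
proof -
  have mem[simp]: "a \<in> C" "b \<in> C" "c \<in> C" using Cd by auto
  have inC: "\<And>x. x \<in> C \<Longrightarrow> x = z0 \<or> x = a \<or> x = b \<or> x = c \<or> x = o1" using Cd by auto
  have rfl: "le a a" "le b b" "le c c" "le z0 z0" "le o1 o1" by simp_all
  have below: "\<And>x. x \<in> C \<Longrightarrow> x \<noteq> o1 \<Longrightarrow> le x c" using inC ac bc by fastforce
  have "le (im a b) c" using below[of "im a b"] im_one[of a b] nab by simp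
  moreover have "le (im b a) c" using below[of "im b a"] im_one[of b a] nab by simp
  ultimately have "le o1 c" using prelin[of a b] jn_lub[of "im a b" "im b a" c] by simp
  then show False using dist le_antisym[of c o1] by simp
qed

lemma m35:
  assumes Cd: "C = {z0, a, b, c, o1}" and dist: "distinct [z0, a, b, c, o1]"
    and nab: "\<not> le a b" "\<not> le b a" "\<not> le a c" "\<not> le c a" "\<not> le b c" "\<not> le c b"
  shows False
proof -
  have mem[simp]: "a \<in> C" "b \<in> C" "c \<in> C" using Cd by auto
  have neq: "z0 \<noteq> a" "z0 \<noteq> b" "z0 \<noteq> c" "z0 \<noteq> o1" "a \<noteq> o1" "b \<noteq> o1" "c \<noteq> o1" using dist by auto
  have nlef: "\<not> le o1 a" "\<not> le o1 b" "\<not> le o1 c" "\<not> le a z0" "\<not> le b z0" "\<not> le c z0"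
    using nle[of o1 a] nle[of o1 b] nle[of o1 c] nle[of a z0] nle[of b z0] nle[of c z0] neq by auto
  have inC: "\<And>x. x \<in> C \<Longrightarrow> x = z0 \<or> x = a \<or> x = b \<or> x = c \<or> x = o1" using Cd by auto
  have rfl: "le a a" "le b b" "le c c" "le z0 z0" "le o1 o1" by simp_all
  have "mt a c = z0"
  proof -
    have "le (mt a c) a" "le (mt a c) c" "mt a c \<in> C" using mt_le1[of a c] mt_le2[of a c] by simp_all
    then show ?thesis using inC[of "mt a c"] nab nlef rfl by (smt (verit))
  qed
  then have "le (ml a c) z0" using ml_le_mt[of a c] by simp
  then have "le (ml a c) b" using le_trans[of "ml a c" z0 b] by simp
  then have "le c (im a b)" using resid by simp
  moreover have "le b (im a b)" using im_ge by simp
  moreover have "im a b \<in> C" by simp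
  ultimately have "im a b = o1" using inC[of "im a b"] nab nlef rfl by (smt (verit))
  then show False using im_one nab by simp
qed

lemma n55:
  assumes Cd: "C = {z0, a, b, c, o1}" and dist: "distinct [z0, a, b, c, o1]"
    and ac: "le a c" and nab: "\<not> le a b" "\<not> le b a" "\<not> le b c" "\<not> le c b"
  shows False
proof -
  have mem[simp]: "a \<in> C" "b \<in> C" "c \<in> C" using Cd by auto
  have neq: "z0 \<noteq> a" "z0 \<noteq> b" "z0 \<noteq> c" "z0 \<noteq> o1" "a \<noteq> o1" "b \<noteq> o1" "c \<noteq> o1" "a \<noteq> c" using dist by auto
  have nlef: "\<not> le o1 a" "\<not> le o1 b" "\<not> le o1 c" "\<not> le c a" "\<not> le a z0" "\<not> le b z0" "\<not> le c z0"
    using nle[of o1 a] nle[of o1 b] nle[of o1 c] nle[of c a] nle[of a z0] nle[of b z0] nle[of c z0] neq ac by auto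
  have inC: "\<And>x. x \<in> C \<Longrightarrow> x = z0 \<or> x = a \<or> x = b \<or> x = c \<or> x = o1" using Cd by auto
  have rfl: "le a a" "le b b" "le c c" "le z0 z0" "le o1 o1" by simp_all
  have "mt c b = z0"
  proof -
    have "le (mt c b) c" "le (mt c b) b" "mt c b \<in> C" using mt_le1[of c b] mt_le2[of c b] by simp_all
    then show ?thesis using inC[of "mt c b"] nab nlef rfl by (smt (verit))
  qed
  then have "le (ml c b) z0" using ml_le_mt[of c b] by simp
  then have "le (ml c b) a" using le_trans[of "ml c b" z0 a] by simp
  then have "le b (im c a)" using resid by simp
  moreover have "le a (im c a)" using im_ge by simp
  moreover have "im c a \<in> C" by simp
  ultimately have "im c a = o1" using inC[of "im c a"] nab nlef rfl by (smt (verit))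
  then show False using im_one nlef by simp
qed

lemma noncomp5:
  assumes Cd: "C = {z0, a, b, c, o1}" and dist: "distinct [z0, a, b, c, o1]"
    and nab: "\<not> le a b" "\<not> le b a"
  shows "rl_isomorphic L R5v"
proof -
  have mem[simp]: "a \<in> C" "b \<in> C" "c \<in> C" using Cd by auto
  have C2: "C = {z0, b, a, c, o1}" "C = {z0, a, c, b, o1}" "C = {z0, c, a, b, o1}" "C = {z0, b, c, a, o1}"
    using Cd by auto
  have d2: "distinct [z0, b, a, c, o1]" "distinct [z0, a, c, b, o1]" "distinct [z0, c, a, b, o1]"
     "distinct [z0, b, c, a, o1]" using dist by auto
  show ?thesis
  proof (cases "le c a")
    case ca: True
    show ?thesis
    proof (cases "le c b")
      case True then show ?thesis using v5[OF Cd dist nab ca] by simp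
    next
      case ncb: False
      show ?thesis
      proof (cases "le b c")
        case True then have "le b a" using ca le_trans[of b c a] by simp
        then show ?thesis using nab by simp
      next
        case False
        have False by (rule n55[of c b a]) (use Cd dist ca ncb False nab in auto)
        then show ?thesis by simp
      qed
    qed
  next
    case nca: False
    show ?thesis
    proof (cases "le a c")
      case ac: True
      show ?thesis
      proof (cases "le b c")
        case True then show ?thesis using lam5[OF Cd dist nab ac] by simp
      next
        case nbc: False
        show ?thesis
        proof (cases "le c b")
          case True then have "le a b" using ac le_trans[of a c b] by simp
          then show ?thesis using nab by simp
        next
          case False
          have False by (rule n55[of a b c]) (use Cd dist ac nab nbc False in auto)
          then show ?thesis by simp
        qed
      qed
    next
      case nac: False
      show ?thesis
      proof (cases "le c b")
        case True
        have False by (rule n55[of c a b]) (use Cd dist True nab nca nac in auto)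
        then show ?thesis by simp
      next
        case ncb: False
        show ?thesis
        proof (cases "le b c")
          case True
          have False by (rule n55[of b a c]) (use Cd dist True nab nca nac ncb in auto)
          then show ?thesis by simp
        next
          case False
          then show ?thesis using m35[OF Cd dist] nab nca nac ncb by auto
        qed
      qed
    qed
  qed
qed

end

context bl
begin

lemma z0_ne_o1: "finite C \<Longrightarrow> card C \<ge> 2 \<Longrightarrow> z0 \<noteq> o1"
proof
  assume f: "finite C" "card C \<ge> 2" "z0 = o1"
  have h: "le o1 z0" using f(3) by simp
  have "\<And>x. x \<in> C \<Longrightarrow> x = z0" using le_01[OF h] by blast
  then have "C \<subseteq> {z0}" by blast
  then have "card C \<le> 1" using f card_mono[of "{z0}" C] by simp
  then show False using f by simp
qed

lemma mid_card: "finite C \<Longrightarrow> card C \<ge> 2 \<Longrightarrow> card (C - {z0, o1}) = card C - 2 \<and> C = {z0, o1} \<union> (C - {z0, o1})"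
proof -
  assume f: "finite C" "card C \<ge> 2"
  have "z0 \<noteq> o1" using z0_ne_o1 f by simp
  then have "card {z0, o1} = 2" by simp
  moreover have "{z0, o1} \<subseteq> C" by simp
  ultimately show ?thesis using f card_Diff_subset[of "{z0,o1}" C] by auto
qed

lemma class2: "finite C \<Longrightarrow> card C = 2 \<Longrightarrow> rl_isomorphic L R2c"
proof -
  assume f: "finite C" "card C = 2"
  have ne: "z0 \<noteq> o1" using z0_ne_o1 f by simp
  have "card (C - {z0, o1}) = 0" using mid_card f by simp
  then have "C - {z0, o1} = {}" using f by simp
  then have Cd: "C = {z0, o1}" using mid_card f by auto
  let ?xs = "[z0, o1]"
  show "rl_isomorphic L R2c"
  proof (rule rep_iso[OF BL_rl[OF BL_R2c] car_R2c, of ?xs])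
    show "distinct ?xs" using ne by simp
    show "length ?xs = 2" by simp
    show "set ?xs = C" using Cd by auto
    show "\<forall>i<2. \<forall>j<2. le (?xs ! i) (?xs ! j) \<longleftrightarrow> rl_le R2c i j"
      using ne le_antisym[of o1 z0] by (auto simp add: all2 R2c_def le_mk)
    show "\<forall>i<2. \<forall>j<2. ?xs ! rl_mult R2c i j = ml (?xs ! i) (?xs ! j)"
      by (simp add: all2 R2c_def mk_def)
  qed
qed

lemma class3: "finite C \<Longrightarrow> card C = 3 \<Longrightarrow> rl_isomorphic L R3c \<or> rl_isomorphic L R3c1"
proof -
  assume f: "finite C" "card C = 3"
  have ne: "z0 \<noteq> o1" using z0_ne_o1 f by simp
  have "card (C - {z0, o1}) = 1" using mid_card f by simp
  then obtain a where a: "C - {z0, o1} = {a}" using card_1_singleton_iff[of "C - {z0,o1}"] by auto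
  then have Cd: "C = {z0, a, o1}" using mid_card f by auto
  have d: "distinct [z0, a, o1]" using a ne by auto
  show ?thesis by (rule chain3[OF f(1) Cd d])
qed

lemma class4: "finite C \<Longrightarrow> card C = 4 \<Longrightarrow> rl_isomorphic L R4c \<or> rl_isomorphic L R4c1 \<or>
   rl_isomorphic L R4c2 \<or> rl_isomorphic L R4c12 \<or> rl_isomorphic L R4b"
proof -
  assume f: "finite C" "card C = 4"
  have ne: "z0 \<noteq> o1" using z0_ne_o1 f by simp
  have "card (C - {z0, o1}) = 2" using mid_card f by simp
  then obtain a b where ab: "C - {z0, o1} = {a, b}" "a \<noteq> b" using card_2_iff[of "C - {z0,o1}"] by auto
  then have Cd: "C = {z0, a, b, o1}" using mid_card f by auto
  have d: "distinct [z0, a, b, o1]" using ab ne by auto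
  have Cd': "C = {z0, b, a, o1}" using Cd by auto
  have d': "distinct [z0, b, a, o1]" using d by auto
  show ?thesis
  proof (cases "le a b")
    case True then show ?thesis using chain4[OF f(1) Cd d True] by blast
  next
    case nab: False
    show ?thesis
    proof (cases "le b a")
      case True then show ?thesis using chain4[OF f(1) Cd' d' True] by blast
    next
      case False then show ?thesis using b4[OF Cd d nab False] by blast
    qed
  qed
qed

lemma class5: "finite C \<Longrightarrow> card C = 5 \<Longrightarrow> rl_isomorphic L R5c \<or> rl_isomorphic L R5c1 \<or>
   rl_isomorphic L R5c2 \<or> rl_isomorphic L R5c3 \<or> rl_isomorphic L R5c12 \<or> rl_isomorphic L R5c13 \<or>
   rl_isomorphic L R5c23 \<or> rl_isomorphic L R5c123 \<or> rl_isomorphic L R5v"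
proof -
  assume f: "finite C" "card C = 5"
  have ne: "z0 \<noteq> o1" using z0_ne_o1 f by simp
  have "card (C - {z0, o1}) = 3" using mid_card f by simp
  then obtain a b c where abc: "C - {z0, o1} = {a, b, c}" "a \<noteq> b" "b \<noteq> c" "a \<noteq> c"
    using card_3_iff[of "C - {z0,o1}"] by auto
  then have Cd: "C = {z0, a, b, c, o1}" using mid_card f by auto
  have d: "distinct [z0, a, b, c, o1]" using abc ne by auto
  have mem: "a \<in> C" "b \<in> C" "c \<in> C" using Cd by auto
  let ?G = "rl_isomorphic L R5c \<or> rl_isomorphic L R5c1 \<or>
   rl_isomorphic L R5c2 \<or> rl_isomorphic L R5c3 \<or> rl_isomorphic L R5c12 \<or> rl_isomorphic L R5c13 \<or>
   rl_isomorphic L R5c23 \<or> rl_isomorphic L R5c123 \<or> rl_isomorphic L R5v"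
  have ch: "\<And>x y z. C = {z0, x, y, z, o1} \<Longrightarrow> distinct [z0, x, y, z, o1] \<Longrightarrow> le x y \<Longrightarrow> le y z \<Longrightarrow> ?G"
    using chain5[OF f(1)] by blast
  have nc: "\<And>x y z. C = {z0, x, y, z, o1} \<Longrightarrow> distinct [z0, x, y, z, o1] \<Longrightarrow> \<not> le x y \<Longrightarrow> \<not> le y x \<Longrightarrow> ?G"
    using noncomp5 by blast
  show ?G
  proof (cases "(le a b \<or> le b a) \<and> (le a c \<or> le c a) \<and> (le b c \<or> le c b)")
    case True
    then consider "le a b" "le b c" | "le a c" "le c b" | "le b a" "le a c" | "le b c" "le c a"
      | "le c a" "le a b" | "le c b" "le b a"
      using le_trans mem by blast
    then show ?G
    proof cases
      case 1 then show ?thesis using ch[of a b c] Cd d by auto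
    next
      case 2 then show ?thesis using ch[of a c b] Cd d by auto
    next
      case 3 then show ?thesis using ch[of b a c] Cd d by auto
    next
      case 4 then show ?thesis using ch[of b c a] Cd d by auto
    next
      case 5 then show ?thesis using ch[of c a b] Cd d by auto
    next
      case 6 then show ?thesis using ch[of c b a] Cd d by auto
    qed
  next
    case False
    then consider "\<not> le a b" "\<not> le b a" | "\<not> le a c" "\<not> le c a" | "\<not> le b c" "\<not> le c b" by blast
    then show ?G
    proof cases
      case 1 then show ?thesis using nc[of a b c] Cd d by auto
    next
      case 2 then show ?thesis using nc[of a c b] Cd d by auto
    next
      case 3 then show ?thesis using nc[of b c a] Cd d by auto
    qed
  qed
qed

end

lemma smono_ge:
  fixes h :: "nat \<Rightarrow> nat" and x n :: nat
  assumes sm: "\<And>x y. x < y \<Longrightarrow> y < n \<Longrightarrow> h x < h y"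
  shows "x < n \<Longrightarrow> x \<le> h x"
proof (induction x)
  case 0 then show ?case by simp
next
  case (Suc x)
  then have "x \<le> h x" by simp
  moreover have "h x < h (Suc x)" using sm Suc.prems by simp
  ultimately show ?case by simp
qed

lemma mono_bij_id:
  fixes f :: "nat \<Rightarrow> nat" and n x :: nat
  assumes bij: "bij_betw f {0..<n} {0..<n}"
    and mono: "\<And>x y. x < n \<Longrightarrow> y < n \<Longrightarrow> f (min x y) = min (f x) (f y)"
  shows "x < n \<Longrightarrow> f x = x"
proof -
  assume xn: "x < n"
  have inj: "inj_on f {0..<n}" using bij bij_betw_imp_inj_on by blast
  have fr: "\<And>x. x < n \<Longrightarrow> f x < n"
  proof -
    fix x :: nat assume "x < n"
    then have "f x \<in> {0..<n}" using bij_betw_apply[OF bij, of x] by simp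
    then show "f x < n" by simp
  qed
  have mo: "\<And>x y. x \<le> y \<Longrightarrow> y < n \<Longrightarrow> f x \<le> f y"
  proof -
    fix x y :: nat assume a: "x \<le> y" "y < n"
    then have "f x = min (f x) (f y)" using mono[of x y] by (simp add: min_absorb1)
    then show "f x \<le> f y" by (metis min.cobounded2)
  qed
  have sm: "\<And>x y. x < y \<Longrightarrow> y < n \<Longrightarrow> f x < f y"
  proof -
    fix x y assume a: "x < y" "y < n"
    have "f x \<le> f y" using mo a by simp
    moreover have "f x \<noteq> f y"
    proof
      assume "f x = f y"
      then have "x = y" using inj a unfolding inj_on_def by simp
      then show False using a by simp
    qed
    ultimately show "f x < f y" by simp
  qed
  have ge: "x \<le> f x" using smono_ge[of n f] sm xn by blast
  let ?g = "inv_into {0..<n} f"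
  have bg: "bij_betw ?g {0..<n} {0..<n}" using bij bij_betw_inv_into by blast
  have fg: "\<And>z. z < n \<Longrightarrow> f (?g z) = z" using bij by (simp add: bij_betw_inv_into_right)
  have gr: "\<And>z. z < n \<Longrightarrow> ?g z < n"
  proof -
    fix z :: nat assume "z < n"
    then have "?g z \<in> {0..<n}" using bij_betw_apply[OF bg, of z] by simp
    then show "?g z < n" by simp
  qed
  have gsm: "\<And>u v. u < v \<Longrightarrow> v < n \<Longrightarrow> ?g u < ?g v"
  proof (rule ccontr)
    fix u v assume a: "u < v" "v < n" "\<not> ?g u < ?g v"
    then have "?g v \<le> ?g u" by simp
    then have "f (?g v) \<le> f (?g u)" using mo gr a by simp
    then show False using fg a by simp
  qed
  have "f x \<le> ?g (f x)" using smono_ge[of n ?g] gsm fr xn by blast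
  moreover have "?g (f x) = x" using bij xn by (simp add: bij_betw_inv_into_left)
  ultimately show "f x = x" using ge by simp
qed

definition isch :: "nat \<Rightarrow> nat rlat \<Rightarrow> bool" where
  "isch n R \<longleftrightarrow> (\<forall>x<n. \<forall>y<n. rl_meet R x y = min x y)"
definition compa :: "nat \<Rightarrow> nat rlat \<Rightarrow> bool" where
  "compa n R \<longleftrightarrow> (\<forall>x<n. \<forall>y<n. rl_meet R x y = x \<or> rl_meet R x y = y)"
definition mteq :: "nat \<Rightarrow> nat rlat \<Rightarrow> nat rlat \<Rightarrow> bool" where
  "mteq n R R' \<longleftrightarrow> (\<forall>x<n. \<forall>y<n. rl_mult R x y = rl_mult R' x y)"

lemma iso_compa:
  assumes iso: "rl_iso f R R'" and c: "rl_car R = {0..<n}" "rl_car R' = {0..<n}" and cp: "compa n R"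
  shows "compa n R'"
proof -
  have bij: "bij_betw f {0..<n} {0..<n}" using iso c unfolding rl_iso_def by simp
  have m: "\<And>x y. x < n \<Longrightarrow> y < n \<Longrightarrow> f (rl_meet R x y) = rl_meet R' (f x) (f y)"
    using iso c unfolding rl_iso_def by simp
  show ?thesis unfolding compa_def
  proof (intro allI impI)
    fix u v assume uv: "u < n" "v < n"
    have su: "f ` {0..<n} = {0..<n}" using bij_betw_imp_surj_on[OF bij] .
    obtain x where x: "x < n" "u = f x" using uv su by (metis atLeastLessThan_iff imageE zero_le)
    obtain y where y: "y < n" "v = f y" using uv su by (metis atLeastLessThan_iff imageE zero_le)
    have "rl_meet R x y = x \<or> rl_meet R x y = y" using cp x y unfolding compa_def by simp
    then show "rl_meet R' u v = u \<or> rl_meet R' u v = v" using m[OF x(1) y(1)] x y by auto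
  qed
qed

lemma iso_mteq:
  assumes iso: "rl_iso f R R'" and c: "rl_car R = {0..<n}" "rl_car R' = {0..<n}"
    and ch: "isch n R" "isch n R'" and cl: "\<And>x y. x < n \<Longrightarrow> y < n \<Longrightarrow> rl_mult R x y < n"
  shows "mteq n R R'"
proof -
  have bij: "bij_betw f {0..<n} {0..<n}" using iso c unfolding rl_iso_def by simp
  have m: "\<And>x y. x < n \<Longrightarrow> y < n \<Longrightarrow> f (rl_meet R x y) = rl_meet R' (f x) (f y)"
    using iso c unfolding rl_iso_def by simp
  have fr: "\<And>x. x < n \<Longrightarrow> f x < n"
  proof -
    fix x :: nat assume "x < n"
    then have "f x \<in> {0..<n}" using bij_betw_apply[OF bij, of x] by simp
    then show "f x < n" by simp
  qed
  have mono: "\<And>x y. x < n \<Longrightarrow> y < n \<Longrightarrow> f (min x y) = min (f x) (f y)"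
    using m ch fr unfolding isch_def by simp
  have id: "\<And>x. x < n \<Longrightarrow> f x = x" using mono_bij_id[OF bij mono] by blast
  have t: "\<And>x y. x < n \<Longrightarrow> y < n \<Longrightarrow> f (rl_mult R x y) = rl_mult R' (f x) (f y)"
    using iso c unfolding rl_iso_def by simp
  show ?thesis unfolding mteq_def
  proof (intro allI impI)
    fix x y assume a: "x < n" "y < n"
    have "rl_mult R x y = f (rl_mult R x y)" using id cl a by simp
    also have "\<dots> = rl_mult R' x y" using t a id by simp
    finally show "rl_mult R x y = rl_mult R' x y" .
  qed
qed

lemma iso_invariants:
  assumes "rl_isomorphic R R'" "rl_car R = {0..<n}" "rl_car R' = {0..<n}"
    "\<And>x y. x < n \<Longrightarrow> y < n \<Longrightarrow> rl_mult R x y < n"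
  shows "(compa n R \<longrightarrow> compa n R') \<and> (isch n R \<and> isch n R' \<longrightarrow> mteq n R R')"
  using assms iso_compa iso_mteq unfolding rl_isomorphic_def by blast

lemma count_classes_reps:
  fixes r :: "nat \<Rightarrow> nat rlat"
  assumes cls: "\<And>A. P A \<Longrightarrow> rl_car A = {0..<n} \<Longrightarrow> \<exists>i<k. rl_isomorphic A (r i)"
    and rin: "\<And>i. i < k \<Longrightarrow> P (r i) \<and> rl_car (r i) = {0..<n}"
    and ni: "\<And>i j. i < k \<Longrightarrow> j < k \<Longrightarrow> rl_isomorphic (r i) (r j) \<Longrightarrow> i = j"
    and PRL: "\<And>A. P A \<Longrightarrow> residuated_lattice A"
  shows "count_classes P n = k"
proof -
  define S where "S = {A. P A \<and> rl_car A = {0..<n}}"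
  define R where "R = {(A, B). A \<in> S \<and> B \<in> S \<and> rl_isomorphic A B}"
  have cc: "count_classes P n = card (S // R)" unfolding count_classes_def S_def R_def Let_def by simp
  have rS: "\<And>i. i < k \<Longrightarrow> r i \<in> S" using rin S_def by simp
  have cls_eq: "\<And>A i. A \<in> S \<Longrightarrow> i < k \<Longrightarrow> rl_isomorphic A (r i) \<Longrightarrow> R `` {A} = R `` {r i}"
  proof -
    fix A i assume a: "A \<in> S" "i < k" "rl_isomorphic A (r i)"
    have rlA: "residuated_lattice A" using a PRL S_def by simp
    have rlr: "residuated_lattice (r i)" using a rin PRL by simp
    have "rl_isomorphic (r i) A" using rl_isomorphic_sym a rlA by blast
    then show "R `` {A} = R `` {r i}"
      unfolding R_def using a rS rl_isomorphic_trans by blast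
  qed
  have "S // R = (\<lambda>i. R `` {r i}) ` {..<k}"
  proof
    show "S // R \<subseteq> (\<lambda>i. R `` {r i}) ` {..<k}"
    proof
      fix X assume "X \<in> S // R"
      then obtain A where A: "A \<in> S" "X = R `` {A}" unfolding quotient_def by blast
      then obtain i where i: "i < k" "rl_isomorphic A (r i)" using cls S_def by blast
      then show "X \<in> (\<lambda>i. R `` {r i}) ` {..<k}" using cls_eq A by auto
    qed
  next
    show "(\<lambda>i. R `` {r i}) ` {..<k} \<subseteq> S // R"
      using rS unfolding quotient_def by blast
  qed
  moreover have "inj_on (\<lambda>i. R `` {r i}) {..<k}"
  proof (rule inj_onI)
    fix i j assume ij: "i \<in> {..<k}" "j \<in> {..<k}" "R `` {r i} = R `` {r j}"
    have "(r j, r j) \<in> R" unfolding R_def using rS ij rl_isomorphic_refl by auto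
    then have "(r i, r j) \<in> R" using ij by blast
    then show "i = j" using ni ij R_def by auto
  qed
  ultimately show ?thesis using cc card_image by fastforce
qed


lemma decomp_transport:
  fixes A :: "'a rlat"
  assumes BA: "BL_algebra A" and iso: "rl_isomorphic A R" and RR: "residuated_lattice R"
    and idm: "e \<in> rl_car R \<and> rl_mult R e e = e \<and> e \<noteq> rl_zero R \<and> e \<noteq> rl_one R \<and>
       (\<forall>x\<in>rl_car R. rl_le R x e \<or> rl_le R e x)"
  shows "\<exists>L1 L2 :: 'a rlat. BL_algebra L1 \<and> BL_algebra L2 \<and> rl_zero L1 \<noteq> rl_one L1 \<and>
     rl_zero L2 \<noteq> rl_one L2 \<and> ord_prod_ok L1 L2 \<and> rl_isomorphic A (ord_prod L1 L2)"
proof -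
  interpret bl A using BL_bl[OF BA] .
  obtain f where f: "rl_iso f A R" using iso unfolding rl_isomorphic_def by blast
  let ?g = "inv_into C f"
  have g: "rl_iso ?g R A" using rl_iso_sym[OF f RL] .
  have bij: "bij_betw ?g (rl_car R) C" using g unfolding rl_iso_def by blast
  have inj: "inj_on ?g (rl_car R)" using bij bij_betw_imp_inj_on by blast
  have gC: "\<And>u. u \<in> rl_car R \<Longrightarrow> ?g u \<in> C" using bij bij_betw_apply by fast
  have sur: "\<And>x. x \<in> C \<Longrightarrow> \<exists>u\<in>rl_car R. x = ?g u" using bij bij_betw_imp_surj_on by blast
  have gops: "\<And>u v. u \<in> rl_car R \<Longrightarrow> v \<in> rl_car R \<Longrightarrow> ?g (rl_meet R u v) = mt (?g u) (?g v) \<and>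
     ?g (rl_mult R u v) = ml (?g u) (?g v)" "?g (rl_zero R) = z0" "?g (rl_one R) = o1"
    using g unfolding rl_iso_def by blast+
  interpret R: rl R using RR by (simp add: rl_def)
  let ?e = "?g e"
  have eC: "?e \<in> C" using idm gC by blast
  have ee: "ml ?e ?e = ?e" using idm gops(1)[of e e] by simp
  have e0: "?e \<noteq> z0"
  proof
    assume "?e = z0"
    then have "?g e = ?g (rl_zero R)" using gops by simp
    then show False using inj idm inj_on_def by (metis R.z0C)
  qed
  have e1: "?e \<noteq> o1"
  proof
    assume "?e = o1"
    then have "?g e = ?g (rl_one R)" using gops by simp
    then show False using inj idm inj_on_def by (metis R.o1C)
  qed
  have cmp: "\<And>x. x \<in> C \<Longrightarrow> le x ?e \<or> le ?e x"
  proof -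
    fix x assume "x \<in> C"
    then obtain u where u: "u \<in> rl_car R" "x = ?g u" using sur by blast
    have "rl_le R u e \<or> rl_le R e u" using idm u by blast
    then show "le x ?e \<or> le ?e x"
      using u idm gops(1)[of u e] gops(1)[of e u] unfolding rl_le_def by auto
  qed
  show ?thesis using decomp[OF eC ee e0 e1 cmp] .
qed

lemma part1:
  fixes A :: "'a rlat"
  assumes BA: "BL_algebra A" and fin: "finite (rl_car A)" and c2: "2 \<le> card (rl_car A)"
    and c5: "card (rl_car A) \<le> 5" and nmv: "\<not> MV_algebra A"
  shows "\<exists>L1 L2 :: 'a rlat. BL_algebra L1 \<and> BL_algebra L2 \<and> rl_zero L1 \<noteq> rl_one L1 \<and>
     rl_zero L2 \<noteq> rl_one L2 \<and> ord_prod_ok L1 L2 \<and> rl_isomorphic A (ord_prod L1 L2)"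
proof -
  interpret bl A using BL_bl[OF BA] .
  have notmv: "\<And>R. rl_isomorphic A R \<Longrightarrow> MV_algebra R \<Longrightarrow> False"
  proof -
    fix R assume i: "rl_isomorphic A R" and m: "MV_algebra R"
    obtain f where f: "rl_iso f A R" using i unfolding rl_isomorphic_def by blast
    show False using MV_transport[OF f RL m] nmv by simp
  qed
  have dt: "\<And>R e. rl_isomorphic A R \<Longrightarrow> BL_algebra R \<Longrightarrow> e \<in> rl_car R \<and> rl_mult R e e = e \<and> e \<noteq> rl_zero R \<and> e \<noteq> rl_one R \<and>
       (\<forall>x\<in>rl_car R. rl_le R x e \<or> rl_le R e x) \<Longrightarrow> ?thesis"
  proof -
    fix R e assume a: "rl_isomorphic A R" "BL_algebra R" "e \<in> rl_car R \<and> rl_mult R e e = e \<and> e \<noteq> rl_zero R \<and> e \<noteq> rl_one R \<and>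
       (\<forall>x\<in>rl_car R. rl_le R x e \<or> rl_le R e x)"
    show "\<exists>L1 L2 :: 'a rlat. BL_algebra L1 \<and> BL_algebra L2 \<and> rl_zero L1 \<noteq> rl_one L1 \<and>
     rl_zero L2 \<noteq> rl_one L2 \<and> ord_prod_ok L1 L2 \<and> rl_isomorphic A (ord_prod L1 L2)"
      by (rule decomp_transport[OF BA a(1) BL_rl[OF a(2)] a(3)])
  qed
  have "card C = 2 \<or> card C = 3 \<or> card C = 4 \<or> card C = 5" using c2 c5 by auto
  then show ?thesis
  proof (elim disjE)
    assume "card C = 2"
    then have "rl_isomorphic A R2c" using class2 fin by blast
    then show ?thesis using notmv MV_R2c by blast
  next
    assume "card C = 3"
    then have "rl_isomorphic A R3c \<or> rl_isomorphic A R3c1" using class3 fin by blast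
    then show ?thesis
    proof (elim disjE)
      assume "rl_isomorphic A R3c" then show ?thesis using notmv MV_R3c by blast
    next
      assume "rl_isomorphic A R3c1" then show ?thesis by (rule dt[OF _ BL_R3c1 idem_R3c1])
    qed
  next
    assume "card C = 4"
    then have "rl_isomorphic A R4c \<or> rl_isomorphic A R4c1 \<or>
      rl_isomorphic A R4c2 \<or> rl_isomorphic A R4c12 \<or> rl_isomorphic A R4b" using class4 fin by blast
    then show ?thesis
    proof (elim disjE)
      assume "rl_isomorphic A R4c" then show ?thesis using notmv MV_R4c by blast
    next
      assume "rl_isomorphic A R4c1" then show ?thesis by (rule dt[OF _ BL_R4c1 idem_R4c1])
    next
      assume "rl_isomorphic A R4c2" then show ?thesis by (rule dt[OF _ BL_R4c2 idem_R4c2])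
    next
      assume "rl_isomorphic A R4c12" then show ?thesis by (rule dt[OF _ BL_R4c12 idem_R4c12])
    next
      assume "rl_isomorphic A R4b" then show ?thesis using notmv MV_R4b by blast
    qed
  next
    assume "card C = 5"
    then have "rl_isomorphic A R5c \<or> rl_isomorphic A R5c1 \<or>
      rl_isomorphic A R5c2 \<or> rl_isomorphic A R5c3 \<or> rl_isomorphic A R5c12 \<or> rl_isomorphic A R5c13 \<or>
      rl_isomorphic A R5c23 \<or> rl_isomorphic A R5c123 \<or> rl_isomorphic A R5v" using class5 fin by blast
    then show ?thesis
    proof (elim disjE)
      assume "rl_isomorphic A R5c" then show ?thesis using notmv MV_R5c by blast
    next
      assume "rl_isomorphic A R5c1" then show ?thesis by (rule dt[OF _ BL_R5c1 idem_R5c1])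
    next
      assume "rl_isomorphic A R5c2" then show ?thesis by (rule dt[OF _ BL_R5c2 idem_R5c2])
    next
      assume "rl_isomorphic A R5c3" then show ?thesis by (rule dt[OF _ BL_R5c3 idem_R5c3])
    next
      assume "rl_isomorphic A R5c12" then show ?thesis by (rule dt[OF _ BL_R5c12 idem_R5c12])
    next
      assume "rl_isomorphic A R5c13" then show ?thesis by (rule dt[OF _ BL_R5c13 idem_R5c13])
    next
      assume "rl_isomorphic A R5c23" then show ?thesis by (rule dt[OF _ BL_R5c23 idem_R5c23])
    next
      assume "rl_isomorphic A R5c123" then show ?thesis by (rule dt[OF _ BL_R5c123 idem_R5c123])
    next
      assume "rl_isomorphic A R5v" then show ?thesis by (rule dt[OF _ BL_R5v idem_R5v])
    qed
  qed
qed


lemma prod_pos: "\<forall>x\<in>#M. x > (0::nat) \<Longrightarrow> prod_mset M > 0"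
  by (induction M) auto

lemma prod_ge2:
  assumes "\<forall>x\<in>#M. x > (1::nat)" "M \<noteq> {#}"
  shows "prod_mset M \<ge> 2"
proof -
  obtain a where a: "a \<in># M" using assms(2) by (meson multiset_nonemptyE)
  then have M: "M = add_mset a (M - {#a#})" by simp
  have "\<forall>x\<in>#M - {#a#}. x > 0" using assms(1) by (meson in_diffD less_trans zero_less_one)
  then have "prod_mset (M - {#a#}) \<ge> 1" using prod_pos by (simp add: Suc_le_eq)
  moreover have "a \<ge> 2" using a assms(1) by fastforce
  ultimately have "a * prod_mset (M - {#a#}) \<ge> 2" by (metis le_trans mult_le_mono nat_mult_1_right)
  then show ?thesis by (subst M) simp
qed

lemma split2:
  assumes "size M \<ge> 2" "\<forall>x\<in>#M. x > (1::nat)"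
  shows "\<exists>a M'. M = add_mset a M' \<and> a \<ge> 2 \<and> M' \<noteq> {#} \<and> (\<forall>x\<in>#M'. x > 1) \<and> prod_mset M' \<ge> 2"
proof -
  have "M \<noteq> {#}" using assms by auto
  then obtain a where a: "a \<in># M" by (meson multiset_nonemptyE)
  let ?M' = "M - {#a#}"
  have M: "M = add_mset a ?M'" using a by simp
  have "size ?M' \<ge> 1" using assms(1) M by (metis Suc_1 Suc_le_mono size_add_mset)
  then have ne: "?M' \<noteq> {#}" by auto
  have al: "\<forall>x\<in>#?M'. x > 1" using assms(2) by (meson in_diffD)
  have "a \<ge> 2" using a assms(2) by fastforce
  then show ?thesis using M ne al prod_ge2[OF al ne] by blast
qed

lemma no_fact:
  assumes "M \<in> {M :: nat multiset. size M \<ge> 2 \<and> (\<forall>x\<in>#M. x > 1) \<and> prod_mset M = n}"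
  shows "\<exists>a b. a \<ge> 2 \<and> b \<ge> 2 \<and> a * b = n"
proof -
  from assms have s: "size M \<ge> 2" "\<forall>x\<in>#M. x > 1" "prod_mset M = n" by auto
  obtain a M' where "M = add_mset a M'" "a \<ge> 2" "prod_mset M' \<ge> 2" using split2[OF s(1,2)] by blast
  then show ?thesis using s(3) by auto
qed

lemma mp_prime:
  assumes "n = 2 \<or> n = 3 \<or> n = 5"
  shows "mult_partitions n = 0"
proof -
  have "\<not> (\<exists>a b. a \<ge> 2 \<and> b \<ge> 2 \<and> a * b = n)"
  proof
    assume "\<exists>a b. a \<ge> 2 \<and> b \<ge> 2 \<and> a * b = n"
    then obtain a b where ab: "a \<ge> 2" "b \<ge> 2" "a * b = n" by blast
    have "a * b \<ge> 2 * 2" using ab mult_le_mono by blast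
    moreover have "a \<le> 2"
    proof (rule ccontr)
      assume "\<not> a \<le> 2"
      then have "a * b \<ge> 3 * 2" using ab mult_le_mono by (metis not_less_eq_eq numeral_2_eq_2 numeral_3_eq_3)
      then show False using ab assms by auto
    qed
    ultimately have "a = 2" using ab by simp
    then have "2 * b = n" using ab by simp
    then show False using ab(2) assms by presburger
  qed
  then have E: "{M :: nat multiset. size M \<ge> 2 \<and> (\<forall>x\<in>#M. x > 1) \<and> prod_mset M = n} = {}"
    using no_fact by blast
  show ?thesis unfolding mult_partitions_def E by simp
qed

lemma mp4: "mult_partitions 4 = 1"
proof -
  have "{M :: nat multiset. size M \<ge> 2 \<and> (\<forall>x\<in>#M. x > 1) \<and> prod_mset M = 4} = {{#2, 2#}}"
  proof
    show "{M :: nat multiset. size M \<ge> 2 \<and> (\<forall>x\<in>#M. x > 1) \<and> prod_mset M = 4} \<subseteq> {{#2, 2#}}"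
    proof
      fix M :: "nat multiset" assume "M \<in> {M. size M \<ge> 2 \<and> (\<forall>x\<in>#M. x > 1) \<and> prod_mset M = 4}"
      then have s: "size M \<ge> 2" "\<forall>x\<in>#M. x > 1" "prod_mset M = 4" by auto
      obtain a M' where aM: "M = add_mset a M'" "a \<ge> 2" "M' \<noteq> {#}" "\<forall>x\<in>#M'. x > 1" "prod_mset M' \<ge> 2"
        using split2[OF s(1,2)] by blast
      have ap: "a * prod_mset M' = 4" using aM s(3) by simp
      have "a \<le> 2"
      proof (rule ccontr)
        assume "\<not> a \<le> 2"
        then have "a * prod_mset M' \<ge> 3 * 2" using aM mult_le_mono by (metis not_less_eq_eq numeral_2_eq_2 numeral_3_eq_3)
        then show False using ap by simp
      qed
      then have a2: "a = 2" using aM by simp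
      then have p2: "prod_mset M' = 2" using ap by simp
      obtain b where b: "b \<in># M'" using aM(3) by (meson multiset_nonemptyE)
      let ?M'' = "M' - {#b#}"
      have M': "M' = add_mset b ?M''" using b by simp
      have b2: "b \<ge> 2" using b aM(4) by fastforce
      have "b * prod_mset ?M'' = 2" using p2 M' by (metis prod_mset.add_mset)
      moreover have "?M'' = {#}"
      proof (rule ccontr)
        assume "?M'' \<noteq> {#}"
        moreover have "\<forall>x\<in>#?M''. x > 1" using aM(4) by (meson in_diffD)
        ultimately have "prod_mset ?M'' \<ge> 2" using prod_ge2 by blast
        then have "b * prod_mset ?M'' \<ge> 2 * 2" using b2 mult_le_mono by blast
        then show False using \<open>b * prod_mset ?M'' = 2\<close> by simp
      qed
      ultimately have "b = 2" by simp
      then show "M \<in> {{#2, 2#}}" using aM(1) a2 M' \<open>?M'' = {#}\<close> by simp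
    qed
  next
    show "{{#2, 2#}} \<subseteq> {M :: nat multiset. size M \<ge> 2 \<and> (\<forall>x\<in>#M. x > 1) \<and> prod_mset M = 4}"
      by simp
  qed
  then show ?thesis unfolding mult_partitions_def by (metis card_1_singleton_iff One_nat_def)
qed


lemma all_Suc2: "(\<forall>i<Suc k. P i) \<longleftrightarrow> (\<forall>i<k. P i) \<and> P k" by (auto simp: less_Suc_eq)
lemma ex_Suc2: "(\<exists>i<Suc k. P i) \<longleftrightarrow> (\<exists>i<k. P i) \<or> P k" by (auto simp: less_Suc_eq)
lemma all1m: "(\<forall>i<1::nat. P i) \<longleftrightarrow> P 0" by auto
lemma ex1m: "(\<exists>i<1::nat. P i) \<longleftrightarrow> P 0" by auto
lemma all2m: "(\<forall>i<2::nat. P i) \<longleftrightarrow> P 0 \<and> P 1" by (auto simp: numeral_eq_Suc less_Suc_eq)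
lemma ex2m: "(\<exists>i<2::nat. P i) \<longleftrightarrow> P 0 \<or> P 1" by (auto simp: numeral_eq_Suc less_Suc_eq)
lemma all3m: "(\<forall>i<3::nat. P i) \<longleftrightarrow> P 0 \<and> P 1 \<and> P 2"
  using all_Suc2[of 2 P] all2m[of P] by simp
lemma ex3m: "(\<exists>i<3::nat. P i) \<longleftrightarrow> P 0 \<or> P 1 \<or> P 2"
  using ex_Suc2[of 2 P] ex2m[of P] by simp
lemma all4m: "(\<forall>i<4::nat. P i) \<longleftrightarrow> P 0 \<and> P 1 \<and> P 2 \<and> P 3"
  using all_Suc2[of 3 P] all3m[of P] by simp
lemma ex4m: "(\<exists>i<4::nat. P i) \<longleftrightarrow> P 0 \<or> P 1 \<or> P 2 \<or> P 3"
  using ex_Suc2[of 3 P] ex3m[of P] by simp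
lemma all5m: "(\<forall>i<5::nat. P i) \<longleftrightarrow> P 0 \<and> P 1 \<and> P 2 \<and> P 3 \<and> P 4"
  using all_Suc2[of 4 P] all4m[of P] by simp
lemma ex5m: "(\<exists>i<5::nat. P i) \<longleftrightarrow> P 0 \<or> P 1 \<or> P 2 \<or> P 3 \<or> P 4"
  using ex_Suc2[of 4 P] ex4m[of P] by simp
lemma all6m: "(\<forall>i<6::nat. P i) \<longleftrightarrow> P 0 \<and> P 1 \<and> P 2 \<and> P 3 \<and> P 4 \<and> P 5"
  using all_Suc2[of 5 P] all5m[of P] by simp
lemma ex6m: "(\<exists>i<6::nat. P i) \<longleftrightarrow> P 0 \<or> P 1 \<or> P 2 \<or> P 3 \<or> P 4 \<or> P 5"
  using ex_Suc2[of 5 P] ex5m[of P] by simp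
lemma all7m: "(\<forall>i<7::nat. P i) \<longleftrightarrow> P 0 \<and> P 1 \<and> P 2 \<and> P 3 \<and> P 4 \<and> P 5 \<and> P 6"
  using all_Suc2[of 6 P] all6m[of P] by simp
lemma ex7m: "(\<exists>i<7::nat. P i) \<longleftrightarrow> P 0 \<or> P 1 \<or> P 2 \<or> P 3 \<or> P 4 \<or> P 5 \<or> P 6"
  using ex_Suc2[of 6 P] ex6m[of P] by simp
lemma all8m: "(\<forall>i<8::nat. P i) \<longleftrightarrow> P 0 \<and> P 1 \<and> P 2 \<and> P 3 \<and> P 4 \<and> P 5 \<and> P 6 \<and> P 7"
  using all_Suc2[of 7 P] all7m[of P] by simp
lemma ex8m: "(\<exists>i<8::nat. P i) \<longleftrightarrow> P 0 \<or> P 1 \<or> P 2 \<or> P 3 \<or> P 4 \<or> P 5 \<or> P 6 \<or> P 7"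
  using ex_Suc2[of 7 P] ex7m[of P] by simp
lemma all9m: "(\<forall>i<9::nat. P i) \<longleftrightarrow> P 0 \<and> P 1 \<and> P 2 \<and> P 3 \<and> P 4 \<and> P 5 \<and> P 6 \<and> P 7 \<and> P 8"
  using all_Suc2[of 8 P] all8m[of P] by simp
lemma ex9m: "(\<exists>i<9::nat. P i) \<longleftrightarrow> P 0 \<or> P 1 \<or> P 2 \<or> P 3 \<or> P 4 \<or> P 5 \<or> P 6 \<or> P 7 \<or> P 8"
  using ex_Suc2[of 8 P] ex8m[of P] by simp

lemma mult_lt: fixes R :: "nat rlat" shows "residuated_lattice R \<Longrightarrow> rl_car R = {0..<n} \<Longrightarrow> x < n \<Longrightarrow> y < n \<Longrightarrow> rl_mult R x y < n"
proof -
  assume a: "residuated_lattice R" "rl_car R = {0..<n}" "x < n" "y < n"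
  interpret rl R using a(1) by (simp add: rl_def)
  have xy: "x \<in> C" "y \<in> C" using a by auto
  have "rl_mult R x y \<in> C" using mlC[OF xy] .
  then show ?thesis using a by auto
qed

lemma iso_inv2:
  assumes "rl_isomorphic R R'" "residuated_lattice R" "residuated_lattice R'"
    "rl_car R = {0..<n}" "rl_car R' = {0..<n}"
  shows "compa n R = compa n R' \<and> (isch n R \<and> isch n R' \<longrightarrow> mteq n R R')"
proof -
  have "rl_isomorphic R' R" using rl_isomorphic_sym assms by blast
  then show ?thesis using iso_invariants[OF assms(1,4,5)] iso_invariants[of R' R n] assms mult_lt
    by blast
qed

lemma compa_R2c: "compa 2 R2c" by (simp add: compa_def all2m R2c_def mk_def)
lemma isch_R2c: "isch 2 R2c" by (simp add: isch_def all2m R2c_def mk_def)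
lemma ni_BL2: "i < 1 \<Longrightarrow> j < 1 \<Longrightarrow> rl_isomorphic ([R2c] ! i) ([R2c] ! j) \<Longrightarrow> i = j"
proof -
  assume a: "i < 1" "j < 1" "rl_isomorphic ([R2c] ! i) ([R2c] ! j)"
  have rl: "\<forall>i<1. residuated_lattice ([R2c] ! i) \<and> rl_car ([R2c] ! i) = {0..<2}"
    by (simp add: all1m BL_rl[OF BL_R2c] car_R2c)
  have inv: "compa 2 ([R2c] ! i) = compa 2 ([R2c] ! j) \<and> (isch 2 ([R2c] ! i) \<and> isch 2 ([R2c] ! j) \<longrightarrow> mteq 2 ([R2c] ! i) ([R2c] ! j))"
    using iso_inv2[OF a(3)] rl a(1,2) by blast
  have t: "\<forall>i<1. \<forall>j<1. compa 2 ([R2c] ! i) = compa 2 ([R2c] ! j) \<and> (isch 2 ([R2c] ! i) \<and> isch 2 ([R2c] ! j) \<longrightarrow> mteq 2 ([R2c] ! i) ([R2c] ! j)) \<longrightarrow> i = j"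
    by (simp add: all1m compa_R2c isch_R2c )
  then show "i = j" using inv a(1,2) by blast
qed
lemma num_BL2: "count_classes BL_algebra 2 = 1"
proof (rule count_classes_reps[where r = "\<lambda>i. [R2c] ! i"])
  fix A :: "nat rlat" assume A: "BL_algebra A" "rl_car A = {0..<2}"
  interpret bl A using BL_bl[OF A(1)] .
  have fin: "finite C" "card C = 2" using A by simp_all
  show "\<exists>i<1. rl_isomorphic A ([R2c] ! i)" using class2[OF fin] by (simp add: ex1m)
next
  fix i :: nat assume i: "i < 1"
  have "\<forall>i<1. BL_algebra ([R2c] ! i) \<and> rl_car ([R2c] ! i) = {0..<2}"
    by (simp add: all1m BL_R2c car_R2c)
  then show "BL_algebra ([R2c] ! i) \<and> rl_car ([R2c] ! i) = {0..<2}" using i by blast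
next
  fix i j assume "i < 1" "j < 1" "rl_isomorphic ([R2c] ! i) ([R2c] ! j)"
  then show "i = j" by (rule ni_BL2)
next
  fix A :: "nat rlat" assume "BL_algebra A" then show "residuated_lattice A" by (rule BL_rl)
qed
lemma ni_MV2: "i < 1 \<Longrightarrow> j < 1 \<Longrightarrow> rl_isomorphic ([R2c] ! i) ([R2c] ! j) \<Longrightarrow> i = j"
proof -
  assume a: "i < 1" "j < 1" "rl_isomorphic ([R2c] ! i) ([R2c] ! j)"
  have rl: "\<forall>i<1. residuated_lattice ([R2c] ! i) \<and> rl_car ([R2c] ! i) = {0..<2}"
    by (simp add: all1m BL_rl[OF BL_R2c] car_R2c)
  have inv: "compa 2 ([R2c] ! i) = compa 2 ([R2c] ! j) \<and> (isch 2 ([R2c] ! i) \<and> isch 2 ([R2c] ! j) \<longrightarrow> mteq 2 ([R2c] ! i) ([R2c] ! j))"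
    using iso_inv2[OF a(3)] rl a(1,2) by blast
  have t: "\<forall>i<1. \<forall>j<1. compa 2 ([R2c] ! i) = compa 2 ([R2c] ! j) \<and> (isch 2 ([R2c] ! i) \<and> isch 2 ([R2c] ! j) \<longrightarrow> mteq 2 ([R2c] ! i) ([R2c] ! j)) \<longrightarrow> i = j"
    by (simp add: all1m compa_R2c isch_R2c )
  then show "i = j" using inv a(1,2) by blast
qed
lemma num_MV2: "count_classes MV_algebra 2 = 1"
proof (rule count_classes_reps[where r = "\<lambda>i. [R2c] ! i"])
  fix A :: "nat rlat" assume A: "MV_algebra A" "rl_car A = {0..<2}"
  interpret bl A using BL_bl[OF MV_BL[OF A(1)]] .
  have fin: "finite C" "card C = 2" using A by simp_all
  have nm: "\<And>R. rl_isomorphic A R \<Longrightarrow> residuated_lattice R \<Longrightarrow> MV_algebra R"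
  proof -
    fix R assume "rl_isomorphic A R" "residuated_lattice R"
    then have "rl_isomorphic R A" using rl_isomorphic_sym RL by blast
    then show "MV_algebra R" using MV_transport A(1) \<open>residuated_lattice R\<close> unfolding rl_isomorphic_def by blast
  qed
  show "\<exists>i<1. rl_isomorphic A ([R2c] ! i)" using class2[OF fin]  by (auto simp add: ex1m)
next
  fix i :: nat assume i: "i < 1"
  have "\<forall>i<1. MV_algebra ([R2c] ! i) \<and> rl_car ([R2c] ! i) = {0..<2}"
    by (simp add: all1m MV_R2c car_R2c)
  then show "MV_algebra ([R2c] ! i) \<and> rl_car ([R2c] ! i) = {0..<2}" using i by blast
next
  fix i j assume "i < 1" "j < 1" "rl_isomorphic ([R2c] ! i) ([R2c] ! j)"
  then show "i = j" by (rule ni_MV2)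
next
  fix A :: "nat rlat" assume "MV_algebra A" then show "residuated_lattice A" by (rule BL_rl[OF MV_BL])
qed
lemma compa_R3c: "compa 3 R3c" by (simp add: compa_def all3m R3c_def mk_def)
lemma isch_R3c: "isch 3 R3c" by (simp add: isch_def all3m R3c_def mk_def)
lemma compa_R3c1: "compa 3 R3c1" by (simp add: compa_def all3m R3c1_def mk_def)
lemma isch_R3c1: "isch 3 R3c1" by (simp add: isch_def all3m R3c1_def mk_def)
lemma mteq_R3c_R3c1: "\<not> mteq 3 R3c R3c1" by (simp add: mteq_def all3m R3c_def R3c1_def mk_def)
lemma mteq_R3c1_R3c: "\<not> mteq 3 R3c1 R3c" by (simp add: mteq_def all3m R3c1_def R3c_def mk_def)
lemma ni_BL3: "i < 2 \<Longrightarrow> j < 2 \<Longrightarrow> rl_isomorphic ([R3c, R3c1] ! i) ([R3c, R3c1] ! j) \<Longrightarrow> i = j"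
proof -
  assume a: "i < 2" "j < 2" "rl_isomorphic ([R3c, R3c1] ! i) ([R3c, R3c1] ! j)"
  have rl: "\<forall>i<2. residuated_lattice ([R3c, R3c1] ! i) \<and> rl_car ([R3c, R3c1] ! i) = {0..<3}"
    by (simp add: all2m BL_rl[OF BL_R3c] BL_rl[OF BL_R3c1] car_R3c car_R3c1)
  have inv: "compa 3 ([R3c, R3c1] ! i) = compa 3 ([R3c, R3c1] ! j) \<and> (isch 3 ([R3c, R3c1] ! i) \<and> isch 3 ([R3c, R3c1] ! j) \<longrightarrow> mteq 3 ([R3c, R3c1] ! i) ([R3c, R3c1] ! j))"
    using iso_inv2[OF a(3)] rl a(1,2) by blast
  have t: "\<forall>i<2. \<forall>j<2. compa 3 ([R3c, R3c1] ! i) = compa 3 ([R3c, R3c1] ! j) \<and> (isch 3 ([R3c, R3c1] ! i) \<and> isch 3 ([R3c, R3c1] ! j) \<longrightarrow> mteq 3 ([R3c, R3c1] ! i) ([R3c, R3c1] ! j)) \<longrightarrow> i = j"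
    by (simp add: all2m compa_R3c isch_R3c compa_R3c1 isch_R3c1 mteq_R3c_R3c1 mteq_R3c1_R3c)
  then show "i = j" using inv a(1,2) by blast
qed
lemma num_BL3: "count_classes BL_algebra 3 = 2"
proof (rule count_classes_reps[where r = "\<lambda>i. [R3c, R3c1] ! i"])
  fix A :: "nat rlat" assume A: "BL_algebra A" "rl_car A = {0..<3}"
  interpret bl A using BL_bl[OF A(1)] .
  have fin: "finite C" "card C = 3" using A by simp_all
  show "\<exists>i<2. rl_isomorphic A ([R3c, R3c1] ! i)" using class3[OF fin] by (simp add: ex2m)
next
  fix i :: nat assume i: "i < 2"
  have "\<forall>i<2. BL_algebra ([R3c, R3c1] ! i) \<and> rl_car ([R3c, R3c1] ! i) = {0..<3}"
    by (simp add: all2m BL_R3c BL_R3c1 car_R3c car_R3c1)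
  then show "BL_algebra ([R3c, R3c1] ! i) \<and> rl_car ([R3c, R3c1] ! i) = {0..<3}" using i by blast
next
  fix i j assume "i < 2" "j < 2" "rl_isomorphic ([R3c, R3c1] ! i) ([R3c, R3c1] ! j)"
  then show "i = j" by (rule ni_BL3)
next
  fix A :: "nat rlat" assume "BL_algebra A" then show "residuated_lattice A" by (rule BL_rl)
qed
lemma ni_MV3: "i < 1 \<Longrightarrow> j < 1 \<Longrightarrow> rl_isomorphic ([R3c] ! i) ([R3c] ! j) \<Longrightarrow> i = j"
proof -
  assume a: "i < 1" "j < 1" "rl_isomorphic ([R3c] ! i) ([R3c] ! j)"
  have rl: "\<forall>i<1. residuated_lattice ([R3c] ! i) \<and> rl_car ([R3c] ! i) = {0..<3}"
    by (simp add: all1m BL_rl[OF BL_R3c] car_R3c)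
  have inv: "compa 3 ([R3c] ! i) = compa 3 ([R3c] ! j) \<and> (isch 3 ([R3c] ! i) \<and> isch 3 ([R3c] ! j) \<longrightarrow> mteq 3 ([R3c] ! i) ([R3c] ! j))"
    using iso_inv2[OF a(3)] rl a(1,2) by blast
  have t: "\<forall>i<1. \<forall>j<1. compa 3 ([R3c] ! i) = compa 3 ([R3c] ! j) \<and> (isch 3 ([R3c] ! i) \<and> isch 3 ([R3c] ! j) \<longrightarrow> mteq 3 ([R3c] ! i) ([R3c] ! j)) \<longrightarrow> i = j"
    by (simp add: all1m compa_R3c isch_R3c )
  then show "i = j" using inv a(1,2) by blast
qed
lemma num_MV3: "count_classes MV_algebra 3 = 1"
proof (rule count_classes_reps[where r = "\<lambda>i. [R3c] ! i"])
  fix A :: "nat rlat" assume A: "MV_algebra A" "rl_car A = {0..<3}"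
  interpret bl A using BL_bl[OF MV_BL[OF A(1)]] .
  have fin: "finite C" "card C = 3" using A by simp_all
  have nm: "\<And>R. rl_isomorphic A R \<Longrightarrow> residuated_lattice R \<Longrightarrow> MV_algebra R"
  proof -
    fix R assume "rl_isomorphic A R" "residuated_lattice R"
    then have "rl_isomorphic R A" using rl_isomorphic_sym RL by blast
    then show "MV_algebra R" using MV_transport A(1) \<open>residuated_lattice R\<close> unfolding rl_isomorphic_def by blast
  qed
  show "\<exists>i<1. rl_isomorphic A ([R3c] ! i)" using class3[OF fin] nm[of R3c1, OF _ BL_rl[OF BL_R3c1]] nMV_R3c1 by (auto simp add: ex1m)
next
  fix i :: nat assume i: "i < 1"
  have "\<forall>i<1. MV_algebra ([R3c] ! i) \<and> rl_car ([R3c] ! i) = {0..<3}"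
    by (simp add: all1m MV_R3c car_R3c)
  then show "MV_algebra ([R3c] ! i) \<and> rl_car ([R3c] ! i) = {0..<3}" using i by blast
next
  fix i j assume "i < 1" "j < 1" "rl_isomorphic ([R3c] ! i) ([R3c] ! j)"
  then show "i = j" by (rule ni_MV3)
next
  fix A :: "nat rlat" assume "MV_algebra A" then show "residuated_lattice A" by (rule BL_rl[OF MV_BL])
qed
lemma compa_R4c: "compa 4 R4c" by (simp add: compa_def all4m R4c_def mk_def)
lemma isch_R4c: "isch 4 R4c" by (simp add: isch_def all4m R4c_def mk_def)
lemma compa_R4c1: "compa 4 R4c1" by (simp add: compa_def all4m R4c1_def mk_def)
lemma isch_R4c1: "isch 4 R4c1" by (simp add: isch_def all4m R4c1_def mk_def)
lemma compa_R4c2: "compa 4 R4c2" by (simp add: compa_def all4m R4c2_def mk_def)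
lemma isch_R4c2: "isch 4 R4c2" by (simp add: isch_def all4m R4c2_def mk_def)
lemma compa_R4c12: "compa 4 R4c12" by (simp add: compa_def all4m R4c12_def mk_def)
lemma isch_R4c12: "isch 4 R4c12" by (simp add: isch_def all4m R4c12_def mk_def)
lemma compa_R4b: "\<not> compa 4 R4b" by (simp add: compa_def all4m R4b_def mk_def)
lemma isch_R4b: "\<not> isch 4 R4b" by (simp add: isch_def all4m R4b_def mk_def)
lemma mteq_R4c_R4c1: "\<not> mteq 4 R4c R4c1" by (simp add: mteq_def all4m R4c_def R4c1_def mk_def)
lemma mteq_R4c_R4c2: "\<not> mteq 4 R4c R4c2" by (simp add: mteq_def all4m R4c_def R4c2_def mk_def)
lemma mteq_R4c_R4c12: "\<not> mteq 4 R4c R4c12" by (simp add: mteq_def all4m R4c_def R4c12_def mk_def)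
lemma mteq_R4c1_R4c: "\<not> mteq 4 R4c1 R4c" by (simp add: mteq_def all4m R4c1_def R4c_def mk_def)
lemma mteq_R4c1_R4c2: "\<not> mteq 4 R4c1 R4c2" by (simp add: mteq_def all4m R4c1_def R4c2_def mk_def)
lemma mteq_R4c1_R4c12: "\<not> mteq 4 R4c1 R4c12" by (simp add: mteq_def all4m R4c1_def R4c12_def mk_def)
lemma mteq_R4c2_R4c: "\<not> mteq 4 R4c2 R4c" by (simp add: mteq_def all4m R4c2_def R4c_def mk_def)
lemma mteq_R4c2_R4c1: "\<not> mteq 4 R4c2 R4c1" by (simp add: mteq_def all4m R4c2_def R4c1_def mk_def)
lemma mteq_R4c2_R4c12: "\<not> mteq 4 R4c2 R4c12" by (simp add: mteq_def all4m R4c2_def R4c12_def mk_def)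
lemma mteq_R4c12_R4c: "\<not> mteq 4 R4c12 R4c" by (simp add: mteq_def all4m R4c12_def R4c_def mk_def)
lemma mteq_R4c12_R4c1: "\<not> mteq 4 R4c12 R4c1" by (simp add: mteq_def all4m R4c12_def R4c1_def mk_def)
lemma mteq_R4c12_R4c2: "\<not> mteq 4 R4c12 R4c2" by (simp add: mteq_def all4m R4c12_def R4c2_def mk_def)
lemma ni_BL4: "i < 5 \<Longrightarrow> j < 5 \<Longrightarrow> rl_isomorphic ([R4c, R4c1, R4c2, R4c12, R4b] ! i) ([R4c, R4c1, R4c2, R4c12, R4b] ! j) \<Longrightarrow> i = j"
proof -
  assume a: "i < 5" "j < 5" "rl_isomorphic ([R4c, R4c1, R4c2, R4c12, R4b] ! i) ([R4c, R4c1, R4c2, R4c12, R4b] ! j)"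
  have rl: "\<forall>i<5. residuated_lattice ([R4c, R4c1, R4c2, R4c12, R4b] ! i) \<and> rl_car ([R4c, R4c1, R4c2, R4c12, R4b] ! i) = {0..<4}"
    by (simp add: all5m BL_rl[OF BL_R4c] BL_rl[OF BL_R4c1] BL_rl[OF BL_R4c2] BL_rl[OF BL_R4c12] BL_rl[OF BL_R4b] car_R4c car_R4c1 car_R4c2 car_R4c12 car_R4b)
  have inv: "compa 4 ([R4c, R4c1, R4c2, R4c12, R4b] ! i) = compa 4 ([R4c, R4c1, R4c2, R4c12, R4b] ! j) \<and> (isch 4 ([R4c, R4c1, R4c2, R4c12, R4b] ! i) \<and> isch 4 ([R4c, R4c1, R4c2, R4c12, R4b] ! j) \<longrightarrow> mteq 4 ([R4c, R4c1, R4c2, R4c12, R4b] ! i) ([R4c, R4c1, R4c2, R4c12, R4b] ! j))"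
    using iso_inv2[OF a(3)] rl a(1,2) by blast
  have t: "\<forall>i<5. \<forall>j<5. compa 4 ([R4c, R4c1, R4c2, R4c12, R4b] ! i) = compa 4 ([R4c, R4c1, R4c2, R4c12, R4b] ! j) \<and> (isch 4 ([R4c, R4c1, R4c2, R4c12, R4b] ! i) \<and> isch 4 ([R4c, R4c1, R4c2, R4c12, R4b] ! j) \<longrightarrow> mteq 4 ([R4c, R4c1, R4c2, R4c12, R4b] ! i) ([R4c, R4c1, R4c2, R4c12, R4b] ! j)) \<longrightarrow> i = j"
    by (simp add: all5m compa_R4c isch_R4c compa_R4c1 isch_R4c1 compa_R4c2 isch_R4c2 compa_R4c12 isch_R4c12 compa_R4b isch_R4b mteq_R4c_R4c1 mteq_R4c_R4c2 mteq_R4c_R4c12 mteq_R4c1_R4c mteq_R4c1_R4c2 mteq_R4c1_R4c12 mteq_R4c2_R4c mteq_R4c2_R4c1 mteq_R4c2_R4c12 mteq_R4c12_R4c mteq_R4c12_R4c1 mteq_R4c12_R4c2)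
  then show "i = j" using inv a(1,2) by blast
qed
lemma num_BL4: "count_classes BL_algebra 4 = 5"
proof (rule count_classes_reps[where r = "\<lambda>i. [R4c, R4c1, R4c2, R4c12, R4b] ! i"])
  fix A :: "nat rlat" assume A: "BL_algebra A" "rl_car A = {0..<4}"
  interpret bl A using BL_bl[OF A(1)] .
  have fin: "finite C" "card C = 4" using A by simp_all
  show "\<exists>i<5. rl_isomorphic A ([R4c, R4c1, R4c2, R4c12, R4b] ! i)" using class4[OF fin] by (simp add: ex5m)
next
  fix i :: nat assume i: "i < 5"
  have "\<forall>i<5. BL_algebra ([R4c, R4c1, R4c2, R4c12, R4b] ! i) \<and> rl_car ([R4c, R4c1, R4c2, R4c12, R4b] ! i) = {0..<4}"
    by (simp add: all5m BL_R4c BL_R4c1 BL_R4c2 BL_R4c12 BL_R4b car_R4c car_R4c1 car_R4c2 car_R4c12 car_R4b)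
  then show "BL_algebra ([R4c, R4c1, R4c2, R4c12, R4b] ! i) \<and> rl_car ([R4c, R4c1, R4c2, R4c12, R4b] ! i) = {0..<4}" using i by blast
next
  fix i j assume "i < 5" "j < 5" "rl_isomorphic ([R4c, R4c1, R4c2, R4c12, R4b] ! i) ([R4c, R4c1, R4c2, R4c12, R4b] ! j)"
  then show "i = j" by (rule ni_BL4)
next
  fix A :: "nat rlat" assume "BL_algebra A" then show "residuated_lattice A" by (rule BL_rl)
qed
lemma ni_MV4: "i < 2 \<Longrightarrow> j < 2 \<Longrightarrow> rl_isomorphic ([R4c, R4b] ! i) ([R4c, R4b] ! j) \<Longrightarrow> i = j"
proof -
  assume a: "i < 2" "j < 2" "rl_isomorphic ([R4c, R4b] ! i) ([R4c, R4b] ! j)"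
  have rl: "\<forall>i<2. residuated_lattice ([R4c, R4b] ! i) \<and> rl_car ([R4c, R4b] ! i) = {0..<4}"
    by (simp add: all2m BL_rl[OF BL_R4c] BL_rl[OF BL_R4b] car_R4c car_R4b)
  have inv: "compa 4 ([R4c, R4b] ! i) = compa 4 ([R4c, R4b] ! j) \<and> (isch 4 ([R4c, R4b] ! i) \<and> isch 4 ([R4c, R4b] ! j) \<longrightarrow> mteq 4 ([R4c, R4b] ! i) ([R4c, R4b] ! j))"
    using iso_inv2[OF a(3)] rl a(1,2) by blast
  have t: "\<forall>i<2. \<forall>j<2. compa 4 ([R4c, R4b] ! i) = compa 4 ([R4c, R4b] ! j) \<and> (isch 4 ([R4c, R4b] ! i) \<and> isch 4 ([R4c, R4b] ! j) \<longrightarrow> mteq 4 ([R4c, R4b] ! i) ([R4c, R4b] ! j)) \<longrightarrow> i = j"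
    by (simp add: all2m compa_R4c isch_R4c compa_R4b isch_R4b )
  then show "i = j" using inv a(1,2) by blast
qed
lemma num_MV4: "count_classes MV_algebra 4 = 2"
proof (rule count_classes_reps[where r = "\<lambda>i. [R4c, R4b] ! i"])
  fix A :: "nat rlat" assume A: "MV_algebra A" "rl_car A = {0..<4}"
  interpret bl A using BL_bl[OF MV_BL[OF A(1)]] .
  have fin: "finite C" "card C = 4" using A by simp_all
  have nm: "\<And>R. rl_isomorphic A R \<Longrightarrow> residuated_lattice R \<Longrightarrow> MV_algebra R"
  proof -
    fix R assume "rl_isomorphic A R" "residuated_lattice R"
    then have "rl_isomorphic R A" using rl_isomorphic_sym RL by blast
    then show "MV_algebra R" using MV_transport A(1) \<open>residuated_lattice R\<close> unfolding rl_isomorphic_def by blast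
  qed
  show "\<exists>i<2. rl_isomorphic A ([R4c, R4b] ! i)" using class4[OF fin] nm[of R4c1, OF _ BL_rl[OF BL_R4c1]] nMV_R4c1 nm[of R4c2, OF _ BL_rl[OF BL_R4c2]] nMV_R4c2 nm[of R4c12, OF _ BL_rl[OF BL_R4c12]] nMV_R4c12 by (auto simp add: ex2m)
next
  fix i :: nat assume i: "i < 2"
  have "\<forall>i<2. MV_algebra ([R4c, R4b] ! i) \<and> rl_car ([R4c, R4b] ! i) = {0..<4}"
    by (simp add: all2m MV_R4c MV_R4b car_R4c car_R4b)
  then show "MV_algebra ([R4c, R4b] ! i) \<and> rl_car ([R4c, R4b] ! i) = {0..<4}" using i by blast
next
  fix i j assume "i < 2" "j < 2" "rl_isomorphic ([R4c, R4b] ! i) ([R4c, R4b] ! j)"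
  then show "i = j" by (rule ni_MV4)
next
  fix A :: "nat rlat" assume "MV_algebra A" then show "residuated_lattice A" by (rule BL_rl[OF MV_BL])
qed
lemma compa_R5c: "compa 5 R5c" by (simp add: compa_def all5m R5c_def mk_def)
lemma isch_R5c: "isch 5 R5c" by (simp add: isch_def all5m R5c_def mk_def)
lemma compa_R5c1: "compa 5 R5c1" by (simp add: compa_def all5m R5c1_def mk_def)
lemma isch_R5c1: "isch 5 R5c1" by (simp add: isch_def all5m R5c1_def mk_def)
lemma compa_R5c2: "compa 5 R5c2" by (simp add: compa_def all5m R5c2_def mk_def)
lemma isch_R5c2: "isch 5 R5c2" by (simp add: isch_def all5m R5c2_def mk_def)
lemma compa_R5c3: "compa 5 R5c3" by (simp add: compa_def all5m R5c3_def mk_def)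
lemma isch_R5c3: "isch 5 R5c3" by (simp add: isch_def all5m R5c3_def mk_def)
lemma compa_R5c12: "compa 5 R5c12" by (simp add: compa_def all5m R5c12_def mk_def)
lemma isch_R5c12: "isch 5 R5c12" by (simp add: isch_def all5m R5c12_def mk_def)
lemma compa_R5c13: "compa 5 R5c13" by (simp add: compa_def all5m R5c13_def mk_def)
lemma isch_R5c13: "isch 5 R5c13" by (simp add: isch_def all5m R5c13_def mk_def)
lemma compa_R5c23: "compa 5 R5c23" by (simp add: compa_def all5m R5c23_def mk_def)
lemma isch_R5c23: "isch 5 R5c23" by (simp add: isch_def all5m R5c23_def mk_def)
lemma compa_R5c123: "compa 5 R5c123" by (simp add: compa_def all5m R5c123_def mk_def)
lemma isch_R5c123: "isch 5 R5c123" by (simp add: isch_def all5m R5c123_def mk_def)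
lemma compa_R5v: "\<not> compa 5 R5v" by (simp add: compa_def all5m R5v_def mk_def)
lemma isch_R5v: "\<not> isch 5 R5v" by (simp add: isch_def all5m R5v_def mk_def)
lemma mteq_R5c_R5c1: "\<not> mteq 5 R5c R5c1" by (simp add: mteq_def all5m R5c_def R5c1_def mk_def)
lemma mteq_R5c_R5c2: "\<not> mteq 5 R5c R5c2" by (simp add: mteq_def all5m R5c_def R5c2_def mk_def)
lemma mteq_R5c_R5c3: "\<not> mteq 5 R5c R5c3" by (simp add: mteq_def all5m R5c_def R5c3_def mk_def)
lemma mteq_R5c_R5c12: "\<not> mteq 5 R5c R5c12" by (simp add: mteq_def all5m R5c_def R5c12_def mk_def)
lemma mteq_R5c_R5c13: "\<not> mteq 5 R5c R5c13" by (simp add: mteq_def all5m R5c_def R5c13_def mk_def)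
lemma mteq_R5c_R5c23: "\<not> mteq 5 R5c R5c23" by (simp add: mteq_def all5m R5c_def R5c23_def mk_def)
lemma mteq_R5c_R5c123: "\<not> mteq 5 R5c R5c123" by (simp add: mteq_def all5m R5c_def R5c123_def mk_def)
lemma mteq_R5c1_R5c: "\<not> mteq 5 R5c1 R5c" by (simp add: mteq_def all5m R5c1_def R5c_def mk_def)
lemma mteq_R5c1_R5c2: "\<not> mteq 5 R5c1 R5c2" by (simp add: mteq_def all5m R5c1_def R5c2_def mk_def)
lemma mteq_R5c1_R5c3: "\<not> mteq 5 R5c1 R5c3" by (simp add: mteq_def all5m R5c1_def R5c3_def mk_def)
lemma mteq_R5c1_R5c12: "\<not> mteq 5 R5c1 R5c12" by (simp add: mteq_def all5m R5c1_def R5c12_def mk_def)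
lemma mteq_R5c1_R5c13: "\<not> mteq 5 R5c1 R5c13" by (simp add: mteq_def all5m R5c1_def R5c13_def mk_def)
lemma mteq_R5c1_R5c23: "\<not> mteq 5 R5c1 R5c23" by (simp add: mteq_def all5m R5c1_def R5c23_def mk_def)
lemma mteq_R5c1_R5c123: "\<not> mteq 5 R5c1 R5c123" by (simp add: mteq_def all5m R5c1_def R5c123_def mk_def)
lemma mteq_R5c2_R5c: "\<not> mteq 5 R5c2 R5c" by (simp add: mteq_def all5m R5c2_def R5c_def mk_def)
lemma mteq_R5c2_R5c1: "\<not> mteq 5 R5c2 R5c1" by (simp add: mteq_def all5m R5c2_def R5c1_def mk_def)
lemma mteq_R5c2_R5c3: "\<not> mteq 5 R5c2 R5c3" by (simp add: mteq_def all5m R5c2_def R5c3_def mk_def)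
lemma mteq_R5c2_R5c12: "\<not> mteq 5 R5c2 R5c12" by (simp add: mteq_def all5m R5c2_def R5c12_def mk_def)
lemma mteq_R5c2_R5c13: "\<not> mteq 5 R5c2 R5c13" by (simp add: mteq_def all5m R5c2_def R5c13_def mk_def)
lemma mteq_R5c2_R5c23: "\<not> mteq 5 R5c2 R5c23" by (simp add: mteq_def all5m R5c2_def R5c23_def mk_def)
lemma mteq_R5c2_R5c123: "\<not> mteq 5 R5c2 R5c123" by (simp add: mteq_def all5m R5c2_def R5c123_def mk_def)
lemma mteq_R5c3_R5c: "\<not> mteq 5 R5c3 R5c" by (simp add: mteq_def all5m R5c3_def R5c_def mk_def)
lemma mteq_R5c3_R5c1: "\<not> mteq 5 R5c3 R5c1" by (simp add: mteq_def all5m R5c3_def R5c1_def mk_def)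
lemma mteq_R5c3_R5c2: "\<not> mteq 5 R5c3 R5c2" by (simp add: mteq_def all5m R5c3_def R5c2_def mk_def)
lemma mteq_R5c3_R5c12: "\<not> mteq 5 R5c3 R5c12" by (simp add: mteq_def all5m R5c3_def R5c12_def mk_def)
lemma mteq_R5c3_R5c13: "\<not> mteq 5 R5c3 R5c13" by (simp add: mteq_def all5m R5c3_def R5c13_def mk_def)
lemma mteq_R5c3_R5c23: "\<not> mteq 5 R5c3 R5c23" by (simp add: mteq_def all5m R5c3_def R5c23_def mk_def)
lemma mteq_R5c3_R5c123: "\<not> mteq 5 R5c3 R5c123" by (simp add: mteq_def all5m R5c3_def R5c123_def mk_def)
lemma mteq_R5c12_R5c: "\<not> mteq 5 R5c12 R5c" by (simp add: mteq_def all5m R5c12_def R5c_def mk_def)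
lemma mteq_R5c12_R5c1: "\<not> mteq 5 R5c12 R5c1" by (simp add: mteq_def all5m R5c12_def R5c1_def mk_def)
lemma mteq_R5c12_R5c2: "\<not> mteq 5 R5c12 R5c2" by (simp add: mteq_def all5m R5c12_def R5c2_def mk_def)
lemma mteq_R5c12_R5c3: "\<not> mteq 5 R5c12 R5c3" by (simp add: mteq_def all5m R5c12_def R5c3_def mk_def)
lemma mteq_R5c12_R5c13: "\<not> mteq 5 R5c12 R5c13" by (simp add: mteq_def all5m R5c12_def R5c13_def mk_def)
lemma mteq_R5c12_R5c23: "\<not> mteq 5 R5c12 R5c23" by (simp add: mteq_def all5m R5c12_def R5c23_def mk_def)
lemma mteq_R5c12_R5c123: "\<not> mteq 5 R5c12 R5c123" by (simp add: mteq_def all5m R5c12_def R5c123_def mk_def)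
lemma mteq_R5c13_R5c: "\<not> mteq 5 R5c13 R5c" by (simp add: mteq_def all5m R5c13_def R5c_def mk_def)
lemma mteq_R5c13_R5c1: "\<not> mteq 5 R5c13 R5c1" by (simp add: mteq_def all5m R5c13_def R5c1_def mk_def)
lemma mteq_R5c13_R5c2: "\<not> mteq 5 R5c13 R5c2" by (simp add: mteq_def all5m R5c13_def R5c2_def mk_def)
lemma mteq_R5c13_R5c3: "\<not> mteq 5 R5c13 R5c3" by (simp add: mteq_def all5m R5c13_def R5c3_def mk_def)
lemma mteq_R5c13_R5c12: "\<not> mteq 5 R5c13 R5c12" by (simp add: mteq_def all5m R5c13_def R5c12_def mk_def)
lemma mteq_R5c13_R5c23: "\<not> mteq 5 R5c13 R5c23" by (simp add: mteq_def all5m R5c13_def R5c23_def mk_def)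
lemma mteq_R5c13_R5c123: "\<not> mteq 5 R5c13 R5c123" by (simp add: mteq_def all5m R5c13_def R5c123_def mk_def)
lemma mteq_R5c23_R5c: "\<not> mteq 5 R5c23 R5c" by (simp add: mteq_def all5m R5c23_def R5c_def mk_def)
lemma mteq_R5c23_R5c1: "\<not> mteq 5 R5c23 R5c1" by (simp add: mteq_def all5m R5c23_def R5c1_def mk_def)
lemma mteq_R5c23_R5c2: "\<not> mteq 5 R5c23 R5c2" by (simp add: mteq_def all5m R5c23_def R5c2_def mk_def)
lemma mteq_R5c23_R5c3: "\<not> mteq 5 R5c23 R5c3" by (simp add: mteq_def all5m R5c23_def R5c3_def mk_def)
lemma mteq_R5c23_R5c12: "\<not> mteq 5 R5c23 R5c12" by (simp add: mteq_def all5m R5c23_def R5c12_def mk_def)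
lemma mteq_R5c23_R5c13: "\<not> mteq 5 R5c23 R5c13" by (simp add: mteq_def all5m R5c23_def R5c13_def mk_def)
lemma mteq_R5c23_R5c123: "\<not> mteq 5 R5c23 R5c123" by (simp add: mteq_def all5m R5c23_def R5c123_def mk_def)
lemma mteq_R5c123_R5c: "\<not> mteq 5 R5c123 R5c" by (simp add: mteq_def all5m R5c123_def R5c_def mk_def)
lemma mteq_R5c123_R5c1: "\<not> mteq 5 R5c123 R5c1" by (simp add: mteq_def all5m R5c123_def R5c1_def mk_def)
lemma mteq_R5c123_R5c2: "\<not> mteq 5 R5c123 R5c2" by (simp add: mteq_def all5m R5c123_def R5c2_def mk_def)
lemma mteq_R5c123_R5c3: "\<not> mteq 5 R5c123 R5c3" by (simp add: mteq_def all5m R5c123_def R5c3_def mk_def)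
lemma mteq_R5c123_R5c12: "\<not> mteq 5 R5c123 R5c12" by (simp add: mteq_def all5m R5c123_def R5c12_def mk_def)
lemma mteq_R5c123_R5c13: "\<not> mteq 5 R5c123 R5c13" by (simp add: mteq_def all5m R5c123_def R5c13_def mk_def)
lemma mteq_R5c123_R5c23: "\<not> mteq 5 R5c123 R5c23" by (simp add: mteq_def all5m R5c123_def R5c23_def mk_def)
lemma ni_BL5: "i < 9 \<Longrightarrow> j < 9 \<Longrightarrow> rl_isomorphic ([R5c, R5c1, R5c2, R5c3, R5c12, R5c13, R5c23, R5c123, R5v] ! i) ([R5c, R5c1, R5c2, R5c3, R5c12, R5c13, R5c23, R5c123, R5v] ! j) \<Longrightarrow> i = j"
proof -
  assume a: "i < 9" "j < 9" "rl_isomorphic ([R5c, R5c1, R5c2, R5c3, R5c12, R5c13, R5c23, R5c123, R5v] ! i) ([R5c, R5c1, R5c2, R5c3, R5c12, R5c13, R5c23, R5c123, R5v] ! j)"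
  have rl: "\<forall>i<9. residuated_lattice ([R5c, R5c1, R5c2, R5c3, R5c12, R5c13, R5c23, R5c123, R5v] ! i) \<and> rl_car ([R5c, R5c1, R5c2, R5c3, R5c12, R5c13, R5c23, R5c123, R5v] ! i) = {0..<5}"
    by (simp add: all9m BL_rl[OF BL_R5c] BL_rl[OF BL_R5c1] BL_rl[OF BL_R5c2] BL_rl[OF BL_R5c3] BL_rl[OF BL_R5c12] BL_rl[OF BL_R5c13] BL_rl[OF BL_R5c23] BL_rl[OF BL_R5c123] BL_rl[OF BL_R5v] car_R5c car_R5c1 car_R5c2 car_R5c3 car_R5c12 car_R5c13 car_R5c23 car_R5c123 car_R5v)
  have inv: "compa 5 ([R5c, R5c1, R5c2, R5c3, R5c12, R5c13, R5c23, R5c123, R5v] ! i) = compa 5 ([R5c, R5c1, R5c2, R5c3, R5c12, R5c13, R5c23, R5c123, R5v] ! j) \<and> (isch 5 ([R5c, R5c1, R5c2, R5c3, R5c12, R5c13, R5c23, R5c123, R5v] ! i) \<and> isch 5 ([R5c, R5c1, R5c2, R5c3, R5c12, R5c13, R5c23, R5c123, R5v] ! j) \<longrightarrow> mteq 5 ([R5c, R5c1, R5c2, R5c3, R5c12, R5c13, R5c23, R5c123, R5v] ! i) ([R5c, R5c1, R5c2, R5c3, R5c12, R5c13, R5c23, R5c123, R5v] ! j))"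
    using iso_inv2[OF a(3)] rl a(1,2) by blast
  have t: "\<forall>i<9. \<forall>j<9. compa 5 ([R5c, R5c1, R5c2, R5c3, R5c12, R5c13, R5c23, R5c123, R5v] ! i) = compa 5 ([R5c, R5c1, R5c2, R5c3, R5c12, R5c13, R5c23, R5c123, R5v] ! j) \<and> (isch 5 ([R5c, R5c1, R5c2, R5c3, R5c12, R5c13, R5c23, R5c123, R5v] ! i) \<and> isch 5 ([R5c, R5c1, R5c2, R5c3, R5c12, R5c13, R5c23, R5c123, R5v] ! j) \<longrightarrow> mteq 5 ([R5c, R5c1, R5c2, R5c3, R5c12, R5c13, R5c23, R5c123, R5v] ! i) ([R5c, R5c1, R5c2, R5c3, R5c12, R5c13, R5c23, R5c123, R5v] ! j)) \<longrightarrow> i = j"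
    by (simp add: all9m compa_R5c isch_R5c compa_R5c1 isch_R5c1 compa_R5c2 isch_R5c2 compa_R5c3 isch_R5c3 compa_R5c12 isch_R5c12 compa_R5c13 isch_R5c13 compa_R5c23 isch_R5c23 compa_R5c123 isch_R5c123 compa_R5v isch_R5v mteq_R5c_R5c1 mteq_R5c_R5c2 mteq_R5c_R5c3 mteq_R5c_R5c12 mteq_R5c_R5c13 mteq_R5c_R5c23 mteq_R5c_R5c123 mteq_R5c1_R5c mteq_R5c1_R5c2 mteq_R5c1_R5c3 mteq_R5c1_R5c12 mteq_R5c1_R5c13 mteq_R5c1_R5c23 mteq_R5c1_R5c123 mteq_R5c2_R5c mteq_R5c2_R5c1 mteq_R5c2_R5c3 mteq_R5c2_R5c12 mteq_R5c2_R5c13 mteq_R5c2_R5c23 mteq_R5c2_R5c123 mteq_R5c3_R5c mteq_R5c3_R5c1 mteq_R5c3_R5c2 mteq_R5c3_R5c12 mteq_R5c3_R5c13 mteq_R5c3_R5c23 mteq_R5c3_R5c123 mteq_R5c12_R5c mteq_R5c12_R5c1 mteq_R5c12_R5c2 mteq_R5c12_R5c3 mteq_R5c12_R5c13 mteq_R5c12_R5c23 mteq_R5c12_R5c123 mteq_R5c13_R5c mteq_R5c13_R5c1 mteq_R5c13_R5c2 mteq_R5c13_R5c3 mteq_R5c13_R5c12 mteq_R5c13_R5c23 mteq_R5c13_R5c123 mteq_R5c23_R5c mteq_R5c23_R5c1 mteq_R5c23_R5c2 mteq_R5c23_R5c3 mteq_R5c23_R5c12 mteq_R5c23_R5c13 mteq_R5c23_R5c123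 mteq_R5c123_R5c mteq_R5c123_R5c1 mteq_R5c123_R5c2 mteq_R5c123_R5c3 mteq_R5c123_R5c12 mteq_R5c123_R5c13 mteq_R5c123_R5c23)
  then show "i = j" using inv a(1,2) by blast
qed
lemma num_BL5: "count_classes BL_algebra 5 = 9"
proof (rule count_classes_reps[where r = "\<lambda>i. [R5c, R5c1, R5c2, R5c3, R5c12, R5c13, R5c23, R5c123, R5v] ! i"])
  fix A :: "nat rlat" assume A: "BL_algebra A" "rl_car A = {0..<5}"
  interpret bl A using BL_bl[OF A(1)] .
  have fin: "finite C" "card C = 5" using A by simp_all
  show "\<exists>i<9. rl_isomorphic A ([R5c, R5c1, R5c2, R5c3, R5c12, R5c13, R5c23, R5c123, R5v] ! i)" using class5[OF fin] by (simp add: ex9m)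
next
  fix i :: nat assume i: "i < 9"
  have "\<forall>i<9. BL_algebra ([R5c, R5c1, R5c2, R5c3, R5c12, R5c13, R5c23, R5c123, R5v] ! i) \<and> rl_car ([R5c, R5c1, R5c2, R5c3, R5c12, R5c13, R5c23, R5c123, R5v] ! i) = {0..<5}"
    by (simp add: all9m BL_R5c BL_R5c1 BL_R5c2 BL_R5c3 BL_R5c12 BL_R5c13 BL_R5c23 BL_R5c123 BL_R5v car_R5c car_R5c1 car_R5c2 car_R5c3 car_R5c12 car_R5c13 car_R5c23 car_R5c123 car_R5v)
  then show "BL_algebra ([R5c, R5c1, R5c2, R5c3, R5c12, R5c13, R5c23, R5c123, R5v] ! i) \<and> rl_car ([R5c, R5c1, R5c2, R5c3, R5c12, R5c13, R5c23, R5c123, R5v] ! i) = {0..<5}" using i by blast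
next
  fix i j assume "i < 9" "j < 9" "rl_isomorphic ([R5c, R5c1, R5c2, R5c3, R5c12, R5c13, R5c23, R5c123, R5v] ! i) ([R5c, R5c1, R5c2, R5c3, R5c12, R5c13, R5c23, R5c123, R5v] ! j)"
  then show "i = j" by (rule ni_BL5)
next
  fix A :: "nat rlat" assume "BL_algebra A" then show "residuated_lattice A" by (rule BL_rl)
qed
lemma ni_MV5: "i < 1 \<Longrightarrow> j < 1 \<Longrightarrow> rl_isomorphic ([R5c] ! i) ([R5c] ! j) \<Longrightarrow> i = j"
proof -
  assume a: "i < 1" "j < 1" "rl_isomorphic ([R5c] ! i) ([R5c] ! j)"
  have rl: "\<forall>i<1. residuated_lattice ([R5c] ! i) \<and> rl_car ([R5c] ! i) = {0..<5}"
    by (simp add: all1m BL_rl[OF BL_R5c] car_R5c)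
  have inv: "compa 5 ([R5c] ! i) = compa 5 ([R5c] ! j) \<and> (isch 5 ([R5c] ! i) \<and> isch 5 ([R5c] ! j) \<longrightarrow> mteq 5 ([R5c] ! i) ([R5c] ! j))"
    using iso_inv2[OF a(3)] rl a(1,2) by blast
  have t: "\<forall>i<1. \<forall>j<1. compa 5 ([R5c] ! i) = compa 5 ([R5c] ! j) \<and> (isch 5 ([R5c] ! i) \<and> isch 5 ([R5c] ! j) \<longrightarrow> mteq 5 ([R5c] ! i) ([R5c] ! j)) \<longrightarrow> i = j"
    by (simp add: all1m compa_R5c isch_R5c )
  then show "i = j" using inv a(1,2) by blast
qed
lemma num_MV5: "count_classes MV_algebra 5 = 1"
proof (rule count_classes_reps[where r = "\<lambda>i. [R5c] ! i"])
  fix A :: "nat rlat" assume A: "MV_algebra A" "rl_car A = {0..<5}"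
  interpret bl A using BL_bl[OF MV_BL[OF A(1)]] .
  have fin: "finite C" "card C = 5" using A by simp_all
  have nm: "\<And>R. rl_isomorphic A R \<Longrightarrow> residuated_lattice R \<Longrightarrow> MV_algebra R"
  proof -
    fix R assume "rl_isomorphic A R" "residuated_lattice R"
    then have "rl_isomorphic R A" using rl_isomorphic_sym RL by blast
    then show "MV_algebra R" using MV_transport A(1) \<open>residuated_lattice R\<close> unfolding rl_isomorphic_def by blast
  qed
  show "\<exists>i<1. rl_isomorphic A ([R5c] ! i)" using class5[OF fin] nm[of R5c1, OF _ BL_rl[OF BL_R5c1]] nMV_R5c1 nm[of R5c2, OF _ BL_rl[OF BL_R5c2]] nMV_R5c2 nm[of R5c3, OF _ BL_rl[OF BL_R5c3]] nMV_R5c3 nm[of R5c12, OF _ BL_rl[OF BL_R5c12]] nMV_R5c12 nm[of R5c13, OF _ BL_rl[OF BL_R5c13]] nMV_R5c13 nm[of R5c23, OF _ BL_rl[OF BL_R5c23]] nMV_R5c23 nm[of R5c123, OF _ BL_rl[OF BL_R5c123]] nMV_R5c123 nm[of R5v, OF _ BL_rl[OF BL_R5v]] nMV_R5v by (auto simp add: ex1m)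
next
  fix i :: nat assume i: "i < 1"
  have "\<forall>i<1. MV_algebra ([R5c] ! i) \<and> rl_car ([R5c] ! i) = {0..<5}"
    by (simp add: all1m MV_R5c car_R5c)
  then show "MV_algebra ([R5c] ! i) \<and> rl_car ([R5c] ! i) = {0..<5}" using i by blast
next
  fix i j assume "i < 1" "j < 1" "rl_isomorphic ([R5c] ! i) ([R5c] ! j)"
  then show "i = j" by (rule ni_MV5)
next
  fix A :: "nat rlat" assume "MV_algebra A" then show "residuated_lattice A" by (rule BL_rl[OF MV_BL])
qed

theorem theorem4p7:
  shows "(\<forall>A :: 'a rlat. BL_algebra A \<and> finite (rl_car A) \<and> 2 \<le> card (rl_car A) \<and>
            card (rl_car A) \<le> 5 \<and> \<not> MV_algebra A \<longrightarrow>
          (\<exists>L1 L2 :: 'a rlat. BL_algebra L1 \<and> BL_algebra L2 \<and>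
             rl_zero L1 \<noteq> rl_one L1 \<and> rl_zero L2 \<noteq> rl_one L2 \<and>
             ord_prod_ok L1 L2 \<and> rl_isomorphic A (ord_prod L1 L2)))
   \<and> (num_BL 2 = num_MV 2 \<and> num_MV 2 = mult_partitions 2 + 1)
   \<and> (num_BL 3 = num_MV 3 + num_BL 2 \<and>
      num_MV 3 + num_BL 2 = mult_partitions 3 + mult_partitions 2 + 2)
   \<and> (num_BL 4 = num_MV 4 + num_BL 3 + num_BL 2 \<and>
      num_MV 4 + num_BL 3 + num_BL 2 =
        mult_partitions 4 + mult_partitions 3 + 2 * mult_partitions 2 + 4)
   \<and> (num_BL 5 = num_MV 5 + num_BL 4 + num_BL 3 + num_BL 2 \<and>
      num_MV 5 + num_BL 4 + num_BL 3 + num_BL 2 =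
        mult_partitions 5 + mult_partitions 4 + 2 * mult_partitions 3 + 4 * mult_partitions 2 + 8)"
proof -
  have p1: "\<forall>A :: 'a rlat. BL_algebra A \<and> finite (rl_car A) \<and> 2 \<le> card (rl_car A) \<and>
            card (rl_car A) \<le> 5 \<and> \<not> MV_algebra A \<longrightarrow>
          (\<exists>L1 L2 :: 'a rlat. BL_algebra L1 \<and> BL_algebra L2 \<and>
             rl_zero L1 \<noteq> rl_one L1 \<and> rl_zero L2 \<noteq> rl_one L2 \<and>
             ord_prod_ok L1 L2 \<and> rl_isomorphic A (ord_prod L1 L2))"
    using part1 by blast
  have mp: "mult_partitions 2 = 0" "mult_partitions 3 = 0" "mult_partitions 5 = 0" "mult_partitions 4 = 1"
    using mp_prime[of 2] mp_prime[of 3] mp_prime[of 5] mp4 by simp_all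
  show ?thesis
    using p1 mp num_BL2 num_BL3 num_BL4 num_BL5 num_MV2 num_MV3 num_MV4 num_MV5 by simp
qed

end
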